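(* Let $\mathcal U$ be a free ultrafilter on $\mathbb N$, $\mathcal Q=\prod_{n\to\mathcal U}M_n(\mathbb C)$, $d\in\mathbb N$ and $\mu\in\mathbb S_d(\mathrm T_{\mathrm{tr}})$. If $\chi^{\mathcal U}_{\mathrm{full}}(\mu)>-\infty$, then there exists $\mathbf X\in\mathcal Q^d$ with $\mathrm{tp}^{\mathcal Q}(\mathbf X)=\mu$.
   Context: A tracial $\mathrm W^*$-algebra $\mathcal M=(M,\tau)$ is a von Neumann algebra with a faithful normal tracial state; $\|x\|_2=\tau(x^*x)^{1/2}$. Tracial $\mathrm W^*$-algebras are metric structures in the continuous-logic language $\mathcal L_{\mathrm{tr}}$ of Farah–Hart–Sherman (one sort, metric $\|x-y\|_2$, domains of quantification operator-norm balls $D_r=\{x:\|x\|\le r\}$, atomic formulas real/imaginary parts of traces of $*$-polynomials, formulas built with continuous connectives and $\sup/\inf$ over $D_r$); $\mathrm T_{\mathrm{tr}}$ is the theory of tracial $\mathrm W^*$-algebras. For $\mathbf X\in M^d$, $\mathrm{tp}^{\mathcal M}(\mathbf X)$ is the map $\phi\mapsto\phi^{\mathcal M}(\mathbf X)$ on formulas in $d$ free variables. $\mathbb S_d(\mathrm T_{\mathrm{tr}})$ is the set of types of $d$-tuples in tracial $\mathrm W^*$-algebras, $\mathbb S_{d,r}(\mathrm T_{\mathrm{tr}})$ the subset for tuples in $D_r^d$, with the weak-$*$ (logic) topology (compact metrizable); $\mathcal O\subseteq\mathbb S_d$ is open iff $\mathcal O\cap\mathbb S_{d,r}$ is open for every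 $r$. $\mathcal Q$ is the tracial ultraproduct of matrix algebras with normalized traces. $\mathrm{vol}$ is Lebesgue measure on $M_n(\mathbb C)^d$ transported from $\mathbb C^{dn^2}$ via an isometry for $\langle\mathbf X,\mathbf Y\rangle=\sum_j\mathrm{tr}_n(X_j^*Y_j)$. For $\mathcal K\subseteq\mathbb S_d(\mathrm T_{\mathrm{tr}})$: $\Gamma_r^{(n)}(\mathcal K)=\{\mathbf Y\in(D_r^{M_n(\mathbb C)})^d:\mathrm{tp}^{M_n(\mathbb C)}(\mathbf Y)\in\mathcal K\}$, $\chi^{\mathcal U}_{\mathrm{full},r}(\mathcal K)=\inf_{\mathcal O\supseteq\mathcal K\text{ open}}\lim_{n\to\mathcal U}\big(n^{-2}\log\mathrm{vol}\,\Gamma_r^{(n)}(\mathcal O)+2d\log n\big)$, $\chi^{\mathcal U}_{\mathrm{full}}(\mathcal K)=\sup_{r>0}\chi^{\mathcal U}_{\mathrm{full},r}(\mathcal K)$, and $\chi(\mu)=\chi(\{\mu\})$. *)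

theory Defs
  imports "HOL-Analysis.Analysis"
begin

definition free_ultrafilter :: "nat filter \<Rightarrow> bool" where
  "free_ultrafilter U \<longleftrightarrow> U \<noteq> bot
     \<and> (\<forall>P. eventually P U \<or> eventually (\<lambda>x. \<not> P x) U)
     \<and> (\<forall>n. \<not> eventually (\<lambda>k. k = n) U)"

record 'a tralg =
  t_car :: "'a set"
  t_zero :: 'a
  t_one :: 'a
  t_add :: "'a \<Rightarrow> 'a \<Rightarrow> 'a"
  t_mul :: "'a \<Rightarrow> 'a \<Rightarrow> 'a"
  t_scl :: "complex \<Rightarrow> 'a \<Rightarrow> 'a"
  t_star :: "'a \<Rightarrow> 'a"
  t_norm :: "'a \<Rightarrow> real"   \<comment> \<open>operator (C*-) norm\<close>
  t_tr :: "'a \<Rightarrow> complex"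

definition t_diff :: "'a tralg \<Rightarrow> 'a \<Rightarrow> 'a \<Rightarrow> 'a" where
  "t_diff A x y = t_add A x (t_scl A (-1) y)"

definition norm2 :: "'a tralg \<Rightarrow> 'a \<Rightarrow> real" where
  "norm2 A x = sqrt (Re (t_tr A (t_mul A (t_star A x) x)))"

text \<open>Tracial W*-algebra: a unital C*-algebra with a faithful tracial state whose
  operator-norm unit ball is complete for the 2-norm (the standard abstract
  characterisation of tracial von Neumann algebras, i.e. the models of T_tr).\<close>

definition tracial_W :: "'a tralg \<Rightarrow> bool" where
  "tracial_W A \<longleftrightarrow>
    t_zero A \<in> t_car A \<and> t_one A \<in> t_car A
  \<and> (\<forall>x\<in>t_car A. \<forall>y\<in>t_car A. t_add A x y \<in> t_car A \<and> t_mul A x y \<in> t_car A)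
  \<and> (\<forall>c. \<forall>x\<in>t_car A. t_scl A c x \<in> t_car A)
  \<and> (\<forall>x\<in>t_car A. t_star A x \<in> t_car A)
  \<comment> \<open>complex vector space\<close>
  \<and> (\<forall>x\<in>t_car A. \<forall>y\<in>t_car A. \<forall>z\<in>t_car A. t_add A (t_add A x y) z = t_add A x (t_add A y z))
  \<and> (\<forall>x\<in>t_car A. \<forall>y\<in>t_car A. t_add A x y = t_add A y x)
  \<and> (\<forall>x\<in>t_car A. t_add A x (t_zero A) = x)
  \<and> (\<forall>x\<in>t_car A. t_add A x (t_scl A (-1) x) = t_zero A)
  \<and> (\<forall>x\<in>t_car A. t_scl A 1 x = x)
  \<and> (\<forall>a b. \<forall>x\<in>t_car A. t_scl A a (t_scl A b x) = t_scl A (a * b) x)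
  \<and> (\<forall>a b. \<forall>x\<in>t_car A. t_scl A (a + b) x = t_add A (t_scl A a x) (t_scl A b x))
  \<and> (\<forall>a. \<forall>x\<in>t_car A. \<forall>y\<in>t_car A. t_scl A a (t_add A x y) = t_add A (t_scl A a x) (t_scl A a y))
  \<comment> \<open>unital algebra\<close>
  \<and> (\<forall>x\<in>t_car A. \<forall>y\<in>t_car A. \<forall>z\<in>t_car A. t_mul A (t_mul A x y) z = t_mul A x (t_mul A y z))
  \<and> (\<forall>x\<in>t_car A. t_mul A (t_one A) x = x \<and> t_mul A x (t_one A) = x)
  \<and> (\<forall>x\<in>t_car A. \<forall>y\<in>t_car A. \<forall>z\<in>t_car A.
        t_mul A x (t_add A y z) = t_add A (t_mul A x y) (t_mul A x z)
      \<and> t_mul A (t_add A x y) z = t_add A (t_mul A x z) (t_mul A y z))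
  \<and> (\<forall>a. \<forall>x\<in>t_car A. \<forall>y\<in>t_car A.
        t_mul A (t_scl A a x) y = t_scl A a (t_mul A x y)
      \<and> t_mul A x (t_scl A a y) = t_scl A a (t_mul A x y))
  \<comment> \<open>involution\<close>
  \<and> (\<forall>x\<in>t_car A. t_star A (t_star A x) = x)
  \<and> (\<forall>x\<in>t_car A. \<forall>y\<in>t_car A. t_star A (t_add A x y) = t_add A (t_star A x) (t_star A y))
  \<and> (\<forall>a. \<forall>x\<in>t_car A. t_star A (t_scl A a x) = t_scl A (cnj a) (t_star A x))
  \<and> (\<forall>x\<in>t_car A. \<forall>y\<in>t_car A. t_star A (t_mul A x y) = t_mul A (t_star A y) (t_star A x))
  \<comment> \<open>C*-norm, complete\<close>
  \<and> (\<forall>x\<in>t_car A. t_norm A x \<ge> 0 \<and> (t_norm A x = 0 \<longleftrightarrow> x = t_zero A))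
  \<and> (\<forall>x\<in>t_car A. \<forall>y\<in>t_car A. t_norm A (t_add A x y) \<le> t_norm A x + t_norm A y)
  \<and> (\<forall>a. \<forall>x\<in>t_car A. t_norm A (t_scl A a x) = cmod a * t_norm A x)
  \<and> (\<forall>x\<in>t_car A. \<forall>y\<in>t_car A. t_norm A (t_mul A x y) \<le> t_norm A x * t_norm A y)
  \<and> (\<forall>x\<in>t_car A. t_norm A (t_mul A (t_star A x) x) = (t_norm A x)\<^sup>2)
  \<and> (\<forall>s. (\<forall>k. s k \<in> t_car A)
         \<and> (\<forall>e>0. \<exists>N. \<forall>m\<ge>N. \<forall>k\<ge>N. t_norm A (t_diff A (s m) (s k)) < e)
       \<longrightarrow> (\<exists>x\<in>t_car A. (\<lambda>k. t_norm A (t_diff A (s k) x)) \<longlonglongrightarrow> 0))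
  \<comment> \<open>faithful tracial state\<close>
  \<and> (\<forall>x\<in>t_car A. \<forall>y\<in>t_car A. t_tr A (t_add A x y) = t_tr A x + t_tr A y)
  \<and> (\<forall>a. \<forall>x\<in>t_car A. t_tr A (t_scl A a x) = a * t_tr A x)
  \<and> t_tr A (t_one A) = 1
  \<and> (\<forall>x\<in>t_car A. \<forall>y\<in>t_car A. t_tr A (t_mul A x y) = t_tr A (t_mul A y x))
  \<and> (\<forall>x\<in>t_car A. Im (t_tr A (t_mul A (t_star A x) x)) = 0
                 \<and> Re (t_tr A (t_mul A (t_star A x) x)) \<ge> 0)
  \<and> (\<forall>x\<in>t_car A. t_tr A (t_mul A (t_star A x) x) = 0 \<longrightarrow> x = t_zero A)
  \<comment> \<open>W*: the operator-norm unit ball is complete for the 2-norm\<close>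
  \<and> (\<forall>s. (\<forall>k. s k \<in> t_car A \<and> t_norm A (s k) \<le> 1)
         \<and> (\<forall>e>0. \<exists>N. \<forall>m\<ge>N. \<forall>k\<ge>N. norm2 A (t_diff A (s m) (s k)) < e)
       \<longrightarrow> (\<exists>x\<in>t_car A. t_norm A x \<le> 1 \<and> (\<lambda>k. norm2 A (t_diff A (s k) x)) \<longlonglongrightarrow> 0))"

datatype tm = Var nat | One | Add tm tm | Mul tm tm | Scal complex tm | Star tm

text \<open>Formulas: real/imaginary parts of traces of *-polynomials, continuous connectives
  (a function of the first k arguments, k = number of subformulas), sup/inf of a
  bound variable over the operator-norm ball D_r.\<close>
datatype fm = ReTr tm | ImTr tm | Conn "(nat \<Rightarrow> real) \<Rightarrow> real" "fm list"
  | SupF real nat fm | InfF real nat fm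

primrec tm_vars :: "tm \<Rightarrow> nat set" where
  "tm_vars (Var i) = {i}"
| "tm_vars One = {}"
| "tm_vars (Add s t) = tm_vars s \<union> tm_vars t"
| "tm_vars (Mul s t) = tm_vars s \<union> tm_vars t"
| "tm_vars (Scal c t) = tm_vars t"
| "tm_vars (Star t) = tm_vars t"

primrec fv :: "fm \<Rightarrow> nat set" where
  "fv (ReTr t) = tm_vars t"
| "fv (ImTr t) = tm_vars t"
| "fv (Conn f ps) = \<Union> (set (map fv ps))"
| "fv (SupF r j p) = fv p - {j}"
| "fv (InfF r j p) = fv p - {j}"

primrec wf :: "fm \<Rightarrow> bool" where
  "wf (ReTr t) = True"
| "wf (ImTr t) = True"
| "wf (Conn f ps) = (continuous_on UNIV f
      \<and> (\<forall>x y. (\<forall>i<length ps. x i = y i) \<longrightarrow> f x = f y) \<and> list_all id (map wf ps))"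
| "wf (SupF r j p) = (r > 0 \<and> wf p)"
| "wf (InfF r j p) = (r > 0 \<and> wf p)"

primrec tm_eval :: "'a tralg \<Rightarrow> (nat \<Rightarrow> 'a) \<Rightarrow> tm \<Rightarrow> 'a" where
  "tm_eval A \<rho> (Var i) = \<rho> i"
| "tm_eval A \<rho> One = t_one A"
| "tm_eval A \<rho> (Add s t) = t_add A (tm_eval A \<rho> s) (tm_eval A \<rho> t)"
| "tm_eval A \<rho> (Mul s t) = t_mul A (tm_eval A \<rho> s) (tm_eval A \<rho> t)"
| "tm_eval A \<rho> (Scal c t) = t_scl A c (tm_eval A \<rho> t)"
| "tm_eval A \<rho> (Star t) = t_star A (tm_eval A \<rho> t)"

definition ball_r :: "'a tralg \<Rightarrow> real \<Rightarrow> 'a set" where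
  "ball_r A r = {x \<in> t_car A. t_norm A x \<le> r}"

primrec fm_eval :: "'a tralg \<Rightarrow> (nat \<Rightarrow> 'a) \<Rightarrow> fm \<Rightarrow> real" where
  "fm_eval A \<rho> (ReTr t) = Re (t_tr A (tm_eval A \<rho> t))"
| "fm_eval A \<rho> (ImTr t) = Im (t_tr A (tm_eval A \<rho> t))"
| "fm_eval A \<rho> (Conn f ps) =
     f (\<lambda>i. if i < length ps then map (fm_eval A \<rho>) ps ! i else 0)"
| "fm_eval A \<rho> (SupF r j p) = (SUP x \<in> ball_r A r. fm_eval A (\<rho>(j := x)) p)"
| "fm_eval A \<rho> (InfF r j p) = (INF x \<in> ball_r A r. fm_eval A (\<rho>(j := x)) p)"

text \<open>Type of the d-tuple X (entries X 0, ..., X (d-1)): value of every well-formed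
  formula with free variables among the first d; other "formulas" get the dummy value 0.\<close>
definition tp :: "'a tralg \<Rightarrow> nat \<Rightarrow> (nat \<Rightarrow> 'a) \<Rightarrow> fm \<Rightarrow> real" where
  "tp A d X = (\<lambda>\<phi>. if wf \<phi> \<and> fv \<phi> \<subseteq> {..<d} then fm_eval A X \<phi> else 0)"

type_synonym mat = "nat \<Rightarrow> nat \<Rightarrow> complex"

definition opnorm :: "nat \<Rightarrow> mat \<Rightarrow> real" where
  "opnorm n M = Sup {sqrt (\<Sum>a<n. (cmod (\<Sum>b<n. M a b * v b))\<^sup>2) | v.
                       (\<Sum>b<n. (cmod (v b))\<^sup>2) \<le> 1}"

definition Mat :: "nat \<Rightarrow> mat tralg" where
  "Mat n = \<lparr> t_car = {M. \<forall>a b. (n \<le> a \<or> n \<le> b) \<longrightarrow> M a b = 0},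
             t_zero = (\<lambda>a b. 0),
             t_one = (\<lambda>a b. if a = b \<and> a < n then 1 else 0),
             t_add = (\<lambda>M N a b. M a b + N a b),
             t_mul = (\<lambda>M N a b. \<Sum>k<n. M a k * N k b),
             t_scl = (\<lambda>c M a b. c * M a b),
             t_star = (\<lambda>M a b. cnj (M b a)),
             t_norm = opnorm n,
             t_tr = (\<lambda>M. (\<Sum>a<n. M a a) / of_nat n) \<rparr>"

definition bseq :: "(nat \<Rightarrow> mat) set" where
  "bseq = {x. (\<forall>n. x n \<in> t_car (Mat n)) \<and> (\<exists>B. \<forall>n. opnorm n (x n) \<le> B)}"

definition ucls :: "nat filter \<Rightarrow> (nat \<Rightarrow> mat) \<Rightarrow> (nat \<Rightarrow> mat) set" where
  "ucls U x = {y \<in> bseq. ((\<lambda>n. norm2 (Mat n) (t_diff (Mat n) (x n) (y n))) \<longlongrightarrow> 0) U}"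

definition rep :: "(nat \<Rightarrow> mat) set \<Rightarrow> nat \<Rightarrow> mat" where
  "rep C = (SOME x. x \<in> C)"

definition Qalg :: "nat filter \<Rightarrow> (nat \<Rightarrow> mat) set tralg" where
  "Qalg U = \<lparr> t_car = ucls U ` bseq,
     t_zero = ucls U (\<lambda>n. t_zero (Mat n)),
     t_one = ucls U (\<lambda>n. t_one (Mat n)),
     t_add = (\<lambda>C D. ucls U (\<lambda>n. t_add (Mat n) (rep C n) (rep D n))),
     t_mul = (\<lambda>C D. ucls U (\<lambda>n. t_mul (Mat n) (rep C n) (rep D n))),
     t_scl = (\<lambda>c C. ucls U (\<lambda>n. t_scl (Mat n) c (rep C n))),
     t_star = (\<lambda>C. ucls U (\<lambda>n. t_star (Mat n) (rep C n))),
     t_norm = (\<lambda>C. INF x \<in> C. Lim U (\<lambda>n. opnorm n (x n))),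
     t_tr = (\<lambda>C. Lim U (\<lambda>n. t_tr (Mat n) (rep C n))) \<rparr>"

definition cidx :: "nat \<Rightarrow> nat \<Rightarrow> (nat \<times> nat \<times> nat \<times> bool) set" where
  "cidx d n = {..<d} \<times> {..<n} \<times> {..<n} \<times> UNIV"

text \<open>Isometry from R^(2dn^2) (standard Euclidean structure) onto M_n(C)^d with
  <X,Y> = sum_j tr_n(X_j^* Y_j); tuples are extended by 0 beyond index d.\<close>
definition mat_emb :: "nat \<Rightarrow> nat \<Rightarrow> (nat \<times> nat \<times> nat \<times> bool \<Rightarrow> real) \<Rightarrow> nat \<Rightarrow> mat" where
  "mat_emb d n c = (\<lambda>j a b. if j < d \<and> a < n \<and> b < n
       then complex_of_real (sqrt (real n)) * Complex (c (j, a, b, True)) (c (j, a, b, False))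
       else 0)"

definition vol :: "nat \<Rightarrow> nat \<Rightarrow> (nat \<Rightarrow> mat) set \<Rightarrow> ennreal" where
  "vol d n S = emeasure (PiM (cidx d n) (\<lambda>_. lborel))
                 (mat_emb d n -` S \<inter> space (PiM (cidx d n) (\<lambda>_. lborel)))"

definition Gamma :: "nat \<Rightarrow> nat \<Rightarrow> real \<Rightarrow> (fm \<Rightarrow> real) set \<Rightarrow> (nat \<Rightarrow> mat) set" where
  "Gamma d n r K = {Y. (\<forall>j<d. Y j \<in> ball_r (Mat n) r) \<and> (\<forall>j\<ge>d. Y j = (\<lambda>a b. 0))
                       \<and> tp (Mat n) d Y \<in> K}"

definition logvol :: "nat \<Rightarrow> nat \<Rightarrow> (nat \<Rightarrow> mat) set \<Rightarrow> ereal" where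
  "logvol d n S = (let v = vol d n S in
     if v = 0 then -\<infinity> else if v = top then \<infinity>
     else ereal (ln (enn2real v) / (real n)\<^sup>2 + 2 * real d * ln (real n)))"

text \<open>Open sets: open in the weak-* (pointwise/product) topology on functions fm => real.\<close>
definition chi_full_r :: "nat filter \<Rightarrow> nat \<Rightarrow> real \<Rightarrow> (fm \<Rightarrow> real) set \<Rightarrow> ereal" where
  "chi_full_r U d r K = (INF V \<in> {V. open V \<and> K \<subseteq> V}. Lim U (\<lambda>n. logvol d n (Gamma d n r V)))"

definition chi_full :: "nat filter \<Rightarrow> nat \<Rightarrow> (fm \<Rightarrow> real) set \<Rightarrow> ereal" where
  "chi_full U d K = (SUP r \<in> {0<..}. chi_full_r U d r K)"

end

theory Submission
  imports Defs "HOL-Library.Countable"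
begin

section \<open>Matrix analysis\<close>

definition vn :: "nat \<Rightarrow> (nat \<Rightarrow> complex) \<Rightarrow> real" where
  "vn n v = L2_set (\<lambda>b. cmod (v b)) {..<n}"
definition mv :: "nat \<Rightarrow> mat \<Rightarrow> (nat \<Rightarrow> complex) \<Rightarrow> nat \<Rightarrow> complex" where
  "mv n x v = (\<lambda>a. \<Sum>b<n. x a b * v b)"
definition fro :: "nat \<Rightarrow> mat \<Rightarrow> real" where
  "fro n x = L2_set (\<lambda>a. vn n (x a)) {..<n}"

definition mmul :: "nat \<Rightarrow> mat \<Rightarrow> mat \<Rightarrow> mat" where
  "mmul n x y = (\<lambda>a b. \<Sum>k<n. x a k * y k b)"
definition madd :: "mat \<Rightarrow> mat \<Rightarrow> mat" where
  "madd x y = (\<lambda>a b. x a b + y a b)"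
definition mscl :: "complex \<Rightarrow> mat \<Rightarrow> mat" where
  "mscl c x = (\<lambda>a b. c * x a b)"
definition mstar :: "mat \<Rightarrow> mat" where
  "mstar x = (\<lambda>a b. cnj (x b a))"
definition mone :: "nat \<Rightarrow> mat" where
  "mone n = (\<lambda>a b. if a = b \<and> a < n then 1 else 0)"
definition mtr :: "nat \<Rightarrow> mat \<Rightarrow> complex" where
  "mtr n x = (\<Sum>a<n. x a a) / of_nat n"

lemma Mat_simps:
  "t_car (Mat n) = {M. \<forall>a b. (n \<le> a \<or> n \<le> b) \<longrightarrow> M a b = 0}"
  "t_zero (Mat n) = (\<lambda>a b. 0)"
  "t_one (Mat n) = mone n"
  "t_add (Mat n) = madd"
  "t_mul (Mat n) = mmul n"
  "t_scl (Mat n) = mscl"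
  "t_star (Mat n) = mstar"
  "t_norm (Mat n) = opnorm n"
  "t_tr (Mat n) = mtr n"
  by (auto simp: Mat_def mmul_def madd_def mscl_def mstar_def mone_def mtr_def fun_eq_iff)

lemma vn_nonneg[simp]: "0 \<le> vn n v" by (simp add: vn_def)
lemma L2_set_zero[simp]: "L2_set (\<lambda>b. 0) A = 0" by (simp add: L2_set_def)
lemma vn_zero[simp]: "vn n (\<lambda>b. 0) = 0" by (simp add: vn_def)

lemma cs_sum: "cmod (\<Sum>b<n. u b * v b) \<le> vn n u * vn n v"
proof -
  have "cmod (\<Sum>b<n. u b * v b) \<le> (\<Sum>b<n. cmod (u b * v b))" by (rule norm_sum)
  also have "\<dots> = (\<Sum>b<n. \<bar>cmod (u b)\<bar> * \<bar>cmod (v b)\<bar>)" by (simp add: norm_mult)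
  also have "\<dots> \<le> vn n u * vn n v" unfolding vn_def by (rule L2_set_mult_ineq)
  finally show ?thesis .
qed

lemma vn_mv_fro: "vn n (mv n x v) \<le> fro n x * vn n v"
proof -
  have "vn n (mv n x v) = L2_set (\<lambda>a. cmod (\<Sum>b<n. x a b * v b)) {..<n}"
    by (simp add: vn_def mv_def)
  also have "\<dots> \<le> L2_set (\<lambda>a. vn n (x a) * vn n v) {..<n}"
    by (rule L2_set_mono) (auto intro: cs_sum)
  also have "\<dots> = fro n x * vn n v" unfolding fro_def
    by (simp add: L2_set_left_distrib)
  finally show ?thesis .
qed

lemma opnorm_alt: "opnorm n M = Sup {vn n (mv n M v) | v. vn n v \<le> 1}"
  unfolding opnorm_def vn_def mv_def L2_set_def by simp

lemma opn_bdd: "bdd_above {vn n (mv n M v) | v. vn n v \<le> 1}"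
proof (rule bdd_aboveI)
  fix y assume "y \<in> {vn n (mv n M v) | v. vn n v \<le> 1}"
  then obtain v where "y = vn n (mv n M v)" "vn n v \<le> 1" by auto
  moreover have "0 \<le> fro n M" by (simp add: fro_def)
  ultimately show "y \<le> fro n M"
    using vn_mv_fro[of n M v] mult_left_le[of "vn n v" "fro n M"] by auto
qed

lemma vn_scale: "vn n (\<lambda>b. c * v b) = cmod c * vn n v"
  unfolding vn_def by (simp add: L2_set_right_distrib norm_mult)

lemma mv_scale: "mv n x (\<lambda>b. c * v b) = (\<lambda>a. c * mv n x v a)"
  unfolding mv_def by (auto simp: sum_distrib_left mult.assoc mult.left_commute)

lemma vn_zero_iff: "vn n v = 0 \<longleftrightarrow> (\<forall>b<n. v b = 0)"
  unfolding vn_def by (auto simp: L2_set_eq_0_iff)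

lemma vn_cong: "(\<And>b. b < n \<Longrightarrow> v b = w b) \<Longrightarrow> vn n v = vn n w"
  unfolding vn_def by (rule L2_set_cong) auto

lemma mv_cong: "(\<And>b. b < n \<Longrightarrow> v b = w b) \<Longrightarrow> mv n x v = mv n x w"
  unfolding mv_def by auto

lemma opnorm_nonneg: "0 \<le> opnorm n x"
proof -
  have "vn n (mv n x (\<lambda>_. 0)) \<in> {vn n (mv n x v) | v. vn n v \<le> 1}"
    by (auto intro!: exI[of _ "\<lambda>_. 0"])
  hence "vn n (mv n x (\<lambda>_. 0)) \<le> opnorm n x" unfolding opnorm_alt
    by (rule cSup_upper[OF _ opn_bdd])
  thus ?thesis using vn_nonneg order_trans by blast
qed

lemma opnorm_ge: "vn n (mv n x v) \<le> opnorm n x * vn n v"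
proof (cases "vn n v = 0")
  case True
  hence "mv n x v = mv n x (\<lambda>_. 0)" using vn_zero_iff by (intro mv_cong) auto
  hence "vn n (mv n x v) = 0" by (simp add: mv_def vn_def)
  thus ?thesis using True by simp
next
  case False
  hence pos: "vn n v > 0" using vn_nonneg[of n v] by linarith
  define w where "w = (\<lambda>b. complex_of_real (1 / vn n v) * v b)"
  have "vn n w = 1" using pos unfolding w_def vn_scale by (simp add: norm_divide)
  hence "vn n (mv n x w) \<in> {vn n (mv n x v) | v. vn n v \<le> 1}" by auto
  hence "vn n (mv n x w) \<le> opnorm n x" unfolding opnorm_alt
    by (rule cSup_upper[OF _ opn_bdd])
  moreover have "vn n (mv n x w) = cmod (complex_of_real (1 / vn n v)) * vn n (mv n x v)"
    unfolding w_def mv_scale by (rule vn_scale)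
  hence "vn n (mv n x w) = vn n (mv n x v) / vn n v"
    using pos by (simp add: norm_divide)
  ultimately show ?thesis using pos by (simp add: divide_le_eq mult.commute)
qed

lemma opnorm_leI:
  assumes "\<And>v. vn n (mv n x v) \<le> K * vn n v" "0 \<le> K"
  shows "opnorm n x \<le> K"
  unfolding opnorm_alt
proof (rule cSup_least)
  show "{vn n (mv n x v) |v. vn n v \<le> 1} \<noteq> {}" by (auto intro!: exI[of _ "\<lambda>_. 0"] simp: vn_def)
next
  fix y assume "y \<in> {vn n (mv n x v) |v. vn n v \<le> 1}"
  then obtain v where "y = vn n (mv n x v)" "vn n v \<le> 1" by auto
  thus "y \<le> K" using assms(1)[of v] mult_left_le[of "vn n v" K] assms(2) by auto
qed

lemma vn_add: "vn n (\<lambda>a. u a + w a) \<le> vn n u + vn n w"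
proof -
  have "vn n (\<lambda>a. u a + w a) \<le> L2_set (\<lambda>a. cmod (u a) + cmod (w a)) {..<n}"
    unfolding vn_def by (rule L2_set_mono) (auto intro: norm_triangle_ineq)
  also have "\<dots> \<le> vn n u + vn n w" unfolding vn_def by (rule L2_set_triangle_ineq)
  finally show ?thesis .
qed

lemma mv_add: "mv n (madd x y) v = (\<lambda>a. mv n x v a + mv n y v a)"
  unfolding mv_def madd_def by (auto simp: distrib_right sum.distrib)

lemma mv_mul: "mv n (mmul n x y) v = mv n x (mv n y v)"
  unfolding mv_def mmul_def
  by (auto simp: sum_distrib_right sum_distrib_left mult.assoc intro: sum.swap)

lemma mv_scl: "mv n (mscl c x) v = (\<lambda>a. c * mv n x v a)"
  unfolding mv_def mscl_def by (auto simp: sum_distrib_left mult.assoc)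

lemma opnorm_add: "opnorm n (madd x y) \<le> opnorm n x + opnorm n y"
proof (rule opnorm_leI)
  fix v
  have "vn n (mv n (madd x y) v) \<le> vn n (mv n x v) + vn n (mv n y v)"
    unfolding mv_add by (rule vn_add)
  also have "\<dots> \<le> opnorm n x * vn n v + opnorm n y * vn n v"
    by (intro add_mono opnorm_ge)
  finally show "vn n (mv n (madd x y) v) \<le> (opnorm n x + opnorm n y) * vn n v"
    by (simp add: distrib_right)
qed (intro add_nonneg_nonneg opnorm_nonneg)

lemma opnorm_mul: "opnorm n (mmul n x y) \<le> opnorm n x * opnorm n y"
proof (rule opnorm_leI)
  fix v
  have "vn n (mv n (mmul n x y) v) \<le> opnorm n x * vn n (mv n y v)"
    unfolding mv_mul by (rule opnorm_ge)
  also have "\<dots> \<le> opnorm n x * (opnorm n y * vn n v)"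
    by (intro mult_left_mono opnorm_ge opnorm_nonneg)
  finally show "vn n (mv n (mmul n x y) v) \<le> opnorm n x * opnorm n y * vn n v"
    by (simp add: mult.assoc)
qed (intro mult_nonneg_nonneg opnorm_nonneg)

lemma opnorm_scl: "opnorm n (mscl c x) \<le> cmod c * opnorm n x"
proof (rule opnorm_leI)
  fix v
  have "vn n (mv n (mscl c x) v) = cmod c * vn n (mv n x v)"
    unfolding mv_scl by (rule vn_scale)
  also have "\<dots> \<le> cmod c * (opnorm n x * vn n v)"
    by (intro mult_left_mono opnorm_ge) auto
  finally show "vn n (mv n (mscl c x) v) \<le> cmod c * opnorm n x * vn n v"
    by (simp add: mult.assoc)
qed (intro mult_nonneg_nonneg opnorm_nonneg norm_ge_zero)

lemma opnorm_one: "opnorm n (mone n) \<le> 1"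
proof (rule opnorm_leI)
  fix v :: "nat \<Rightarrow> complex"
  have "(\<Sum>b<n. (if a = b \<and> a < n then 1 else 0) * v b) = (if a < n then v a else 0)" for a
  proof (cases "a < n")
    case True
    show ?thesis using True by (simp add: if_distrib[where f="\<lambda>z. z * _"] sum.delta' cong: if_cong)
  qed simp
  hence "mv n (mone n) v = (\<lambda>a. if a < n then v a else 0)"
    unfolding mv_def mone_def by auto
  hence "vn n (mv n (mone n) v) = vn n v" by (auto intro: vn_cong)
  thus "vn n (mv n (mone n) v) \<le> 1 * vn n v" by simp
qed simp

lemma opnorm_zero: "opnorm n (\<lambda>a b. 0) = 0"
proof -
  have "opnorm n (\<lambda>a b. 0) \<le> 0"
    by (rule opnorm_leI) (auto simp: mv_def vn_def)
  thus ?thesis using opnorm_nonneg[of n "\<lambda>a b. 0"] by linarith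
qed

lemma star_key:
  "(vn n (mv n (mstar x) v))\<^sup>2 \<le> vn n v * vn n (mv n x (mv n (mstar x) v))"
proof -
  define w where "w = mv n (mstar x) v"
  have "(\<Sum>a<n. cnj (w a) * w a) = (\<Sum>b<n. v b * cnj (mv n x w b))"
  proof -
    have "(\<Sum>a<n. cnj (w a) * w a) = (\<Sum>a<n. \<Sum>b<n. cnj (w a) * (cnj (x b a) * v b))"
      unfolding w_def[of] mv_def mstar_def by (simp add: sum_distrib_left)
    also have "\<dots> = (\<Sum>b<n. \<Sum>a<n. cnj (w a) * (cnj (x b a) * v b))" by (rule sum.swap)
    also have "\<dots> = (\<Sum>b<n. v b * cnj (mv n x w b))"
      unfolding mv_def by (simp add: sum_distrib_left mult.commute mult.left_commute)
    finally show ?thesis .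
  qed
  moreover have "(\<Sum>a<n. cnj (w a) * w a) = complex_of_real ((vn n w)\<^sup>2)"
  proof -
    have "\<And>a. cnj (w a) * w a = complex_of_real ((cmod (w a))\<^sup>2)"
      using complex_norm_square by (metis of_real_power mult.commute)
    hence "(\<Sum>a<n. cnj (w a) * w a) = complex_of_real (\<Sum>a<n. (cmod (w a))\<^sup>2)"
      by (simp add: of_real_sum)
    also have "(\<Sum>a<n. (cmod (w a))\<^sup>2) = (vn n w)\<^sup>2"
      unfolding vn_def L2_set_def by (simp add: sum_nonneg)
    finally show ?thesis .
  qed
  ultimately have "(vn n w)\<^sup>2 = cmod (\<Sum>b<n. v b * cnj (mv n x w b))"
    by (metis norm_of_real abs_of_nonneg zero_le_power2)
  also have "\<dots> \<le> vn n v * vn n (\<lambda>b. cnj (mv n x w b))" by (rule cs_sum)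
  also have "vn n (\<lambda>b. cnj (mv n x w b)) = vn n (mv n x w)" by (simp add: vn_def)
  finally show ?thesis unfolding w_def .
qed

lemma opnorm_star: "opnorm n (mstar x) \<le> opnorm n x"
proof (rule opnorm_leI)
  fix v
  define w where "w = mv n (mstar x) v"
  have "(vn n w)\<^sup>2 \<le> vn n v * (opnorm n x * vn n w)"
    using star_key[of n x v] opnorm_ge[of n x w] unfolding w_def[symmetric]
    by (meson mult_left_mono order_trans vn_nonneg)
  hence "vn n w * vn n w \<le> (opnorm n x * vn n v) * vn n w"
    by (simp add: power2_eq_square algebra_simps)
  hence "vn n w \<le> opnorm n x * vn n v"
    using vn_nonneg[of n w] opnorm_nonneg[of n x] vn_nonneg[of n v]
    by (metis mult_right_le_imp_le nle_le not_le mult_nonneg_nonneg order_le_less)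
  thus "vn n (mv n (mstar x) v) \<le> opnorm n x * vn n v" unfolding w_def .
qed (rule opnorm_nonneg)

lemma mtr_le_opnorm: "cmod (mtr n x) \<le> opnorm n x"
proof (cases "n = 0")
  case True thus ?thesis by (simp add: mtr_def opnorm_nonneg)
next
  case False
  have "cmod (x a a) \<le> opnorm n x" if "a < n" for a
  proof -
    define e where "e = (\<lambda>b. if b = a then (1::complex) else 0)"
    have "(\<lambda>b. (cmod (e b))\<^sup>2) = (\<lambda>b. if b = a then 1 else 0)"
      by (auto simp: e_def)
    hence "vn n e = 1" unfolding vn_def L2_set_def using that
      by (simp add: sum.delta fun_eq_iff)
    have "mv n x e = (\<lambda>c. x c a)" unfolding mv_def e_def using that
      by (auto simp: if_distrib sum.delta cong: if_cong)
    hence "cmod (x a a) \<le> vn n (mv n x e)" unfolding vn_def using that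
      by (auto intro: member_le_L2_set)
    also have "\<dots> \<le> opnorm n x" using opnorm_ge[of n x e] \<open>vn n e = 1\<close> by simp
    finally show ?thesis .
  qed
  hence "cmod (\<Sum>a<n. x a a) \<le> real n * opnorm n x"
    using norm_sum[of "\<lambda>a. x a a" "{..<n}"] sum_mono[of "{..<n}" "\<lambda>a. cmod (x a a)" "\<lambda>_. opnorm n x"]
    by auto
  thus ?thesis using False unfolding mtr_def by (simp add: norm_divide divide_le_eq mult.commute)
qed

definition nf2 :: "nat \<Rightarrow> mat \<Rightarrow> real" where
  "nf2 n x = L2_set (\<lambda>a. vn n (\<lambda>b. x b a)) {..<n} / sqrt (real n)"

definition msub :: "mat \<Rightarrow> mat \<Rightarrow> mat" where
  "msub x y = (\<lambda>a b. x a b - y a b)"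

lemma t_diff_Mat: "t_diff (Mat n) x y = msub x y"
  by (simp add: t_diff_def Mat_simps madd_def mscl_def msub_def)

lemma nf2_nonneg[simp]: "0 \<le> nf2 n x" by (simp add: nf2_def)

lemma nf2_alt: "nf2 n x = sqrt ((\<Sum>a<n. \<Sum>b<n. (cmod (x b a))\<^sup>2) / real n)"
proof -
  have "L2_set (\<lambda>a. vn n (\<lambda>b. x b a)) {..<n} = sqrt (\<Sum>a<n. \<Sum>b<n. (cmod (x b a))\<^sup>2)"
    unfolding L2_set_def vn_def by (simp add: sum_nonneg)
  thus ?thesis unfolding nf2_def by (simp add: real_sqrt_divide)
qed

lemma norm2_Mat: "norm2 (Mat n) x = nf2 n x"
proof -
  have "mmul n (mstar x) x a a = complex_of_real (\<Sum>k<n. (cmod (x k a))\<^sup>2)" for a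
  proof -
    have "\<And>k. cnj (x k a) * x k a = complex_of_real ((cmod (x k a))\<^sup>2)"
      using complex_norm_square by (metis of_real_power mult.commute)
    thus ?thesis unfolding mmul_def mstar_def by (simp add: of_real_sum)
  qed
  hence "mtr n (mmul n (mstar x) x) = complex_of_real ((\<Sum>a<n. \<Sum>b<n. (cmod (x b a))\<^sup>2) / real n)"
    unfolding mtr_def by (simp add: of_real_sum)
  thus ?thesis unfolding norm2_def Mat_simps nf2_alt by simp
qed

lemma nf2_mul_left: "nf2 n (mmul n x y) \<le> opnorm n x * nf2 n y"
proof -
  have col: "(\<lambda>b. mmul n x y b a) = mv n x (\<lambda>k. y k a)" for a
    unfolding mmul_def mv_def by auto
  have "L2_set (\<lambda>a. vn n (\<lambda>b. mmul n x y b a)) {..<n} \<le> L2_set (\<lambda>a. opnorm n x * vn n (\<lambda>b. y b a)) {..<n}"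
    unfolding col by (rule L2_set_mono) (auto intro: opnorm_ge)
  also have "\<dots> = opnorm n x * L2_set (\<lambda>a. vn n (\<lambda>b. y b a)) {..<n}"
    by (simp add: L2_set_right_distrib opnorm_nonneg)
  finally show ?thesis unfolding nf2_def
    using divide_right_mono[of _ _ "sqrt (real n)"] by simp
qed

lemma nf2_star: "nf2 n (mstar x) = nf2 n x"
proof -
  have "(\<Sum>a<n. \<Sum>b<n. (cmod (x a b))\<^sup>2) = (\<Sum>a<n. \<Sum>b<n. (cmod (x b a))\<^sup>2)"
    by (rule sum.swap)
  thus ?thesis unfolding nf2_alt mstar_def by simp
qed

lemma mstar_mul: "mstar (mmul n x y) = mmul n (mstar y) (mstar x)"
  unfolding mstar_def mmul_def by (auto simp: fun_eq_iff mult.commute)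

lemma nf2_mul_right: "nf2 n (mmul n x y) \<le> nf2 n x * opnorm n y"
proof -
  have "nf2 n (mmul n x y) = nf2 n (mmul n (mstar y) (mstar x))"
    by (metis mstar_mul nf2_star)
  also have "\<dots> \<le> opnorm n (mstar y) * nf2 n (mstar x)" by (rule nf2_mul_left)
  also have "\<dots> \<le> opnorm n y * nf2 n x"
    unfolding nf2_star by (intro mult_right_mono opnorm_star) auto
  finally show ?thesis by (simp add: mult.commute)
qed

lemma nf2_add: "nf2 n (madd x y) \<le> nf2 n x + nf2 n y"
proof -
  have "L2_set (\<lambda>a. vn n (\<lambda>b. madd x y b a)) {..<n}
      \<le> L2_set (\<lambda>a. vn n (\<lambda>b. x b a) + vn n (\<lambda>b. y b a)) {..<n}"
    unfolding madd_def by (rule L2_set_mono) (auto intro: vn_add)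
  also have "\<dots> \<le> L2_set (\<lambda>a. vn n (\<lambda>b. x b a)) {..<n} + L2_set (\<lambda>a. vn n (\<lambda>b. y b a)) {..<n}"
    by (rule L2_set_triangle_ineq)
  finally show ?thesis unfolding nf2_def by (simp add: divide_right_mono add_divide_distrib[symmetric])
qed

lemma nf2_scl: "nf2 n (mscl c x) = cmod c * nf2 n x"
  unfolding nf2_def mscl_def vn_scale by (simp add: L2_set_right_distrib[symmetric])

lemma mtr_le_nf2: "cmod (mtr n x) \<le> nf2 n x"
proof (cases "n = 0")
  case True thus ?thesis by (simp add: mtr_def)
next
  case False
  have "cmod (\<Sum>a<n. x a a) \<le> (\<Sum>a<n. \<bar>cmod (x a a)\<bar> * \<bar>1\<bar>)"
    using norm_sum[of "\<lambda>a. x a a" "{..<n}"] by simp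
  also have "\<dots> \<le> L2_set (\<lambda>a. cmod (x a a)) {..<n} * L2_set (\<lambda>_. 1) {..<n}"
    by (rule L2_set_mult_ineq)
  also have "\<dots> \<le> L2_set (\<lambda>a. vn n (\<lambda>b. x b a)) {..<n} * sqrt (real n)"
  proof -
    have "L2_set (\<lambda>a. cmod (x a a)) {..<n} \<le> L2_set (\<lambda>a. vn n (\<lambda>b. x b a)) {..<n}"
      by (rule L2_set_mono) (auto simp: vn_def intro: member_le_L2_set)
    thus ?thesis by (simp add: L2_set_constant mult_right_mono)
  qed
  finally have h: "cmod (\<Sum>a<n. x a a) \<le> L2_set (\<lambda>a. vn n (\<lambda>b. x b a)) {..<n} * sqrt (real n)" .
  define L where "L = L2_set (\<lambda>a. vn n (\<lambda>b. x b a)) {..<n}"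
  have sq: "sqrt (real n) * sqrt (real n) = real n" by simp
  have np: "real n > 0" using False by simp
  have "cmod (mtr n x) = cmod (\<Sum>a<n. x a a) / real n" unfolding mtr_def by (simp add: norm_divide)
  also have "\<dots> \<le> L * sqrt (real n) / real n" using h np unfolding L_def by (simp add: divide_right_mono)
  also have "\<dots> = L / sqrt (real n)" using np sq by (metis nonzero_mult_div_cancel_right real_sqrt_gt_0_iff times_divide_eq_right less_irrefl divide_divide_eq_right)
  finally show ?thesis unfolding nf2_def L_def .
qed

lemma mtr_add: "mtr n (madd x y) = mtr n x + mtr n y"
  unfolding mtr_def madd_def by (simp add: sum.distrib add_divide_distrib)
lemma mtr_scl: "mtr n (mscl c x) = c * mtr n x"
  unfolding mtr_def mscl_def by (simp add: sum_distrib_left)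
lemma mtr_sub: "mtr n (msub x y) = mtr n x - mtr n y"
  unfolding mtr_def msub_def by (simp add: sum_subtractf diff_divide_distrib)

lemma msub_as_add: "msub x y = madd x (mscl (-1) y)"
  unfolding msub_def madd_def mscl_def by auto

lemma msub_trans: "msub x z = madd (msub x y) (msub y z)"
  unfolding msub_def madd_def by auto

lemma msub_mul: "msub (mmul n x y) (mmul n x' y') = madd (mmul n x (msub y y')) (mmul n (msub x x') y')"
  unfolding msub_def madd_def mmul_def
  by (auto simp: fun_eq_iff sum_subtractf[symmetric] sum.distrib[symmetric] algebra_simps)

lemma msub_add: "msub (madd x y) (madd x' y') = madd (msub x x') (msub y y')"
  unfolding msub_def madd_def by (auto simp: fun_eq_iff algebra_simps)

lemma msub_scl: "msub (mscl c x) (mscl c' y) = madd (mscl c (msub x y)) (mscl (c - c') y)"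
  unfolding msub_def madd_def mscl_def by (auto simp: algebra_simps)

lemma msub_star: "msub (mstar x) (mstar y) = mstar (msub x y)"
  unfolding msub_def mstar_def by auto

lemma msub_self: "msub x x = (\<lambda>a b. 0)"
  unfolding msub_def by auto

lemma opnorm_sub: "opnorm n (msub x y) \<le> opnorm n x + opnorm n y"
  using opnorm_add[of n x "mscl (-1) y"] opnorm_scl[of n "-1" y] unfolding msub_as_add by simp

lemma nf2_sub: "nf2 n (msub x y) \<le> nf2 n x + nf2 n y"
  using nf2_add[of n x "mscl (-1) y"] nf2_scl[of n "-1" y] unfolding msub_as_add by simp

lemma nf2_sub_sym: "nf2 n (msub x y) = nf2 n (msub y x)"
proof -
  have "msub x y = mscl (-1) (msub y x)" unfolding msub_def mscl_def by auto
  thus ?thesis by (simp add: nf2_scl)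
qed

lemma opnorm_sub_sym: "opnorm n (msub x y) = opnorm n (msub y x)"
proof -
  have "msub x y = mscl (-1) (msub y x)" "msub y x = mscl (-1) (msub x y)" unfolding msub_def mscl_def by auto
  thus ?thesis using opnorm_scl[of n "-1" "msub y x"] opnorm_scl[of n "-1" "msub x y"] by simp
qed

lemma nf2_zero[simp]: "nf2 n (\<lambda>a b. 0) = 0" by (simp add: nf2_def)

lemma nf2_le_opnorm: "nf2 n x \<le> opnorm n x"
proof -
  have "nf2 n x = nf2 n (mmul n x (mone n))"
    unfolding nf2_alt mmul_def mone_def
    by (intro arg_cong[where f="\<lambda>s. sqrt (s / real n)"] sum.cong refl)
       (simp add: if_distrib[where f="\<lambda>z. _ * z"] sum.delta' cong: if_cong)
  also have "\<dots> \<le> opnorm n x * nf2 n (mone n)" by (rule nf2_mul_left)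
  also have "nf2 n (mone n) \<le> 1"
  proof (cases "n = 0")
    case False
    have "(\<Sum>a<n. \<Sum>b<n. (cmod (mone n b a))\<^sup>2) = (\<Sum>a<n. 1)"
      unfolding mone_def by (intro sum.cong refl) (simp add: if_distrib[where f="\<lambda>z. (cmod z)\<^sup>2"] sum.delta cong: if_cong)
    thus ?thesis using False unfolding nf2_alt by simp
  qed (simp add: nf2_def)
  hence "opnorm n x * nf2 n (mone n) \<le> opnorm n x" using opnorm_nonneg[of n x]
    by (simp add: mult_left_le)
  finally show ?thesis .
qed

section \<open>Polynomial expressions\<close>

datatype pe = PV nat | PC rat | PA pe pe | PM pe pe
datatype rpe = QV nat | QC real | QA rpe rpe | QM rpe rpe

instance pe :: countable by countable_datatype

primrec peval :: "pe \<Rightarrow> (nat \<Rightarrow> real) \<Rightarrow> real" where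
  "peval (PV i) x = x i"
| "peval (PC c) x = of_rat c"
| "peval (PA a b) x = peval a x + peval b x"
| "peval (PM a b) x = peval a x * peval b x"

primrec pvars :: "pe \<Rightarrow> nat set" where
  "pvars (PV i) = {i}"
| "pvars (PC c) = {}"
| "pvars (PA a b) = pvars a \<union> pvars b"
| "pvars (PM a b) = pvars a \<union> pvars b"

primrec rpeval :: "rpe \<Rightarrow> (nat \<Rightarrow> real) \<Rightarrow> real" where
  "rpeval (QV i) x = x i"
| "rpeval (QC c) x = c"
| "rpeval (QA a b) x = rpeval a x + rpeval b x"
| "rpeval (QM a b) x = rpeval a x * rpeval b x"

primrec qvars :: "rpe \<Rightarrow> nat set" where
  "qvars (QV i) = {i}"
| "qvars (QC c) = {}"
| "qvars (QA a b) = qvars a \<union> qvars b"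
| "qvars (QM a b) = qvars a \<union> qvars b"

definition cube :: "real \<Rightarrow> (nat \<Rightarrow> real) set" where
  "cube B = {x. \<forall>i. \<bar>x i\<bar> \<le> B}"

definition cubek :: "nat \<Rightarrow> real \<Rightarrow> (nat \<Rightarrow> real) set" where
  "cubek k B = {x. \<forall>i. \<bar>x i\<bar> \<le> B \<and> (k \<le> i \<longrightarrow> x i = 0)}"

lemma compact_PiUNIV:
  assumes "\<And>i. compact (S i)"
  shows "compact (Pi UNIV S :: (nat \<Rightarrow> real) set)"
proof -
  have "compactin (product_topology (\<lambda>i. euclidean) UNIV) (PiE UNIV S)"
    using assms by (simp add: compactin_PiE)
  moreover have "PiE UNIV S = Pi UNIV S" by (simp add: PiE_def)
  ultimately show ?thesis by (metis euclidean_product_topology compactin_euclidean_iff)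
qed

lemma compact_cube: "compact (cube B)"
proof -
  have "cube B = Pi UNIV (\<lambda>i. {-B..B})" unfolding cube_def by (rule set_eqI) (simp add: Pi_def abs_le_iff, meson minus_le_iff)
  thus ?thesis by (simp add: compact_PiUNIV)
qed

lemma compact_cubek: "compact (cubek k B)"
proof -
  have "cubek k B = Pi UNIV (\<lambda>i. if i < k then {-B..B} else {-B..B} \<inter> {0})"
    unfolding cubek_def by (rule set_eqI) (simp add: Pi_def abs_le_iff, metis minus_le_iff not_le)
  thus ?thesis by (auto intro!: compact_PiUNIV compact_Int_closed)
qed

lemma rpeval_cont: "continuous_on S (rpeval e)"
  by (induction e) (auto intro!: continuous_intros continuous_on_subset[OF continuous_on_product_coordinates])

lemma peval_cont: "continuous_on S (peval e)"
  by (induction e) (auto intro!: continuous_intros continuous_on_subset[OF continuous_on_product_coordinates])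

lemma rpeval_cong: "(\<And>i. i \<in> qvars e \<Longrightarrow> x i = y i) \<Longrightarrow> rpeval e x = rpeval e y"
  by (induction e) auto

lemma peval_cong: "(\<And>i. i \<in> pvars e \<Longrightarrow> x i = y i) \<Longrightarrow> peval e x = peval e y"
  by (induction e) auto

lemma SW_cubek:
  assumes f: "continuous_on (cubek k B) f" and e: "e > 0"
  shows "\<exists>g. qvars g \<subseteq> {..<k} \<and> (\<forall>x\<in>cubek k B. \<bar>f x - rpeval g x\<bar> < e)"
proof -
  define P where "P = (\<lambda>h. \<exists>g. qvars g \<subseteq> {..<k} \<and> h = rpeval g)"
  have c1: "P (\<lambda>x. c)" for c unfolding P_def by (rule exI[of _ "QC c"]) (simp add: fun_eq_iff)
  have c2: "continuous_on (cubek k B) h" if a: "P h" for h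
  proof -
    obtain g where "h = rpeval g" using a unfolding P_def by blast
    thus ?thesis by (simp add: rpeval_cont)
  qed
  have c3: "P (\<lambda>x. f1 x + f2 x)" if a: "P f1 \<and> P f2" for f1 f2
  proof -
    obtain g1 g2 where "qvars g1 \<subseteq> {..<k}" "f1 = rpeval g1" "qvars g2 \<subseteq> {..<k}" "f2 = rpeval g2"
      using a unfolding P_def by blast
    thus ?thesis unfolding P_def by (intro exI[of _ "QA g1 g2"]) (simp add: fun_eq_iff)
  qed
  have c4: "P (\<lambda>x. f1 x * f2 x)" if a: "P f1 \<and> P f2" for f1 f2
  proof -
    obtain g1 g2 where "qvars g1 \<subseteq> {..<k}" "f1 = rpeval g1" "qvars g2 \<subseteq> {..<k}" "f2 = rpeval g2"
      using a unfolding P_def by blast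
    thus ?thesis unfolding P_def by (intro exI[of _ "QM g1 g2"]) (simp add: fun_eq_iff)
  qed
  have c5: "\<exists>h. P h \<and> h x \<noteq> h y" if a: "x \<in> cubek k B \<and> y \<in> cubek k B \<and> x \<noteq> y" for x y
  proof -
    obtain i where xi: "x i \<noteq> y i" using a by (meson ext)
    have "i < k" using a xi unfolding cubek_def by (metis (mono_tags, lifting) mem_Collect_eq not_le)
    hence "P (\<lambda>z. z i)" unfolding P_def by (intro exI[of _ "QV i"]) (simp add: fun_eq_iff)
    thus ?thesis using xi by blast
  qed
  have "\<exists>h. P h \<and> (\<forall>x\<in>cubek k B. \<bar>f x - h x\<bar> < e)"
    by (rule Stone_Weierstrass_HOL[of "cubek k B" P, OF compact_cubek c1 c2 c3 c4 c5 f e])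
  thus ?thesis unfolding P_def by blast
qed

primrec rpb :: "real \<Rightarrow> rpe \<Rightarrow> real" where
  "rpb B (QV i) = \<bar>B\<bar>"
| "rpb B (QC c) = \<bar>c\<bar>"
| "rpb B (QA a b) = rpb B a + rpb B b"
| "rpb B (QM a b) = rpb B a * rpb B b"

lemma rpb_nonneg: "0 \<le> rpb B e" by (induction e) auto

lemma rpb_bound: "x \<in> cube B \<Longrightarrow> \<bar>rpeval e x\<bar> \<le> rpb B e"
proof (induction e)
  case (QV i) thus ?case by (auto simp: cube_def) (metis abs_ge_self order_trans)
next
  case (QA a b) thus ?case by (simp add: abs_triangle_ineq order_trans[OF abs_triangle_ineq add_mono])
next
  case (QM a b) thus ?case by (simp add: abs_mult mult_mono rpb_nonneg)
qed simp

lemma prod_diff_bound: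
  fixes a b a' b' :: real
  assumes "\<bar>a\<bar> \<le> A" "\<bar>b\<bar> \<le> Bb" "\<bar>a - a'\<bar> \<le> h" "\<bar>b - b'\<bar> \<le> h" "h \<le> 1" "0 \<le> h"
  shows "\<bar>a * b - a' * b'\<bar> \<le> h * (A + Bb + 1)"
proof -
  have "a * b - a' * b' = a * (b - b') + (a - a') * b'" by (simp add: algebra_simps)
  hence "\<bar>a * b - a' * b'\<bar> \<le> \<bar>a\<bar> * \<bar>b - b'\<bar> + \<bar>a - a'\<bar> * \<bar>b'\<bar>"
    by (metis abs_mult abs_triangle_ineq)
  also have "\<dots> \<le> A * h + h * (Bb + 1)"
  proof (intro add_mono mult_mono)
    show "\<bar>b'\<bar> \<le> Bb + 1" using assms by linarith
  qed (use assms in auto)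
  finally show ?thesis by (simp add: algebra_simps)
qed

lemma rat_approx: "\<exists>q::rat. \<bar>r - of_rat q\<bar> \<le> e" if "e > 0" for r e :: real
proof -
  have "r < r + e" using that by simp
  then obtain q where "q \<in> \<rat>" "r < q" "q < r + e" using Rats_dense_in_real by blast
  then obtain q' where "q = of_rat q'" by (auto elim: Rats_cases)
  thus ?thesis using \<open>r < q\<close> \<open>q < r + e\<close> by (intro exI[of _ q']) auto
qed

lemma rpe_rat_approx:
  "\<forall>B e. e > 0 \<longrightarrow> (\<exists>p. pvars p \<subseteq> qvars g \<and> (\<forall>x\<in>cube B. \<bar>rpeval g x - peval p x\<bar> \<le> e))"
proof (induction g)
  case (QV i) thus ?case by (auto intro!: exI[of _ "PV i"])
next
  case (QC c)
  show ?case
  proof (intro allI impI)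
    fix B e :: real assume "e > 0"
    then obtain q where "\<bar>c - of_rat q\<bar> \<le> e" using rat_approx by blast
    thus "\<exists>p. pvars p \<subseteq> qvars (QC c) \<and> (\<forall>x\<in>cube B. \<bar>rpeval (QC c) x - peval p x\<bar> \<le> e)"
      by (intro exI[of _ "PC q"]) auto
  qed
next
  case (QA a b)
  show ?case
  proof (intro allI impI)
    fix B e :: real assume "e > 0"
    obtain p1 where p1: "pvars p1 \<subseteq> qvars a" "\<forall>x\<in>cube B. \<bar>rpeval a x - peval p1 x\<bar> \<le> e/2"
      using QA.IH(1) \<open>e > 0\<close> by (meson half_gt_zero)
    obtain p2 where p2: "pvars p2 \<subseteq> qvars b" "\<forall>x\<in>cube B. \<bar>rpeval b x - peval p2 x\<bar> \<le> e/2"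
      using QA.IH(2) \<open>e > 0\<close> by (meson half_gt_zero)
    show "\<exists>p. pvars p \<subseteq> qvars (QA a b) \<and> (\<forall>x\<in>cube B. \<bar>rpeval (QA a b) x - peval p x\<bar> \<le> e)"
      using p1 p2 by (intro exI[of _ "PA p1 p2"]) (auto, smt (verit, best) field_sum_of_halves)
  qed
next
  case (QM a b)
  show ?case
  proof (intro allI impI)
    fix B e :: real assume "e > 0"
    define h where "h = min 1 (e / (rpb B a + rpb B b + 1))"
    have hpos: "h > 0" unfolding h_def using \<open>e > 0\<close> rpb_nonneg[of B a] rpb_nonneg[of B b] by auto
    obtain p1 where p1: "pvars p1 \<subseteq> qvars a" "\<forall>x\<in>cube B. \<bar>rpeval a x - peval p1 x\<bar> \<le> h"
      using QM.IH(1) hpos by meson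
    obtain p2 where p2: "pvars p2 \<subseteq> qvars b" "\<forall>x\<in>cube B. \<bar>rpeval b x - peval p2 x\<bar> \<le> h"
      using QM.IH(2) hpos by meson
    have "\<bar>rpeval a x * rpeval b x - peval p1 x * peval p2 x\<bar> \<le> e" if "x \<in> cube B" for x
    proof -
      have "\<bar>rpeval a x * rpeval b x - peval p1 x * peval p2 x\<bar> \<le> h * (rpb B a + rpb B b + 1)"
        using p1 p2 that hpos by (intro prod_diff_bound rpb_bound) (auto simp: h_def)
      also have "\<dots> \<le> e" unfolding h_def using rpb_nonneg[of B a] rpb_nonneg[of B b]
        by (smt (verit) \<open>0 < e\<close> le_divide_eq min.cobounded2 mult.commute mult_right_mono)
      finally show ?thesis .
    qed
    thus "\<exists>p. pvars p \<subseteq> qvars (QM a b) \<and> (\<forall>x\<in>cube B. \<bar>rpeval (QM a b) x - peval p x\<bar> \<le> e)"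
      using p1 p2 by (intro exI[of _ "PM p1 p2"]) auto
  qed
qed

primrec pb :: "real \<Rightarrow> pe \<Rightarrow> real" where
  "pb B (PV i) = \<bar>B\<bar>"
| "pb B (PC c) = \<bar>of_rat c\<bar>"
| "pb B (PA a b) = pb B a + pb B b"
| "pb B (PM a b) = pb B a * pb B b"

lemma pb_nonneg: "0 \<le> pb B e" by (induction e) auto

lemma pb_bound: "x \<in> cube B \<Longrightarrow> \<bar>peval e x\<bar> \<le> pb B e"
proof (induction e)
  case (PV i) thus ?case by (auto simp: cube_def) (metis abs_ge_self order_trans)
next
  case (PA a b) thus ?case by (simp add: order_trans[OF abs_triangle_ineq add_mono])
next
  case (PM a b) thus ?case by (simp add: abs_mult mult_mono pb_nonneg)
qed simp

lemma peval_lip: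
  "\<exists>L\<ge>0. \<forall>x y h. x \<in> cube B \<longrightarrow> y \<in> cube B \<longrightarrow> 0 \<le> h \<longrightarrow> h \<le> 1 \<longrightarrow>
      (\<forall>i. \<bar>x i - y i\<bar> \<le> h) \<longrightarrow> \<bar>peval e x - peval e y\<bar> \<le> L * h"
proof (induction e)
  case (PV i) thus ?case by (intro exI[of _ 1]) auto
next
  case (PC c) thus ?case by (intro exI[of _ 0]) auto
next
  case (PA a b)
  then obtain L1 L2 where L1: "L1 \<ge> 0" "\<forall>x y h. x \<in> cube B \<longrightarrow> y \<in> cube B \<longrightarrow> 0 \<le> h \<longrightarrow> h \<le> 1 \<longrightarrow>
      (\<forall>i. \<bar>x i - y i\<bar> \<le> h) \<longrightarrow> \<bar>peval a x - peval a y\<bar> \<le> L1 * h"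
    and L2: "L2 \<ge> 0" "\<forall>x y h. x \<in> cube B \<longrightarrow> y \<in> cube B \<longrightarrow> 0 \<le> h \<longrightarrow> h \<le> 1 \<longrightarrow>
      (\<forall>i. \<bar>x i - y i\<bar> \<le> h) \<longrightarrow> \<bar>peval b x - peval b y\<bar> \<le> L2 * h" by blast
  show ?case
  proof (intro exI[of _ "L1 + L2"] conjI allI impI)
    fix x y h assume H: "x \<in> cube B" "y \<in> cube B" "0 \<le> h" "h \<le> 1" "\<forall>i. \<bar>x i - y i\<bar> \<le> h"
    have "\<bar>peval a x - peval a y\<bar> \<le> L1 * h" "\<bar>peval b x - peval b y\<bar> \<le> L2 * h"
      using L1(2) L2(2) H by auto
    thus "\<bar>peval (PA a b) x - peval (PA a b) y\<bar> \<le> (L1 + L2) * h" by (simp add: algebra_simps)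
  qed (use L1 L2 in auto)
next
  case (PM a b)
  then obtain L1 L2 where L1: "L1 \<ge> 0" "\<forall>x y h. x \<in> cube B \<longrightarrow> y \<in> cube B \<longrightarrow> 0 \<le> h \<longrightarrow> h \<le> 1 \<longrightarrow>
      (\<forall>i. \<bar>x i - y i\<bar> \<le> h) \<longrightarrow> \<bar>peval a x - peval a y\<bar> \<le> L1 * h"
    and L2: "L2 \<ge> 0" "\<forall>x y h. x \<in> cube B \<longrightarrow> y \<in> cube B \<longrightarrow> 0 \<le> h \<longrightarrow> h \<le> 1 \<longrightarrow>
      (\<forall>i. \<bar>x i - y i\<bar> \<le> h) \<longrightarrow> \<bar>peval b x - peval b y\<bar> \<le> L2 * h" by blast
  show ?case
  proof (intro exI[of _ "L1 * pb B b + pb B a * L2"] conjI allI impI)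
    fix x y h assume H: "x \<in> cube B" "y \<in> cube B" "0 \<le> h" "h \<le> 1" "\<forall>i. \<bar>x i - y i\<bar> \<le> h"
    have d1: "\<bar>peval a x - peval a y\<bar> \<le> L1 * h" and d2: "\<bar>peval b x - peval b y\<bar> \<le> L2 * h"
      using L1(2) L2(2) H by auto
    have "peval a x * peval b x - peval a y * peval b y
        = (peval a x - peval a y) * peval b x + peval a y * (peval b x - peval b y)"
      by (simp add: algebra_simps)
    hence "\<bar>peval a x * peval b x - peval a y * peval b y\<bar>
        \<le> \<bar>peval a x - peval a y\<bar> * \<bar>peval b x\<bar> + \<bar>peval a y\<bar> * \<bar>peval b x - peval b y\<bar>"
      by (metis abs_mult abs_triangle_ineq)
    also have "\<dots> \<le> (L1 * h) * pb B b + pb B a * (L2 * h)"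
      using H d1 d2 by (intro add_mono mult_mono pb_bound) (auto simp: pb_nonneg)
    finally show "\<bar>peval (PM a b) x - peval (PM a b) y\<bar> \<le> (L1 * pb B b + pb B a * L2) * h"
      by (simp add: algebra_simps)
  qed (use L1 L2 pb_nonneg in auto)
qed

section \<open>Countable fragment of formulas\<close>

datatype rtm = RVar nat | ROne | RAdd rtm rtm | RMul rtm rtm | RScal rat rat rtm | RStar rtm
datatype rfm = RReTr rtm | RImTr rtm | RConn pe "rfm list" | RSup rat nat rfm | RInf rat nat rfm

instance rtm :: countable by countable_datatype
instance rfm :: countable by countable_datatype

primrec itm :: "rtm \<Rightarrow> tm" where
  "itm (RVar i) = Var i"
| "itm ROne = One"
| "itm (RAdd a b) = Add (itm a) (itm b)"
| "itm (RMul a b) = Mul (itm a) (itm b)"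
| "itm (RScal p q a) = Scal (Complex (of_rat p) (of_rat q)) (itm a)"
| "itm (RStar a) = Star (itm a)"

primrec ifm :: "rfm \<Rightarrow> fm" where
  "ifm (RReTr t) = ReTr (itm t)"
| "ifm (RImTr t) = ImTr (itm t)"
| "ifm (RConn e ps) = Conn (\<lambda>x. peval e (\<lambda>i. if i < length ps then x i else 0)) (map ifm ps)"
| "ifm (RSup q j p) = SupF (of_rat q) j (ifm p)"
| "ifm (RInf q j p) = InfF (of_rat q) j (ifm p)"

declare Mat_simps[simp]

definition incar :: "nat \<Rightarrow> mat \<Rightarrow> bool" where
  "incar n x \<longleftrightarrow> (\<forall>a b. (n \<le> a \<or> n \<le> b) \<longrightarrow> x a b = 0)"

lemma incar_iff: "x \<in> t_car (Mat n) \<longleftrightarrow> incar n x"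
  by (simp add: Mat_simps incar_def)

lemma incar_add: "incar n x \<Longrightarrow> incar n y \<Longrightarrow> incar n (madd x y)"
  by (simp add: incar_def madd_def)
lemma incar_mul: "incar n x \<Longrightarrow> incar n y \<Longrightarrow> incar n (mmul n x y)"
  by (simp add: incar_def mmul_def)
lemma incar_scl: "incar n x \<Longrightarrow> incar n (mscl c x)"
  by (simp add: incar_def mscl_def)
lemma incar_star: "incar n x \<Longrightarrow> incar n (mstar x)"
  by (auto simp: incar_def mstar_def)
lemma incar_one: "incar n (mone n)"
  by (auto simp: incar_def mone_def)
lemma incar_zero: "incar n (\<lambda>a b. 0)"
  by (auto simp: incar_def)
lemma incar_sub: "incar n x \<Longrightarrow> incar n y \<Longrightarrow> incar n (msub x y)"
  by (simp add: incar_def msub_def)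

lemma tm_eval_Mat:
  "tm_eval (Mat n) \<rho> (Var i) = \<rho> i"
  "tm_eval (Mat n) \<rho> One = mone n"
  "tm_eval (Mat n) \<rho> (Add s t) = madd (tm_eval (Mat n) \<rho> s) (tm_eval (Mat n) \<rho> t)"
  "tm_eval (Mat n) \<rho> (Mul s t) = mmul n (tm_eval (Mat n) \<rho> s) (tm_eval (Mat n) \<rho> t)"
  "tm_eval (Mat n) \<rho> (Scal c t) = mscl c (tm_eval (Mat n) \<rho> t)"
  "tm_eval (Mat n) \<rho> (Star t) = mstar (tm_eval (Mat n) \<rho> t)"
  by (simp_all add: Mat_simps)

lemma tm_incar: "(\<And>j. incar n (\<rho> j)) \<Longrightarrow> incar n (tm_eval (Mat n) \<rho> t)"
  by (induction t) (auto intro: incar_add incar_mul incar_scl incar_star incar_one)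

primrec tb :: "real \<Rightarrow> tm \<Rightarrow> real" where
  "tb R (Var i) = \<bar>R\<bar>"
| "tb R One = 1"
| "tb R (Add a b) = tb R a + tb R b"
| "tb R (Mul a b) = tb R a * tb R b"
| "tb R (Scal c a) = cmod c * tb R a"
| "tb R (Star a) = tb R a"

lemma tb_nonneg: "0 \<le> tb R t" by (induction t) auto

lemma tm_bound: "(\<And>j. opnorm n (\<rho> j) \<le> R) \<Longrightarrow> opnorm n (tm_eval (Mat n) \<rho> t) \<le> tb R t"
proof (induction t)
  case (Var i) thus ?case by (simp add: tm_eval_Mat) (meson abs_ge_self order_trans)
next
  case One thus ?case by (simp add: tm_eval_Mat opnorm_one)
next
  case (Add a b) thus ?case by (simp add: tm_eval_Mat) (meson add_mono opnorm_add order_trans)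
next
  case (Mul a b) thus ?case
    by (simp add: tm_eval_Mat) (meson mult_mono opnorm_mul order_trans opnorm_nonneg tb_nonneg)
next
  case (Scal c a) thus ?case
    by (simp add: tm_eval_Mat) (meson mult_left_mono norm_ge_zero opnorm_scl order_trans)
next
  case (Star a) thus ?case by (simp add: tm_eval_Mat) (meson opnorm_star order_trans)
qed

lemma opnorm_tri: "opnorm n y \<le> opnorm n x + opnorm n (msub x y)"
proof -
  have "y = madd x (mscl (-1) (msub x y))" unfolding madd_def mscl_def msub_def by auto
  hence "opnorm n y \<le> opnorm n x + opnorm n (mscl (-1) (msub x y))" by (metis opnorm_add)
  also have "opnorm n (mscl (-1) (msub x y)) \<le> opnorm n (msub x y)" using opnorm_scl[of n "-1"] by simp
  finally show ?thesis by simp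
qed

lemma opnorm_msub_self: "opnorm n (msub x x) = 0"
  by (simp add: msub_self opnorm_zero)

lemma lip_aux:
  fixes X D1 D2 Y A Bb h :: real
  assumes "0 \<le> X" "X \<le> A" "0 \<le> D1" "D1 \<le> h" "0 \<le> D2" "D2 \<le> h" "0 \<le> Y" "Y \<le> Bb + 1"
  shows "X * D1 + D2 * Y \<le> h * (A + Bb + 1)"
proof -
  have "X * D1 \<le> A * h" using assms by (intro mult_mono) auto
  moreover have "D2 * Y \<le> h * (Bb + 1)" using assms by (intro mult_mono) auto
  ultimately show ?thesis by (simp add: algebra_simps)
qed

definition closeR :: "nat \<Rightarrow> real \<Rightarrow> (nat \<Rightarrow> mat) \<Rightarrow> (nat \<Rightarrow> mat) \<Rightarrow> bool" where
  "closeR n d \<rho> \<rho>' \<longleftrightarrow> (\<forall>j. opnorm n (msub (\<rho> j) (\<rho>' j)) \<le> d)"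

definition bndR :: "nat \<Rightarrow> real \<Rightarrow> (nat \<Rightarrow> mat) \<Rightarrow> bool" where
  "bndR n R \<rho> \<longleftrightarrow> (\<forall>j. opnorm n (\<rho> j) \<le> R)"

lemma closeR_refl: "closeR n d \<rho> \<rho>" if "0 \<le> d" using that by (simp add: closeR_def opnorm_msub_self)

lemma closeR_mono: "closeR n d \<rho> \<rho>' \<Longrightarrow> d \<le> d' \<Longrightarrow> closeR n d' \<rho> \<rho>'"
  unfolding closeR_def by (meson order_trans)

lemma tm_approx:
  "\<forall>R e. e > 0 \<longrightarrow> (\<exists>t' d. d > 0 \<and> tm_vars (itm t') \<subseteq> tm_vars t \<and>
     (\<forall>n \<rho> \<rho>'. bndR n R \<rho> \<longrightarrow> bndR n R \<rho>' \<longrightarrow> closeR n d \<rho> \<rho>' \<longrightarrow>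
        opnorm n (msub (tm_eval (Mat n) \<rho> t) (tm_eval (Mat n) \<rho>' (itm t'))) \<le> e))"
proof (induction t)
  case (Var i)
  show ?case
  proof (intro allI impI)
    fix R e :: real assume "e > 0"
    thus "\<exists>t' d. d > 0 \<and> tm_vars (itm t') \<subseteq> tm_vars (Var i) \<and>
     (\<forall>n \<rho> \<rho>'. bndR n R \<rho> \<longrightarrow> bndR n R \<rho>' \<longrightarrow> closeR n d \<rho> \<rho>' \<longrightarrow>
        opnorm n (msub (tm_eval (Mat n) \<rho> (Var i)) (tm_eval (Mat n) \<rho>' (itm t'))) \<le> e)"
      by (intro exI[of _ "RVar i"] exI[of _ e]) (auto simp: closeR_def tm_eval_Mat)
  qed
next
  case One
  show ?case
  proof (intro allI impI)
    fix R e :: real assume "e > 0"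
    thus "\<exists>t' d. d > 0 \<and> tm_vars (itm t') \<subseteq> tm_vars One \<and>
     (\<forall>n \<rho> \<rho>'. bndR n R \<rho> \<longrightarrow> bndR n R \<rho>' \<longrightarrow> closeR n d \<rho> \<rho>' \<longrightarrow>
        opnorm n (msub (tm_eval (Mat n) \<rho> One) (tm_eval (Mat n) \<rho>' (itm t'))) \<le> e)"
      by (intro exI[of _ "ROne"] exI[of _ e]) (auto simp: tm_eval_Mat opnorm_msub_self)
  qed
next
  case (Add a b)
  show ?case
  proof (intro allI impI)
    fix R e :: real assume "e > 0"
    obtain a' d1 where A: "d1 > 0" "tm_vars (itm a') \<subseteq> tm_vars a"
      "\<forall>n \<rho> \<rho>'. bndR n R \<rho> \<longrightarrow> bndR n R \<rho>' \<longrightarrow> closeR n d1 \<rho> \<rho>' \<longrightarrow>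
        opnorm n (msub (tm_eval (Mat n) \<rho> a) (tm_eval (Mat n) \<rho>' (itm a'))) \<le> e/2"
      using Add.IH(1)[rule_format, where R=R and e="e/2"] \<open>e > 0\<close> by auto
    obtain b' d2 where B: "d2 > 0" "tm_vars (itm b') \<subseteq> tm_vars b"
      "\<forall>n \<rho> \<rho>'. bndR n R \<rho> \<longrightarrow> bndR n R \<rho>' \<longrightarrow> closeR n d2 \<rho> \<rho>' \<longrightarrow>
        opnorm n (msub (tm_eval (Mat n) \<rho> b) (tm_eval (Mat n) \<rho>' (itm b'))) \<le> e/2"
      using Add.IH(2)[rule_format, where R=R and e="e/2"] \<open>e > 0\<close> by auto
    show "\<exists>t' d. d > 0 \<and> tm_vars (itm t') \<subseteq> tm_vars (Add a b) \<and>
     (\<forall>n \<rho> \<rho>'. bndR n R \<rho> \<longrightarrow> bndR n R \<rho>' \<longrightarrow> closeR n d \<rho> \<rho>' \<longrightarrow>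
        opnorm n (msub (tm_eval (Mat n) \<rho> (Add a b)) (tm_eval (Mat n) \<rho>' (itm t'))) \<le> e)"
    proof (intro exI[of _ "RAdd a' b'"] exI[of _ "min d1 d2"] conjI allI impI)
      fix n \<rho> \<rho>' assume H: "bndR n R \<rho>" "bndR n R \<rho>'" "closeR n (min d1 d2) \<rho> \<rho>'"
      have c1: "closeR n d1 \<rho> \<rho>'" "closeR n d2 \<rho> \<rho>'" using closeR_mono[OF H(3)] by auto
      have "opnorm n (msub (tm_eval (Mat n) \<rho> a) (tm_eval (Mat n) \<rho>' (itm a'))) \<le> e/2"
        using A(3) H(1,2) c1 by blast
      moreover have "opnorm n (msub (tm_eval (Mat n) \<rho> b) (tm_eval (Mat n) \<rho>' (itm b'))) \<le> e/2"
        using B(3) H(1,2) c1 by blast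
      ultimately show "opnorm n (msub (tm_eval (Mat n) \<rho> (Add a b)) (tm_eval (Mat n) \<rho>' (itm (RAdd a' b')))) \<le> e"
        unfolding tm_eval_Mat itm.simps msub_add
        using opnorm_add[of n "msub (tm_eval (Mat n) \<rho> a) (tm_eval (Mat n) \<rho>' (itm a'))"
            "msub (tm_eval (Mat n) \<rho> b) (tm_eval (Mat n) \<rho>' (itm b'))"] by linarith
    qed (use A(1,2) B(1,2) in auto)
  qed
next
  case (Mul a b)
  show ?case
  proof (intro allI impI)
    fix R e :: real assume "e > 0"
    define h where "h = min 1 (e / (tb R a + tb R b + 1))"
    have hpos: "h > 0" unfolding h_def using \<open>e > 0\<close> tb_nonneg[of R a] tb_nonneg[of R b] by auto
    have he: "h * (tb R a + tb R b + 1) \<le> e" unfolding h_def using tb_nonneg[of R a] tb_nonneg[of R b]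
      by (smt (verit) \<open>0 < e\<close> le_divide_eq min.cobounded2 mult.commute mult_right_mono)
    obtain a' d1 where A: "d1 > 0" "tm_vars (itm a') \<subseteq> tm_vars a"
      "\<forall>n \<rho> \<rho>'. bndR n R \<rho> \<longrightarrow> bndR n R \<rho>' \<longrightarrow> closeR n d1 \<rho> \<rho>' \<longrightarrow>
        opnorm n (msub (tm_eval (Mat n) \<rho> a) (tm_eval (Mat n) \<rho>' (itm a'))) \<le> h"
      using Mul.IH(1)[rule_format, where R=R and e=h] hpos by auto
    obtain b' d2 where B: "d2 > 0" "tm_vars (itm b') \<subseteq> tm_vars b"
      "\<forall>n \<rho> \<rho>'. bndR n R \<rho> \<longrightarrow> bndR n R \<rho>' \<longrightarrow> closeR n d2 \<rho> \<rho>' \<longrightarrow>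
        opnorm n (msub (tm_eval (Mat n) \<rho> b) (tm_eval (Mat n) \<rho>' (itm b'))) \<le> h"
      using Mul.IH(2)[rule_format, where R=R and e=h] hpos by auto
    show "\<exists>t' d. d > 0 \<and> tm_vars (itm t') \<subseteq> tm_vars (Mul a b) \<and>
     (\<forall>n \<rho> \<rho>'. bndR n R \<rho> \<longrightarrow> bndR n R \<rho>' \<longrightarrow> closeR n d \<rho> \<rho>' \<longrightarrow>
        opnorm n (msub (tm_eval (Mat n) \<rho> (Mul a b)) (tm_eval (Mat n) \<rho>' (itm t'))) \<le> e)"
    proof (intro exI[of _ "RMul a' b'"] exI[of _ "min d1 d2"] conjI allI impI)
      fix n \<rho> \<rho>' assume H: "bndR n R \<rho>" "bndR n R \<rho>'" "closeR n (min d1 d2) \<rho> \<rho>'"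
      define x where "x = tm_eval (Mat n) \<rho> a"
      define y where "y = tm_eval (Mat n) \<rho> b"
      define x' where "x' = tm_eval (Mat n) \<rho>' (itm a')"
      define y' where "y' = tm_eval (Mat n) \<rho>' (itm b')"
      have c1: "closeR n d1 \<rho> \<rho>'" "closeR n d2 \<rho> \<rho>'" using closeR_mono[OF H(3)] by auto
      have r1: "closeR n d1 \<rho>' \<rho>'" "closeR n d2 \<rho>' \<rho>'" using closeR_refl A(1) B(1) by auto
      have dx: "opnorm n (msub x x') \<le> h" unfolding x_def x'_def using A(3) H(1,2) c1 by blast
      have dy: "opnorm n (msub y y') \<le> h" unfolding y_def y'_def using B(3) H(1,2) c1 by blast
      have bx: "opnorm n x \<le> tb R a" unfolding x_def using H(1) by (intro tm_bound) (auto simp: bndR_def)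
      have y'': "opnorm n (msub (tm_eval (Mat n) \<rho>' b) y') \<le> h"
        unfolding y'_def using B(3) H(2) r1 by blast
      have "opnorm n (tm_eval (Mat n) \<rho>' b) \<le> tb R b" using H(2) by (intro tm_bound) (auto simp: bndR_def)
      hence by': "opnorm n y' \<le> tb R b + 1" using opnorm_tri[of n y' "tm_eval (Mat n) \<rho>' b"] y'' hpos
        unfolding h_def by linarith
      have "opnorm n (msub (mmul n x y) (mmul n x' y')) \<le> opnorm n (mmul n x (msub y y')) + opnorm n (mmul n (msub x x') y')"
        unfolding msub_mul by (rule opnorm_add)
      also have "\<dots> \<le> opnorm n x * opnorm n (msub y y') + opnorm n (msub x x') * opnorm n y'"
        by (intro add_mono opnorm_mul)
      also have "\<dots> \<le> h * (tb R a + tb R b + 1)"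
        by (rule lip_aux) (use bx by' dx dy opnorm_nonneg in auto)
      also have "\<dots> \<le> e" by (rule he)
      finally show "opnorm n (msub (tm_eval (Mat n) \<rho> (Mul a b)) (tm_eval (Mat n) \<rho>' (itm (RMul a' b')))) \<le> e"
        by (simp add: tm_eval_Mat x_def y_def x'_def y'_def)
    qed (use A(1,2) B(1,2) in auto)
  qed
next
  case (Scal c a)
  show ?case
  proof (intro allI impI)
    fix R e :: real assume "e > 0"
    define h where "h = min 1 (e / (cmod c + 2 * tb R a + 3))"
    have "cmod c + 2 * tb R a + 3 > 0" using tb_nonneg[of R a] norm_ge_zero[of c] by linarith
    hence hpos: "h > 0" unfolding h_def using \<open>e > 0\<close> by auto
    have he: "h * (cmod c + 2 * tb R a + 3) \<le> e" unfolding h_def using tb_nonneg[of R a]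
      by (smt (verit) \<open>0 < e\<close> le_divide_eq min.cobounded2 mult.commute mult_right_mono norm_ge_zero)
    obtain p where p: "\<bar>Re c - of_rat p\<bar> \<le> h" using rat_approx hpos by blast
    obtain q where q: "\<bar>Im c - of_rat q\<bar> \<le> h" using rat_approx hpos by blast
    define c' where "c' = Complex (of_rat p) (of_rat q)"
    have cc: "cmod (c - c') \<le> 2 * h"
      using cmod_le[of "c - c'"] p q unfolding c'_def by simp
    obtain a' d1 where A: "d1 > 0" "tm_vars (itm a') \<subseteq> tm_vars a"
      "\<forall>n \<rho> \<rho>'. bndR n R \<rho> \<longrightarrow> bndR n R \<rho>' \<longrightarrow> closeR n d1 \<rho> \<rho>' \<longrightarrow>
        opnorm n (msub (tm_eval (Mat n) \<rho> a) (tm_eval (Mat n) \<rho>' (itm a'))) \<le> h"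
      using Scal.IH[rule_format, where R=R and e=h] hpos by auto
    show "\<exists>t' d. d > 0 \<and> tm_vars (itm t') \<subseteq> tm_vars (Scal c a) \<and>
     (\<forall>n \<rho> \<rho>'. bndR n R \<rho> \<longrightarrow> bndR n R \<rho>' \<longrightarrow> closeR n d \<rho> \<rho>' \<longrightarrow>
        opnorm n (msub (tm_eval (Mat n) \<rho> (Scal c a)) (tm_eval (Mat n) \<rho>' (itm t'))) \<le> e)"
    proof (intro exI[of _ "RScal p q a'"] exI[of _ d1] conjI allI impI)
      fix n \<rho> \<rho>' assume H: "bndR n R \<rho>" "bndR n R \<rho>'" "closeR n d1 \<rho> \<rho>'"
      define x where "x = tm_eval (Mat n) \<rho> a"
      define x' where "x' = tm_eval (Mat n) \<rho>' (itm a')"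
      have r1: "closeR n d1 \<rho>' \<rho>'" using closeR_refl A(1) by auto
      have dx: "opnorm n (msub x x') \<le> h" unfolding x_def x'_def using A(3) H by blast
      have x'': "opnorm n (msub (tm_eval (Mat n) \<rho>' a) x') \<le> h"
        unfolding x'_def using A(3) H(2) r1 by blast
      have "opnorm n (tm_eval (Mat n) \<rho>' a) \<le> tb R a" using H(2) by (intro tm_bound) (auto simp: bndR_def)
      hence bx': "opnorm n x' \<le> tb R a + 1" using opnorm_tri[of n x' "tm_eval (Mat n) \<rho>' a"] x'' hpos
        unfolding h_def by linarith
      have "opnorm n (msub (mscl c x) (mscl c' x')) \<le> opnorm n (mscl c (msub x x')) + opnorm n (mscl (c - c') x')"
        unfolding msub_scl by (rule opnorm_add)
      also have "\<dots> \<le> cmod c * opnorm n (msub x x') + cmod (c - c') * opnorm n x'"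
        by (intro add_mono opnorm_scl)
      also have "\<dots> \<le> cmod c * h + (2 * h) * (tb R a + 1)"
        by (intro add_mono mult_mono mult_left_mono) (use dx cc bx' hpos opnorm_nonneg in auto)
      also have "\<dots> \<le> h * (cmod c + 2 * tb R a + 3)" using hpos by (simp add: algebra_simps)
      also have "\<dots> \<le> e" by (rule he)
      finally show "opnorm n (msub (tm_eval (Mat n) \<rho> (Scal c a)) (tm_eval (Mat n) \<rho>' (itm (RScal p q a')))) \<le> e"
        by (simp add: tm_eval_Mat x_def x'_def c'_def)
    qed (use A(1,2) in auto)
  qed
next
  case (Star a)
  show ?case
  proof (intro allI impI)
    fix R e :: real assume "e > 0"
    obtain a' d1 where A: "d1 > 0" "tm_vars (itm a') \<subseteq> tm_vars a"
      "\<forall>n \<rho> \<rho>'. bndR n R \<rho> \<longrightarrow> bndR n R \<rho>' \<longrightarrow> closeR n d1 \<rho> \<rho>' \<longrightarrow>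
        opnorm n (msub (tm_eval (Mat n) \<rho> a) (tm_eval (Mat n) \<rho>' (itm a'))) \<le> e"
      using Star.IH[rule_format, where R=R and e=e] \<open>e > 0\<close> by auto
    show "\<exists>t' d. d > 0 \<and> tm_vars (itm t') \<subseteq> tm_vars (Star a) \<and>
     (\<forall>n \<rho> \<rho>'. bndR n R \<rho> \<longrightarrow> bndR n R \<rho>' \<longrightarrow> closeR n d \<rho> \<rho>' \<longrightarrow>
        opnorm n (msub (tm_eval (Mat n) \<rho> (Star a)) (tm_eval (Mat n) \<rho>' (itm t'))) \<le> e)"
    proof (intro exI[of _ "RStar a'"] exI[of _ d1] conjI allI impI)
      fix n \<rho> \<rho>' assume H: "bndR n R \<rho>" "bndR n R \<rho>'" "closeR n d1 \<rho> \<rho>'"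
      show "opnorm n (msub (tm_eval (Mat n) \<rho> (Star a)) (tm_eval (Mat n) \<rho>' (itm (RStar a')))) \<le> e"
      proof -
        have "opnorm n (msub (tm_eval (Mat n) \<rho> a) (tm_eval (Mat n) \<rho>' (itm a'))) \<le> e"
          using A(3) H by blast
        thus ?thesis unfolding tm_eval_Mat itm.simps msub_star using opnorm_star order_trans by blast
      qed
    qed (use A(1,2) in auto)
  qed
qed

lemma sup_bound:
  fixes f :: "'a \<Rightarrow> real"
  assumes "A \<noteq> {}" "\<And>a. a \<in> A \<Longrightarrow> \<bar>f a\<bar> \<le> M"
  shows "\<bar>SUP a\<in>A. f a\<bar> \<le> M"
proof -
  have bdd: "bdd_above (f ` A)" using assms(2) by (intro bdd_aboveI2[of _ _ M]) (auto simp: abs_le_iff)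
  have "(SUP a\<in>A. f a) \<le> M" using assms by (intro cSUP_least) (auto simp: abs_le_iff)
  moreover obtain a0 where "a0 \<in> A" using assms(1) by auto
  hence "f a0 \<le> (SUP a\<in>A. f a)" using bdd by (intro cSUP_upper) auto
  moreover have "- M \<le> f a0" using assms(2)[OF \<open>a0 \<in> A\<close>] by (simp add: abs_le_iff)
  ultimately show ?thesis by (simp add: abs_le_iff)
qed

lemma inf_as_sup:
  fixes f :: "'a \<Rightarrow> real"
  shows "(INF a\<in>A. f a) = - (SUP a\<in>A. - f a)"
  by (simp add: Inf_real_def image_image)

lemma inf_bound:
  fixes f :: "'a \<Rightarrow> real"
  assumes "A \<noteq> {}" "\<And>a. a \<in> A \<Longrightarrow> \<bar>f a\<bar> \<le> M"
  shows "\<bar>INF a\<in>A. f a\<bar> \<le> M"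
  using sup_bound[of A "\<lambda>a. - f a" M] assms unfolding inf_as_sup by simp

lemma sup_close:
  fixes f :: "'a \<Rightarrow> real" and g :: "'b \<Rightarrow> real"
  assumes "A \<noteq> {}" "B \<noteq> {}" "\<And>a. a \<in> A \<Longrightarrow> \<bar>f a\<bar> \<le> M" "\<And>b. b \<in> B \<Longrightarrow> \<bar>g b\<bar> \<le> M"
    "\<And>a. a \<in> A \<Longrightarrow> \<exists>b\<in>B. f a \<le> g b + e" "\<And>b. b \<in> B \<Longrightarrow> \<exists>a\<in>A. g b \<le> f a + e"
  shows "\<bar>(SUP a\<in>A. f a) - (SUP b\<in>B. g b)\<bar> \<le> e"
proof -
  have bddf: "bdd_above (f ` A)" using assms(3) by (intro bdd_aboveI2[of _ _ M]) (auto simp: abs_le_iff)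
  have bddg: "bdd_above (g ` B)" using assms(4) by (intro bdd_aboveI2[of _ _ M]) (auto simp: abs_le_iff)
  have "(SUP a\<in>A. f a) \<le> (SUP b\<in>B. g b) + e"
  proof (rule cSUP_least[OF assms(1)])
    fix a assume "a \<in> A"
    then obtain b where "b \<in> B" "f a \<le> g b + e" using assms(5) by blast
    moreover have "g b \<le> (SUP b\<in>B. g b)" using \<open>b \<in> B\<close> bddg by (intro cSUP_upper)
    ultimately show "f a \<le> (SUP b\<in>B. g b) + e" by linarith
  qed
  moreover have "(SUP b\<in>B. g b) \<le> (SUP a\<in>A. f a) + e"
  proof (rule cSUP_least[OF assms(2)])
    fix b assume "b \<in> B"
    then obtain a where "a \<in> A" "g b \<le> f a + e" using assms(6) by blast
    moreover have "f a \<le> (SUP a\<in>A. f a)" using \<open>a \<in> A\<close> bddf by (intro cSUP_upper)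
    ultimately show "g b \<le> (SUP a\<in>A. f a) + e" by linarith
  qed
  ultimately show ?thesis by (simp add: abs_le_iff)
qed

lemma inf_close:
  fixes f :: "'a \<Rightarrow> real" and g :: "'b \<Rightarrow> real"
  assumes "A \<noteq> {}" "B \<noteq> {}" "\<And>a. a \<in> A \<Longrightarrow> \<bar>f a\<bar> \<le> M" "\<And>b. b \<in> B \<Longrightarrow> \<bar>g b\<bar> \<le> M"
    "\<And>a. a \<in> A \<Longrightarrow> \<exists>b\<in>B. g b \<le> f a + e" "\<And>b. b \<in> B \<Longrightarrow> \<exists>a\<in>A. f a \<le> g b + e"
  shows "\<bar>(INF a\<in>A. f a) - (INF b\<in>B. g b)\<bar> \<le> e"
proof -
  have "\<bar>(SUP a\<in>A. - f a) - (SUP b\<in>B. - g b)\<bar> \<le> e"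
  proof (rule sup_close[of A B _ M])
    show "\<exists>b\<in>B. - f a \<le> - g b + e" if "a \<in> A" for a using assms(5)[OF that] by force
    show "\<exists>a\<in>A. - g b \<le> - f a + e" if "b \<in> B" for b using assms(6)[OF that] by force
  qed (use assms in auto)
  thus ?thesis unfolding inf_as_sup by linarith
qed

definition inball :: "nat \<Rightarrow> real \<Rightarrow> (nat \<Rightarrow> mat) \<Rightarrow> bool" where
  "inball n R \<rho> \<longleftrightarrow> (\<forall>j. \<rho> j \<in> ball_r (Mat n) R)"

lemma ball_r_Mat: "x \<in> ball_r (Mat n) R \<longleftrightarrow> incar n x \<and> opnorm n x \<le> R"
  by (simp add: ball_r_def incar_def)

lemma inball_bndR: "inball n R \<rho> \<Longrightarrow> bndR n R \<rho>"
  by (simp add: inball_def bndR_def ball_r_Mat)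

lemma zero_ball: "0 \<le> r \<Longrightarrow> (\<lambda>a b. 0) \<in> ball_r (Mat n) r"
  by (simp add: ball_r_Mat incar_zero opnorm_zero)

lemma inball_upd: "inball n R \<rho> \<Longrightarrow> z \<in> ball_r (Mat n) r \<Longrightarrow> R \<le> R' \<Longrightarrow> r \<le> R' \<Longrightarrow> inball n R' (\<rho>(j := z))"
  unfolding inball_def ball_r_Mat by (metis fun_upd_apply order_trans)

lemma closeR_upd: "closeR n d \<rho> \<rho>' \<Longrightarrow> opnorm n (msub z w) \<le> d \<Longrightarrow> closeR n d (\<rho>(j := z)) (\<rho>'(j := w))"
  unfolding closeR_def by auto

lemma scale_ball:
  assumes "z \<in> ball_r (Mat n) a" "0 < a" "0 < b"
  shows "mscl (of_real (min 1 (b / a))) z \<in> ball_r (Mat n) b"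
    "opnorm n (msub z (mscl (of_real (min 1 (b / a))) z)) \<le> \<bar>a - b\<bar>"
    "opnorm n (msub (mscl (of_real (min 1 (b / a))) z) z) \<le> \<bar>a - b\<bar>"
proof -
  define s where "s = min 1 (b / a)"
  have s0: "0 \<le> s" "s \<le> 1" using assms unfolding s_def by auto
  have z: "incar n z" "opnorm n z \<le> a" using assms(1) by (auto simp: ball_r_Mat)
  have "opnorm n (mscl (of_real s) z) \<le> s * opnorm n z" using opnorm_scl[of n "of_real s" z] s0 by simp
  also have "\<dots> \<le> s * a" using z s0 by (intro mult_left_mono) auto
  also have "\<dots> \<le> b" unfolding s_def using assms
    by (smt (verit, del_insts) mult.commute min.absorb_iff2 min_def nonzero_mult_div_cancel_left pos_le_divide_eq)
  finally show "mscl (of_real s) z \<in> ball_r (Mat n) b" using z by (simp add: ball_r_Mat incar_scl)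
  have "msub z (mscl (of_real s) z) = mscl (of_real (1 - s)) z"
    unfolding msub_def mscl_def by (auto simp: algebra_simps)
  moreover have "cmod (complex_of_real (1 - s)) = 1 - s" using s0
    by (metis abs_of_nonneg diff_ge_0_iff_ge norm_of_real)
  ultimately have "opnorm n (msub z (mscl (of_real s) z)) \<le> (1 - s) * opnorm n z"
    using opnorm_scl[of n "of_real (1 - s)" z] by metis
  also have "\<dots> \<le> (1 - s) * a" using z s0 by (intro mult_left_mono) auto
  also have "\<dots> \<le> \<bar>a - b\<bar>" unfolding s_def using assms
    by (cases "b \<le> a") (auto simp: min_def algebra_simps)
  finally show "opnorm n (msub z (mscl (of_real s) z)) \<le> \<bar>a - b\<bar>" .
  thus "opnorm n (msub (mscl (of_real s) z) z) \<le> \<bar>a - b\<bar>" by (simp add: opnorm_sub_sym)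
qed

lemma fm_eval_simps_Mat:
  "fm_eval (Mat n) \<rho> (ReTr t) = Re (mtr n (tm_eval (Mat n) \<rho> t))"
  "fm_eval (Mat n) \<rho> (ImTr t) = Im (mtr n (tm_eval (Mat n) \<rho> t))"
  by simp_all

lemma fm_bound: "wf \<phi> \<Longrightarrow> \<forall>R. \<exists>B. \<forall>n \<rho>. inball n R \<rho> \<longrightarrow> \<bar>fm_eval (Mat n) \<rho> \<phi>\<bar> \<le> B"
proof (induction \<phi>)
  case (ReTr t)
  show ?case
  proof
    fix R show "\<exists>B. \<forall>n \<rho>. inball n R \<rho> \<longrightarrow> \<bar>fm_eval (Mat n) \<rho> (ReTr t)\<bar> \<le> B"
    proof (intro exI allI impI)
      fix n \<rho> assume "inball n R \<rho>"
      hence "opnorm n (tm_eval (Mat n) \<rho> t) \<le> tb R t" by (intro tm_bound) (auto dest: inball_bndR simp: bndR_def)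
      thus "\<bar>fm_eval (Mat n) \<rho> (ReTr t)\<bar> \<le> tb R t"
        using abs_Re_le_cmod mtr_le_opnorm by (simp del: Mat_simps) (smt (verit) Mat_simps(9))
    qed
  qed
next
  case (ImTr t)
  show ?case
  proof
    fix R show "\<exists>B. \<forall>n \<rho>. inball n R \<rho> \<longrightarrow> \<bar>fm_eval (Mat n) \<rho> (ImTr t)\<bar> \<le> B"
    proof (intro exI allI impI)
      fix n \<rho> assume "inball n R \<rho>"
      hence "opnorm n (tm_eval (Mat n) \<rho> t) \<le> tb R t" by (intro tm_bound) (auto dest: inball_bndR simp: bndR_def)
      thus "\<bar>fm_eval (Mat n) \<rho> (ImTr t)\<bar> \<le> tb R t"
        using abs_Im_le_cmod mtr_le_opnorm by (simp del: Mat_simps) (smt (verit) Mat_simps(9))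
    qed
  qed
next
  case (Conn f ps)
  have cont: "continuous_on UNIV f" and wfs: "\<And>p. p \<in> set ps \<Longrightarrow> wf p"
    using Conn.prems by (auto simp: list_all_iff)
  show ?case
  proof
    fix R
    have "\<forall>p\<in>set ps. \<exists>B. \<forall>n \<rho>. inball n R \<rho> \<longrightarrow> \<bar>fm_eval (Mat n) \<rho> p\<bar> \<le> B"
      using Conn.IH wfs by blast
    then obtain Bf where Bf: "\<And>p n \<rho>. p \<in> set ps \<Longrightarrow> inball n R \<rho> \<Longrightarrow> \<bar>fm_eval (Mat n) \<rho> p\<bar> \<le> Bf p"
      by metis
    define Bs where "Bs = (\<Sum>p\<in>set ps. \<bar>Bf p\<bar>)"
    have "compact (f ` cube Bs)"
      by (rule compact_continuous_image[OF continuous_on_subset[OF cont] compact_cube]) auto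
    then obtain M where M: "\<And>y. y \<in> f ` cube Bs \<Longrightarrow> \<bar>y\<bar> \<le> M"
      using compact_imp_bounded bounded_iff by (metis real_norm_def)
    show "\<exists>B. \<forall>n \<rho>. inball n R \<rho> \<longrightarrow> \<bar>fm_eval (Mat n) \<rho> (Conn f ps)\<bar> \<le> B"
    proof (intro exI allI impI)
      fix n \<rho> assume H: "inball n R \<rho>"
      define v where "v = (\<lambda>i. if i < length ps then map (fm_eval (Mat n) \<rho>) ps ! i else 0)"
      have "v \<in> cube Bs" unfolding cube_def
      proof (safe)
        fix i show "\<bar>v i\<bar> \<le> Bs"
        proof (cases "i < length ps")
          case True
          hence "ps ! i \<in> set ps" by simp
          hence "\<bar>fm_eval (Mat n) \<rho> (ps ! i)\<bar> \<le> \<bar>Bf (ps ! i)\<bar>" using Bf[OF _ H] by force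
          also have "\<dots> \<le> Bs" unfolding Bs_def using \<open>ps ! i \<in> set ps\<close>
            by (intro member_le_sum) auto
          finally show ?thesis unfolding v_def using True by simp
        next
          case False thus ?thesis unfolding v_def Bs_def by (simp add: sum_nonneg)
        qed
      qed
      hence "\<bar>f v\<bar> \<le> M" using M by blast
      thus "\<bar>fm_eval (Mat n) \<rho> (Conn f ps)\<bar> \<le> M" unfolding v_def by simp
    qed
  qed
next
  case (SupF r j p)
  have r: "r > 0" and wfp: "wf p" using SupF.prems by auto
  show ?case
  proof
    fix R
    obtain B where B: "\<And>n \<rho>. inball n (max R r) \<rho> \<Longrightarrow> \<bar>fm_eval (Mat n) \<rho> p\<bar> \<le> B"
      using SupF.IH[OF wfp] by blast
    show "\<exists>B. \<forall>n \<rho>. inball n R \<rho> \<longrightarrow> \<bar>fm_eval (Mat n) \<rho> (SupF r j p)\<bar> \<le> B"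
    proof (intro exI allI impI)
      fix n \<rho> assume H: "inball n R \<rho>"
      show "\<bar>fm_eval (Mat n) \<rho> (SupF r j p)\<bar> \<le> B" unfolding fm_eval.simps
        by (rule sup_bound) (use zero_ball[of r n] r B inball_upd[OF H] in auto)
    qed
  qed
next
  case (InfF r j p)
  have r: "r > 0" and wfp: "wf p" using InfF.prems by auto
  show ?case
  proof
    fix R
    obtain B where B: "\<And>n \<rho>. inball n (max R r) \<rho> \<Longrightarrow> \<bar>fm_eval (Mat n) \<rho> p\<bar> \<le> B"
      using InfF.IH[OF wfp] by blast
    show "\<exists>B. \<forall>n \<rho>. inball n R \<rho> \<longrightarrow> \<bar>fm_eval (Mat n) \<rho> (InfF r j p)\<bar> \<le> B"
    proof (intro exI allI impI)
      fix n \<rho> assume H: "inball n R \<rho>"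
      show "\<bar>fm_eval (Mat n) \<rho> (InfF r j p)\<bar> \<le> B" unfolding fm_eval.simps
        by (rule inf_bound) (use zero_ball[of r n] r B inball_upd[OF H] in auto)
    qed
  qed
qed

section \<open>Formula approximation\<close>

lemma peval_restr_cont: "continuous_on UNIV (\<lambda>x. peval e (\<lambda>i. if i < k then x i else 0))"
proof (induction e)
  case (PV i) thus ?case by (cases "i < k") auto
next
  case (PA a b) thus ?case by (simp add: continuous_on_add)
next
  case (PM a b) thus ?case by (simp add: continuous_on_mult)
qed simp

definition apx :: "fm \<Rightarrow> real \<Rightarrow> real \<Rightarrow> rfm \<Rightarrow> real \<Rightarrow> bool" where
  "apx \<phi> R e \<psi> d \<longleftrightarrow> d > 0 \<and> wf (ifm \<psi>) \<and> fv (ifm \<psi>) \<subseteq> fv \<phi> \<and>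
     (\<forall>n \<rho> \<rho>'. inball n R \<rho> \<longrightarrow> inball n R \<rho>' \<longrightarrow> closeR n d \<rho> \<rho>' \<longrightarrow>
        \<bar>fm_eval (Mat n) \<rho> \<phi> - fm_eval (Mat n) \<rho>' (ifm \<psi>)\<bar> \<le> e)"

lemma apxD: "apx \<phi> R e \<psi> d \<Longrightarrow> inball n R \<rho> \<Longrightarrow> inball n R \<rho>' \<Longrightarrow> closeR n d \<rho> \<rho>' \<Longrightarrow>
        \<bar>fm_eval (Mat n) \<rho> \<phi> - fm_eval (Mat n) \<rho>' (ifm \<psi>)\<bar> \<le> e"
  unfolding apx_def by blast

lemma quant_step:
  assumes A: "apx p R' e \<psi>p dp" and le: "R \<le> R'" "r \<le> R'" "of_rat q \<le> R'"
    and pos: "r > 0" "of_rat q > (0::real)" and rq: "\<bar>r - of_rat q\<bar> \<le> dp"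
    and H: "inball n R \<rho>" "inball n R \<rho>'" "closeR n dp \<rho> \<rho>'"
  shows "\<forall>z\<in>ball_r (Mat n) r. \<exists>w\<in>ball_r (Mat n) (of_rat q).
           \<bar>fm_eval (Mat n) (\<rho>(j := z)) p - fm_eval (Mat n) (\<rho>'(j := w)) (ifm \<psi>p)\<bar> \<le> e"
    and "\<forall>w\<in>ball_r (Mat n) (of_rat q). \<exists>z\<in>ball_r (Mat n) r.
           \<bar>fm_eval (Mat n) (\<rho>(j := z)) p - fm_eval (Mat n) (\<rho>'(j := w)) (ifm \<psi>p)\<bar> \<le> e"
proof -
  show "\<forall>z\<in>ball_r (Mat n) r. \<exists>w\<in>ball_r (Mat n) (of_rat q).
           \<bar>fm_eval (Mat n) (\<rho>(j := z)) p - fm_eval (Mat n) (\<rho>'(j := w)) (ifm \<psi>p)\<bar> \<le> e"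
  proof
    fix z assume z: "z \<in> ball_r (Mat n) r"
    define w where "w = mscl (of_real (min 1 (of_rat q / r))) z"
    have w: "w \<in> ball_r (Mat n) (of_rat q)" "opnorm n (msub z w) \<le> \<bar>r - of_rat q\<bar>"
      using scale_ball[OF z pos] unfolding w_def by auto
    have "\<bar>fm_eval (Mat n) (\<rho>(j := z)) p - fm_eval (Mat n) (\<rho>'(j := w)) (ifm \<psi>p)\<bar> \<le> e"
      by (rule apxD[OF A]) (use inball_upd[OF H(1) z] inball_upd[OF H(2) w(1)] le closeR_upd[OF H(3)] w(2) rq in auto)
    thus "\<exists>w\<in>ball_r (Mat n) (of_rat q). \<bar>fm_eval (Mat n) (\<rho>(j := z)) p - fm_eval (Mat n) (\<rho>'(j := w)) (ifm \<psi>p)\<bar> \<le> e"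
      using w(1) by blast
  qed
  show "\<forall>w\<in>ball_r (Mat n) (of_rat q). \<exists>z\<in>ball_r (Mat n) r.
           \<bar>fm_eval (Mat n) (\<rho>(j := z)) p - fm_eval (Mat n) (\<rho>'(j := w)) (ifm \<psi>p)\<bar> \<le> e"
  proof
    fix w assume w: "w \<in> ball_r (Mat n) (of_rat q)"
    define z where "z = mscl (of_real (min 1 (r / of_rat q))) w"
    have z: "z \<in> ball_r (Mat n) r" "opnorm n (msub z w) \<le> \<bar>of_rat q - r\<bar>"
      using scale_ball[OF w pos(2) pos(1)] unfolding z_def by auto
    have "\<bar>fm_eval (Mat n) (\<rho>(j := z)) p - fm_eval (Mat n) (\<rho>'(j := w)) (ifm \<psi>p)\<bar> \<le> e"
      by (rule apxD[OF A]) (use inball_upd[OF H(1) z(1)] inball_upd[OF H(2) w] le closeR_upd[OF H(3)] z(2) rq in auto)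
    thus "\<exists>z\<in>ball_r (Mat n) r. \<bar>fm_eval (Mat n) (\<rho>(j := z)) p - fm_eval (Mat n) (\<rho>'(j := w)) (ifm \<psi>p)\<bar> \<le> e"
      using z(1) by blast
  qed
qed

lemma fm_approx: "wf \<phi> \<Longrightarrow> \<forall>R e. e > 0 \<longrightarrow> (\<exists>\<psi> d. apx \<phi> R e \<psi> d)"
proof (induction \<phi>)
  case (ReTr t)
  show ?case
  proof (intro allI impI)
    fix R e :: real assume "e > 0"
    obtain t' d where T: "d > 0" "tm_vars (itm t') \<subseteq> tm_vars t"
      "\<forall>n \<rho> \<rho>'. bndR n R \<rho> \<longrightarrow> bndR n R \<rho>' \<longrightarrow> closeR n d \<rho> \<rho>' \<longrightarrow>
        opnorm n (msub (tm_eval (Mat n) \<rho> t) (tm_eval (Mat n) \<rho>' (itm t'))) \<le> e"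
      using tm_approx[of t, rule_format, where R=R and e=e] \<open>e > 0\<close> by auto
    have "apx (ReTr t) R e (RReTr t') d" unfolding apx_def
    proof (intro conjI allI impI)
      fix n \<rho> \<rho>' assume H: "inball n R \<rho>" "inball n R \<rho>'" "closeR n d \<rho> \<rho>'"
      have "opnorm n (msub (tm_eval (Mat n) \<rho> t) (tm_eval (Mat n) \<rho>' (itm t'))) \<le> e"
        using T(3) inball_bndR[OF H(1)] inball_bndR[OF H(2)] H(3) by blast
      hence "cmod (mtr n (msub (tm_eval (Mat n) \<rho> t) (tm_eval (Mat n) \<rho>' (itm t')))) \<le> e"
        using mtr_le_opnorm order_trans by blast
      thus "\<bar>fm_eval (Mat n) \<rho> (ReTr t) - fm_eval (Mat n) \<rho>' (ifm (RReTr t'))\<bar> \<le> e"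
        unfolding fm_eval_simps_Mat ifm.simps mtr_sub using abs_Re_le_cmod order_trans by fastforce
    qed (use T(1,2) in auto)
    thus "\<exists>\<psi> d. apx (ReTr t) R e \<psi> d" by blast
  qed
next
  case (ImTr t)
  show ?case
  proof (intro allI impI)
    fix R e :: real assume "e > 0"
    obtain t' d where T: "d > 0" "tm_vars (itm t') \<subseteq> tm_vars t"
      "\<forall>n \<rho> \<rho>'. bndR n R \<rho> \<longrightarrow> bndR n R \<rho>' \<longrightarrow> closeR n d \<rho> \<rho>' \<longrightarrow>
        opnorm n (msub (tm_eval (Mat n) \<rho> t) (tm_eval (Mat n) \<rho>' (itm t'))) \<le> e"
      using tm_approx[of t, rule_format, where R=R and e=e] \<open>e > 0\<close> by auto
    have "apx (ImTr t) R e (RImTr t') d" unfolding apx_def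
    proof (intro conjI allI impI)
      fix n \<rho> \<rho>' assume H: "inball n R \<rho>" "inball n R \<rho>'" "closeR n d \<rho> \<rho>'"
      have "opnorm n (msub (tm_eval (Mat n) \<rho> t) (tm_eval (Mat n) \<rho>' (itm t'))) \<le> e"
        using T(3) inball_bndR[OF H(1)] inball_bndR[OF H(2)] H(3) by blast
      hence "cmod (mtr n (msub (tm_eval (Mat n) \<rho> t) (tm_eval (Mat n) \<rho>' (itm t')))) \<le> e"
        using mtr_le_opnorm order_trans by blast
      thus "\<bar>fm_eval (Mat n) \<rho> (ImTr t) - fm_eval (Mat n) \<rho>' (ifm (RImTr t'))\<bar> \<le> e"
        unfolding fm_eval_simps_Mat ifm.simps mtr_sub using abs_Im_le_cmod order_trans by fastforce
    qed (use T(1,2) in auto)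
    thus "\<exists>\<psi> d. apx (ImTr t) R e \<psi> d" by blast
  qed
next
  case (Conn f ps)
  have cont: "continuous_on UNIV f" and wfs: "\<And>p. p \<in> set ps \<Longrightarrow> wf p"
    using Conn.prems by (auto simp: list_all_iff)
  show ?case
  proof (intro allI impI)
    fix R e :: real assume e: "e > 0"
    define k where "k = length ps"
    have "\<forall>p\<in>set ps. \<exists>B. \<forall>n \<rho>. inball n R \<rho> \<longrightarrow> \<bar>fm_eval (Mat n) \<rho> p\<bar> \<le> B"
      using fm_bound wfs by blast
    then obtain Bf where Bf: "\<And>p n \<rho>. p \<in> set ps \<Longrightarrow> inball n R \<rho> \<Longrightarrow> \<bar>fm_eval (Mat n) \<rho> p\<bar> \<le> Bf p"
      by metis
    define Bs where "Bs = (\<Sum>p\<in>set ps. \<bar>Bf p\<bar>) + 1"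
    have Bs1: "\<bar>Bf p\<bar> \<le> Bs - 1" if "p \<in> set ps" for p
    proof -
      have "\<bar>Bf p\<bar> \<le> (\<Sum>p\<in>set ps. \<bar>Bf p\<bar>)" using that by (intro member_le_sum) auto
      thus ?thesis unfolding Bs_def by simp
    qed
    obtain g where g: "qvars g \<subseteq> {..<k}" "\<forall>x\<in>cubek k Bs. \<bar>f x - rpeval g x\<bar> < e/4"
      using SW_cubek[OF continuous_on_subset[OF cont], of k Bs "e/4"] e by auto
    obtain p0 where p0: "pvars p0 \<subseteq> qvars g" "\<forall>x\<in>cube Bs. \<bar>rpeval g x - peval p0 x\<bar> \<le> e/4"
      using rpe_rat_approx[of g] e by (meson zero_less_divide_iff zero_less_numeral)
    obtain L where L: "L \<ge> 0" "\<forall>x y h. x \<in> cube Bs \<longrightarrow> y \<in> cube Bs \<longrightarrow> 0 \<le> h \<longrightarrow> h \<le> 1 \<longrightarrow>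
      (\<forall>i. \<bar>x i - y i\<bar> \<le> h) \<longrightarrow> \<bar>peval p0 x - peval p0 y\<bar> \<le> L * h"
      using peval_lip[of Bs p0] by blast
    define h where "h = min 1 (e / (4 * (L + 1)))"
    have hpos: "h > 0" unfolding h_def using e L(1) by auto
    have hL: "L * h \<le> e / 4"
    proof -
      have "L * h \<le> L * (e / (4 * (L + 1)))" unfolding h_def using L(1) by (intro mult_left_mono) auto
      also have "\<dots> = (e / 4) * (L / (L + 1))" using L(1) by (simp add: field_simps)
      also have "\<dots> \<le> (e / 4) * 1" using L(1) e by (intro mult_left_mono) auto
      finally show ?thesis by simp
    qed
    have "\<forall>p\<in>set ps. \<exists>z. apx p R h (fst z) (snd z)"
    proof
      fix p assume "p \<in> set ps"
      then obtain \<psi> d where "apx p R h \<psi> d" using Conn.IH[OF _ wfs] hpos by blast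
      thus "\<exists>z. apx p R h (fst z) (snd z)" by (intro exI[of _ "(\<psi>, d)"]) simp
    qed
    then obtain F where F: "\<And>p. p \<in> set ps \<Longrightarrow> apx p R h (fst (F p)) (snd (F p))" by metis
    define qs where "qs = map (\<lambda>p. fst (F p)) ps"
    define d where "d = Min (insert 1 ((\<lambda>p. snd (F p)) ` set ps))"
    have dpos: "d > 0" unfolding d_def using F by (auto simp: apx_def)
    have dle: "d \<le> snd (F p)" if "p \<in> set ps" for p unfolding d_def using that by (intro Min_le) auto
    have "apx (Conn f ps) R e (RConn p0 qs) d" unfolding apx_def
    proof (intro conjI allI impI)
      show "d > 0" by (rule dpos)
      show "wf (ifm (RConn p0 qs))"
      proof -
        have dep: "\<forall>x y. (\<forall>i<length qs. x i = y i) \<longrightarrow> peval p0 (\<lambda>i. if i < length qs then x i else 0) = peval p0 (\<lambda>i. if i < length qs then y i else 0)"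
        proof (intro allI impI)
          fix x y :: "nat \<Rightarrow> real" assume "\<forall>i<length qs. x i = y i"
          hence "(\<lambda>i. if i < length qs then x i else 0) = (\<lambda>i. if i < length qs then y i else 0)" by auto
          thus "peval p0 (\<lambda>i. if i < length qs then x i else 0) = peval p0 (\<lambda>i. if i < length qs then y i else 0)" by simp
        qed
        have l: "list_all id (map wf (map ifm qs))"
          using F by (auto simp: qs_def apx_def list_all_iff)
        show ?thesis unfolding ifm.simps wf.simps length_map
          by (intro conjI peval_restr_cont dep l)
      qed
      show "fv (ifm (RConn p0 qs)) \<subseteq> fv (Conn f ps)"
        using F by (fastforce simp: qs_def apx_def)
    next
      fix n \<rho> \<rho>' assume H: "inball n R \<rho>" "inball n R \<rho>'" "closeR n d \<rho> \<rho>'"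
      define a where "a = (\<lambda>i. if i < k then map (fm_eval (Mat n) \<rho>) ps ! i else 0)"
      define b where "b = (\<lambda>i. if i < k then fm_eval (Mat n) \<rho>' (ifm (qs ! i)) else 0)"
      have ev1: "fm_eval (Mat n) \<rho> (Conn f ps) = f a" by (simp add: a_def k_def)
      have ev2: "fm_eval (Mat n) \<rho>' (ifm (RConn p0 qs)) = peval p0 b"
      proof -
        have "(\<lambda>i. if i < length qs then (if i < length (map ifm qs) then map (fm_eval (Mat n) \<rho>') (map ifm qs) ! i else 0) else 0) = b"
          by (auto simp: b_def qs_def k_def fun_eq_iff)
        thus ?thesis by simp
      qed
      have cl: "\<bar>a i - b i\<bar> \<le> h" if "i < k" for i
      proof -
        have p: "ps ! i \<in> set ps" using that by (simp add: k_def)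
        have "closeR n (snd (F (ps ! i))) \<rho> \<rho>'" using closeR_mono[OF H(3) dle[OF p]] .
        hence "\<bar>fm_eval (Mat n) \<rho> (ps ! i) - fm_eval (Mat n) \<rho>' (ifm (fst (F (ps ! i))))\<bar> \<le> h"
          using apxD[OF F[OF p] H(1,2)] by blast
        thus ?thesis using that by (simp add: a_def b_def qs_def k_def)
      qed
      have abnd: "\<bar>a i\<bar> \<le> Bs - 1" if "i < k" for i
      proof -
        have p: "ps ! i \<in> set ps" using that by (simp add: k_def)
        thus ?thesis using Bf[OF p H(1)] Bs1[OF p] that by (simp add: a_def k_def)
      qed
      have Bs_pos: "Bs \<ge> 1" unfolding Bs_def by (simp add: sum_nonneg)
      have cl_all: "\<bar>a i - b i\<bar> \<le> h" for i using cl hpos by (cases "i < k") (auto simp: a_def b_def)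
      have aK: "a \<in> cubek k Bs" unfolding cubek_def using abnd Bs_pos
        by (auto simp: a_def) (smt (verit))
      have aC: "a \<in> cube Bs" using aK unfolding cubek_def cube_def by auto
      have bC: "b \<in> cube Bs" unfolding cube_def
      proof safe
        fix i show "\<bar>b i\<bar> \<le> Bs"
        proof (cases "i < k")
          case True thus ?thesis using abnd[OF True] cl[OF True] hpos unfolding h_def by linarith
        next
          case False thus ?thesis using Bs_pos by (simp add: b_def)
        qed
      qed
      have "\<bar>f a - rpeval g a\<bar> \<le> e/4" using g(2) aK by fastforce
      moreover have "\<bar>rpeval g a - peval p0 a\<bar> \<le> e/4" using p0(2) aC by blast
      moreover have "\<bar>peval p0 a - peval p0 b\<bar> \<le> L * h"
        using L(2) aC bC hpos cl_all unfolding h_def by auto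
      ultimately have "\<bar>f a - peval p0 b\<bar> \<le> e" using hL e by linarith
      thus "\<bar>fm_eval (Mat n) \<rho> (Conn f ps) - fm_eval (Mat n) \<rho>' (ifm (RConn p0 qs))\<bar> \<le> e"
        unfolding ev1 ev2 .
    qed
    thus "\<exists>\<psi> d. apx (Conn f ps) R e \<psi> d" by blast
  qed
next
  case (SupF r j p)
  have r: "r > 0" and wfp: "wf p" using SupF.prems by auto
  show ?case
  proof (intro allI impI)
    fix R e :: real assume e: "e > 0"
    define R' where "R' = max R r + 1"
    obtain \<psi>p dp where A: "apx p R' e \<psi>p dp" using SupF.IH[OF wfp] e by blast
    have dp: "dp > 0" "wf (ifm \<psi>p)" "fv (ifm \<psi>p) \<subseteq> fv p" using A by (auto simp: apx_def)
    define th where "th = min (min dp 1) (r / 2)"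
    have thpos: "th > 0" unfolding th_def using dp r by auto
    obtain q where q: "\<bar>r - of_rat q\<bar> \<le> th" using rat_approx[OF thpos] by blast
    have th2: "th \<le> r/2" "th \<le> dp" "th \<le> 1" unfolding th_def by auto
    have qpos: "(of_rat q :: real) > 0" using q th2 r unfolding abs_le_iff by linarith
    have qle: "of_rat q \<le> R'" using q th2 r unfolding abs_le_iff R'_def by linarith
    have rq: "\<bar>r - of_rat q\<bar> \<le> dp" using q th2 by linarith
    obtain Bp where Bp: "\<And>n \<rho>. inball n R' \<rho> \<Longrightarrow> \<bar>fm_eval (Mat n) \<rho> p\<bar> \<le> Bp"
      using fm_bound[OF wfp] by blast
    obtain Bq where Bq: "\<And>n \<rho>. inball n R' \<rho> \<Longrightarrow> \<bar>fm_eval (Mat n) \<rho> (ifm \<psi>p)\<bar> \<le> Bq"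
      using fm_bound[OF dp(2)] by blast
    have "apx (SupF r j p) R e (RSup q j \<psi>p) dp" unfolding apx_def
    proof (intro conjI allI impI)
      show "wf (ifm (RSup q j \<psi>p))" using qpos dp by simp
      show "fv (ifm (RSup q j \<psi>p)) \<subseteq> fv (SupF r j p)" using dp by auto
    next
      fix n \<rho> \<rho>' assume H: "inball n R \<rho>" "inball n R \<rho>'" "closeR n dp \<rho> \<rho>'"
      note QS = quant_step[OF A _ _ qle r qpos rq H, of j]
      show "\<bar>fm_eval (Mat n) \<rho> (SupF r j p) - fm_eval (Mat n) \<rho>' (ifm (RSup q j \<psi>p))\<bar> \<le> e"
        unfolding fm_eval.simps ifm.simps
      proof (rule sup_close[where M="max Bp Bq"])
        show "ball_r (Mat n) r \<noteq> {}" using zero_ball[of r n] r by auto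
        show "ball_r (Mat n) (of_rat q) \<noteq> {}" using zero_ball[of "of_rat q" n] qpos by auto
        show "\<bar>fm_eval (Mat n) (\<rho>(j := z)) p\<bar> \<le> max Bp Bq" if "z \<in> ball_r (Mat n) r" for z
        proof -
          have "inball n R' (\<rho>(j := z))" using inball_upd[OF H(1) that, of R' j] r unfolding R'_def by auto
          thus ?thesis using Bp by (meson max.coboundedI1 order_trans)
        qed
        show "\<bar>fm_eval (Mat n) (\<rho>'(j := w)) (ifm \<psi>p)\<bar> \<le> max Bp Bq" if "w \<in> ball_r (Mat n) (of_rat q)" for w
        proof -
          have "inball n R' (\<rho>'(j := w))" using inball_upd[OF H(2) that, of R' j] qle unfolding R'_def by auto
          thus ?thesis using Bq by (meson max.coboundedI2 order_trans)
        qed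
        show "\<exists>w\<in>ball_r (Mat n) (of_rat q). fm_eval (Mat n) (\<rho>(j := z)) p \<le> fm_eval (Mat n) (\<rho>'(j := w)) (ifm \<psi>p) + e"
          if "z \<in> ball_r (Mat n) r" for z
          using QS(1) that unfolding R'_def by (smt (verit) max.cobounded1 max.cobounded2)
        show "\<exists>z\<in>ball_r (Mat n) r. fm_eval (Mat n) (\<rho>'(j := w)) (ifm \<psi>p) \<le> fm_eval (Mat n) (\<rho>(j := z)) p + e"
          if "w \<in> ball_r (Mat n) (of_rat q)" for w
          using QS(2) that unfolding R'_def by (smt (verit) max.cobounded1 max.cobounded2)
      qed
    qed (use dp in auto)
    thus "\<exists>\<psi> d. apx (SupF r j p) R e \<psi> d" by blast
  qed
next
  case (InfF r j p)
  have r: "r > 0" and wfp: "wf p" using InfF.prems by auto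
  show ?case
  proof (intro allI impI)
    fix R e :: real assume e: "e > 0"
    define R' where "R' = max R r + 1"
    obtain \<psi>p dp where A: "apx p R' e \<psi>p dp" using InfF.IH[OF wfp] e by blast
    have dp: "dp > 0" "wf (ifm \<psi>p)" "fv (ifm \<psi>p) \<subseteq> fv p" using A by (auto simp: apx_def)
    define th where "th = min (min dp 1) (r / 2)"
    have thpos: "th > 0" unfolding th_def using dp r by auto
    obtain q where q: "\<bar>r - of_rat q\<bar> \<le> th" using rat_approx[OF thpos] by blast
    have th2: "th \<le> r/2" "th \<le> dp" "th \<le> 1" unfolding th_def by auto
    have qpos: "(of_rat q :: real) > 0" using q th2 r unfolding abs_le_iff by linarith
    have qle: "of_rat q \<le> R'" using q th2 r unfolding abs_le_iff R'_def by linarith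
    have rq: "\<bar>r - of_rat q\<bar> \<le> dp" using q th2 by linarith
    obtain Bp where Bp: "\<And>n \<rho>. inball n R' \<rho> \<Longrightarrow> \<bar>fm_eval (Mat n) \<rho> p\<bar> \<le> Bp"
      using fm_bound[OF wfp] by blast
    obtain Bq where Bq: "\<And>n \<rho>. inball n R' \<rho> \<Longrightarrow> \<bar>fm_eval (Mat n) \<rho> (ifm \<psi>p)\<bar> \<le> Bq"
      using fm_bound[OF dp(2)] by blast
    have "apx (InfF r j p) R e (RInf q j \<psi>p) dp" unfolding apx_def
    proof (intro conjI allI impI)
      show "wf (ifm (RInf q j \<psi>p))" using qpos dp by simp
      show "fv (ifm (RInf q j \<psi>p)) \<subseteq> fv (InfF r j p)" using dp by auto
    next
      fix n \<rho> \<rho>' assume H: "inball n R \<rho>" "inball n R \<rho>'" "closeR n dp \<rho> \<rho>'"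
      note QS = quant_step[OF A _ _ qle r qpos rq H, of j]
      show "\<bar>fm_eval (Mat n) \<rho> (InfF r j p) - fm_eval (Mat n) \<rho>' (ifm (RInf q j \<psi>p))\<bar> \<le> e"
        unfolding fm_eval.simps ifm.simps
      proof (rule inf_close[where M="max Bp Bq"])
        show "ball_r (Mat n) r \<noteq> {}" using zero_ball[of r n] r by auto
        show "ball_r (Mat n) (of_rat q) \<noteq> {}" using zero_ball[of "of_rat q" n] qpos by auto
        show "\<bar>fm_eval (Mat n) (\<rho>(j := z)) p\<bar> \<le> max Bp Bq" if "z \<in> ball_r (Mat n) r" for z
        proof -
          have "inball n R' (\<rho>(j := z))" using inball_upd[OF H(1) that, of R' j] r unfolding R'_def by auto
          thus ?thesis using Bp by (meson max.coboundedI1 order_trans)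
        qed
        show "\<bar>fm_eval (Mat n) (\<rho>'(j := w)) (ifm \<psi>p)\<bar> \<le> max Bp Bq" if "w \<in> ball_r (Mat n) (of_rat q)" for w
        proof -
          have "inball n R' (\<rho>'(j := w))" using inball_upd[OF H(2) that, of R' j] qle unfolding R'_def by auto
          thus ?thesis using Bq by (meson max.coboundedI2 order_trans)
        qed
        show "\<exists>w\<in>ball_r (Mat n) (of_rat q). fm_eval (Mat n) (\<rho>'(j := w)) (ifm \<psi>p) \<le> fm_eval (Mat n) (\<rho>(j := z)) p + e"
          if "z \<in> ball_r (Mat n) r" for z
          using QS(1) that unfolding R'_def by (smt (verit) max.cobounded1 max.cobounded2)
        show "\<exists>z\<in>ball_r (Mat n) r. fm_eval (Mat n) (\<rho>(j := z)) p \<le> fm_eval (Mat n) (\<rho>'(j := w)) (ifm \<psi>p) + e"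
          if "w \<in> ball_r (Mat n) (of_rat q)" for w
          using QS(2) that unfolding R'_def by (smt (verit) max.cobounded1 max.cobounded2)
      qed
    qed (use dp in auto)
    thus "\<exists>\<psi> d. apx (InfF r j p) R e \<psi> d" by blast
  qed
qed

lemma fm_ucont:
  assumes "wf \<phi>" "e > 0"
  shows "\<exists>d>0. \<forall>n \<rho> \<rho>'. inball n R \<rho> \<longrightarrow> inball n R \<rho>' \<longrightarrow> closeR n d \<rho> \<rho>' \<longrightarrow>
           \<bar>fm_eval (Mat n) \<rho> \<phi> - fm_eval (Mat n) \<rho>' \<phi>\<bar> \<le> e"
proof -
  obtain \<psi> d where A: "apx \<phi> R (e/2) \<psi> d" using fm_approx[OF assms(1)] assms(2) by (meson half_gt_zero)
  have "d > 0" using A by (simp add: apx_def)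
  moreover have "\<bar>fm_eval (Mat n) \<rho> \<phi> - fm_eval (Mat n) \<rho>' \<phi>\<bar> \<le> e"
    if H: "inball n R \<rho>" "inball n R \<rho>'" "closeR n d \<rho> \<rho>'" for n \<rho> \<rho>'
  proof -
    have "\<bar>fm_eval (Mat n) \<rho> \<phi> - fm_eval (Mat n) \<rho>' (ifm \<psi>)\<bar> \<le> e/2" using apxD[OF A H] .
    moreover have "\<bar>fm_eval (Mat n) \<rho>' \<phi> - fm_eval (Mat n) \<rho>' (ifm \<psi>)\<bar> \<le> e/2"
      using apxD[OF A H(2) H(2) closeR_refl] \<open>d > 0\<close> by simp
    ultimately show ?thesis by linarith
  qed
  ultimately show ?thesis by blast
qed

section \<open>Ultrafilter limits\<close>

lemma tendsto_fun_coord: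
  fixes v :: "'x \<Rightarrow> nat \<Rightarrow> real"
  assumes "\<And>i. ((\<lambda>n. v n i) \<longlongrightarrow> a i) F"
  shows "(v \<longlongrightarrow> a) F"
proof -
  have "limitin (product_topology (\<lambda>i. euclidean) UNIV) v a F"
    using assms by (simp add: limitin_componentwise)
  thus ?thesis by (metis euclidean_product_topology limitin_canonical_iff)
qed

context
  fixes U :: "nat filter"
  assumes fu: "free_ultrafilter U"
begin

lemma fu_nbot: "U \<noteq> bot" using fu by (simp add: free_ultrafilter_def)

lemma fu_ultra: "eventually P U \<or> eventually (\<lambda>x. \<not> P x) U"
  using fu by (simp add: free_ultrafilter_def)

lemma fu_ge: "eventually (\<lambda>n. N \<le> n) U"
proof -
  have "\<forall>k\<in>{..<N}. eventually (\<lambda>n. n \<noteq> k) U"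
    using fu unfolding free_ultrafilter_def by auto
  hence "eventually (\<lambda>n. \<forall>k\<in>{..<N}. n \<noteq> k) U" by (rule eventually_ball_finite[rotated]) simp
  thus ?thesis by eventually_elim (auto simp: not_less[symmetric])
qed

lemma fu_le_seq: "U \<le> sequentially"
  unfolding le_filter_def eventually_sequentially using fu_ge
  by (metis (mono_tags, lifting) eventually_mono)

lemma fu_lim:
  assumes K: "compact K" and ev: "eventually (\<lambda>n. f n \<in> K) U"
  shows "\<exists>l\<in>K. (f \<longlongrightarrow> l) U"
proof -
  define F where "F = filtermap f U"
  have "F \<noteq> bot" using fu_nbot unfolding F_def by (simp add: filtermap_bot_iff)
  moreover have "eventually (\<lambda>x. x \<in> K) F" using ev unfolding F_def by (simp add: eventually_filtermap)
  ultimately obtain l where l: "l \<in> K" "inf (nhds l) F \<noteq> bot"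
    using K unfolding compact_filter by blast
  have "(f \<longlongrightarrow> l) U"
  proof (rule topological_tendstoI)
    fix S assume S: "open S" "l \<in> S"
    show "eventually (\<lambda>n. f n \<in> S) U"
    proof (rule ccontr)
      assume "\<not> eventually (\<lambda>n. f n \<in> S) U"
      hence "eventually (\<lambda>n. f n \<notin> S) U" using fu_ultra by blast
      hence "eventually (\<lambda>x. x \<notin> S) F" unfolding F_def by (simp add: eventually_filtermap)
      moreover have "eventually (\<lambda>x. x \<in> S) (nhds l)" using S by (rule eventually_nhds_in_open)
      ultimately have "eventually (\<lambda>x. False) (inf (nhds l) F)"
        unfolding eventually_inf by blast
      thus False using l(2) by (simp add: eventually_False)
    qed
  qed
  thus ?thesis using l by blast
qed

lemma fu_lim_real:
  fixes f :: "nat \<Rightarrow> real"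
  assumes "eventually (\<lambda>n. \<bar>f n\<bar> \<le> B) U"
  shows "\<exists>l. (f \<longlongrightarrow> l) U \<and> \<bar>l\<bar> \<le> B"
proof -
  have "eventually (\<lambda>n. f n \<in> {-B..B}) U" using assms by eventually_elim (auto simp: abs_le_iff)
  then obtain l where "l \<in> {-B..B}" "(f \<longlongrightarrow> l) U" using fu_lim[OF compact_Icc] by blast
  thus ?thesis by (auto simp: abs_le_iff)
qed

lemma fu_lim_complex:
  fixes f :: "nat \<Rightarrow> complex"
  assumes "eventually (\<lambda>n. cmod (f n) \<le> B) U"
  shows "\<exists>l. (f \<longlongrightarrow> l) U"
proof -
  have "eventually (\<lambda>n. f n \<in> cball 0 B) U" using assms by eventually_elim auto
  thus ?thesis using fu_lim[OF compact_cball] by blast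
qed

lemma fu_Lim: "(f \<longlongrightarrow> l) U \<Longrightarrow> Lim U f = l"
  using fu_nbot by (simp add: tendsto_Lim)

lemma fu_le: "(f \<longlongrightarrow> (a::real)) U \<Longrightarrow> (g \<longlongrightarrow> b) U \<Longrightarrow> eventually (\<lambda>n. f n \<le> g n) U \<Longrightarrow> a \<le> b"
  using fu_nbot tendsto_le by (metis trivial_limit_def)

end

section \<open>The ultraproduct\<close>

lemma bseq_iff: "x \<in> bseq \<longleftrightarrow> (\<forall>n. incar n (x n)) \<and> (\<exists>B. \<forall>n. opnorm n (x n) \<le> B)"
  by (simp add: bseq_def incar_def)

lemma ucls_iff: "y \<in> ucls U x \<longleftrightarrow> y \<in> bseq \<and> ((\<lambda>n. nf2 n (msub (x n) (y n))) \<longlongrightarrow> 0) U"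
  by (simp add: ucls_def norm2_Mat t_diff_Mat)

lemma Qalg_simps:
  "t_car (Qalg U) = ucls U ` bseq"
  "t_zero (Qalg U) = ucls U (\<lambda>n. (\<lambda>a b. 0))"
  "t_one (Qalg U) = ucls U (\<lambda>n. mone n)"
  "t_add (Qalg U) C D = ucls U (\<lambda>n. madd (rep C n) (rep D n))"
  "t_mul (Qalg U) C D = ucls U (\<lambda>n. mmul n (rep C n) (rep D n))"
  "t_scl (Qalg U) c C = ucls U (\<lambda>n. mscl c (rep C n))"
  "t_star (Qalg U) C = ucls U (\<lambda>n. mstar (rep C n))"
  "t_norm (Qalg U) C = (INF x\<in>C. Lim U (\<lambda>n. opnorm n (x n)))"
  "t_tr (Qalg U) C = Lim U (\<lambda>n. mtr n (rep C n))"
  by (simp_all add: Qalg_def)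

lemma tends0_sum:
  fixes f g h :: "nat \<Rightarrow> real"
  assumes "(f \<longlongrightarrow> 0) F" "(g \<longlongrightarrow> 0) F" "\<And>n. 0 \<le> h n" "\<And>n. h n \<le> f n + g n"
  shows "(h \<longlongrightarrow> 0) F"
proof (rule tendsto_sandwich[of "\<lambda>_. 0" h F "\<lambda>n. f n + g n"])
  show "((\<lambda>n. f n + g n) \<longlongrightarrow> 0) F" using tendsto_add[OF assms(1,2)] by simp
qed (use assms in auto)

lemma tends0_cmul:
  fixes f h :: "nat \<Rightarrow> real"
  assumes "(f \<longlongrightarrow> 0) F" "\<And>n. 0 \<le> h n" "\<And>n. h n \<le> C * f n"
  shows "(h \<longlongrightarrow> 0) F"
proof (rule tendsto_sandwich[of "\<lambda>_. 0" h F "\<lambda>n. C * f n"])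
  show "((\<lambda>n. C * f n) \<longlongrightarrow> 0) F" using tendsto_mult_right_zero[OF assms(1)] by simp
qed (use assms in auto)

lemma ucls_self: "x \<in> bseq \<Longrightarrow> x \<in> ucls U x"
  by (simp add: ucls_iff msub_self)

lemma ucls_eq:
  assumes x: "x \<in> bseq" and y: "y \<in> ucls U x"
  shows "ucls U y = ucls U x"
proof -
  have yb: "y \<in> bseq" and dxy: "((\<lambda>n. nf2 n (msub (x n) (y n))) \<longlongrightarrow> 0) U" using y by (auto simp: ucls_iff)
  have dyx: "((\<lambda>n. nf2 n (msub (y n) (x n))) \<longlongrightarrow> 0) U" using dxy by (simp add: nf2_sub_sym)
  show ?thesis
  proof (intro set_eqI iffI)
    fix z assume "z \<in> ucls U y"
    hence zb: "z \<in> bseq" and dyz: "((\<lambda>n. nf2 n (msub (y n) (z n))) \<longlongrightarrow> 0) U" by (auto simp: ucls_iff)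
    have "((\<lambda>n. nf2 n (msub (x n) (z n))) \<longlongrightarrow> 0) U"
      by (rule tends0_sum[OF dxy dyz]) (simp_all, metis msub_trans nf2_add)
    thus "z \<in> ucls U x" using zb by (simp add: ucls_iff)
  next
    fix z assume "z \<in> ucls U x"
    hence zb: "z \<in> bseq" and dxz: "((\<lambda>n. nf2 n (msub (x n) (z n))) \<longlongrightarrow> 0) U" by (auto simp: ucls_iff)
    have "((\<lambda>n. nf2 n (msub (y n) (z n))) \<longlongrightarrow> 0) U"
      by (rule tends0_sum[OF dyx dxz]) (simp_all, metis msub_trans nf2_add)
    thus "z \<in> ucls U y" using zb by (simp add: ucls_iff)
  qed
qed

lemma ucls_eqI:
  assumes "x \<in> bseq" "y \<in> bseq" "((\<lambda>n. nf2 n (msub (x n) (y n))) \<longlongrightarrow> 0) U"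
  shows "ucls U x = ucls U y"
  using ucls_eq[of x y U] assms by (simp add: ucls_iff)

lemma rep_in: "x \<in> bseq \<Longrightarrow> rep (ucls U x) \<in> ucls U x"
  unfolding rep_def by (rule someI[of _ x]) (rule ucls_self)

lemma rep_close:
  assumes "x \<in> bseq"
  shows "rep (ucls U x) \<in> bseq" "((\<lambda>n. nf2 n (msub (rep (ucls U x) n) (x n))) \<longlongrightarrow> 0) U"
  using rep_in[OF assms, of U] by (auto simp: ucls_iff nf2_sub_sym)

lemma bseq_bound: "x \<in> bseq \<Longrightarrow> \<exists>B\<ge>0. \<forall>n. opnorm n (x n) \<le> B"
proof -
  assume "x \<in> bseq"
  then obtain B where "\<forall>n. opnorm n (x n) \<le> B" unfolding bseq_iff by blast
  moreover have "0 \<le> B" using calculation opnorm_nonneg[of 0 "x 0"] by (meson order_trans)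
  ultimately show ?thesis by blast
qed

lemma bseq_incar: "x \<in> bseq \<Longrightarrow> incar n (x n)"
  unfolding bseq_iff by blast

lemma bseqI: "(\<And>n. incar n (x n)) \<Longrightarrow> (\<And>n. opnorm n (x n) \<le> B) \<Longrightarrow> x \<in> bseq"
  unfolding bseq_iff by blast

lemma bseq_one: "(\<lambda>n. mone n) \<in> bseq"
  by (rule bseqI[of _ 1]) (simp_all add: incar_one opnorm_one)
lemma bseq_zero: "(\<lambda>n. (\<lambda>a b. 0)) \<in> bseq"
  by (rule bseqI[of _ 0]) (simp_all add: incar_zero opnorm_zero)

lemma bseq_add: "x \<in> bseq \<Longrightarrow> y \<in> bseq \<Longrightarrow> (\<lambda>n. madd (x n) (y n)) \<in> bseq"
proof -
  assume x: "x \<in> bseq" and y: "y \<in> bseq"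
  obtain Bx where Bx: "\<forall>n. opnorm n (x n) \<le> Bx" using bseq_bound[OF x] by blast
  obtain By where By: "\<forall>n. opnorm n (y n) \<le> By" using bseq_bound[OF y] by blast
  have bnd: "opnorm n (madd (x n) (y n)) \<le> Bx + By" for n
    using opnorm_add[of n "x n" "y n"] Bx[rule_format, of n] By[rule_format, of n] by linarith
  have inc: "incar n (madd (x n) (y n))" for n using x y by (simp add: incar_add bseq_incar)
  show ?thesis by (rule bseqI[OF inc bnd])
qed
lemma bseq_mul: "x \<in> bseq \<Longrightarrow> y \<in> bseq \<Longrightarrow> (\<lambda>n. mmul n (x n) (y n)) \<in> bseq"
proof -
  assume x: "x \<in> bseq" and y: "y \<in> bseq"
  obtain Bx where B0: "Bx \<ge> 0" and Bx: "\<forall>n. opnorm n (x n) \<le> Bx" using bseq_bound[OF x] by blast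
  obtain By where By: "\<forall>n. opnorm n (y n) \<le> By" using bseq_bound[OF y] by blast
  have bnd: "opnorm n (mmul n (x n) (y n)) \<le> Bx * By" for n
    using order_trans[OF opnorm_mul mult_mono[OF Bx[rule_format, of n] By[rule_format, of n] B0 opnorm_nonneg]] .
  have inc: "incar n (mmul n (x n) (y n))" for n using x y by (simp add: incar_mul bseq_incar)
  show ?thesis by (rule bseqI[OF inc bnd])
qed
lemma bseq_scl: "x \<in> bseq \<Longrightarrow> (\<lambda>n. mscl c (x n)) \<in> bseq"
proof -
  assume x: "x \<in> bseq"
  obtain Bx where Bx: "\<forall>n. opnorm n (x n) \<le> Bx" using bseq_bound[OF x] by blast
  have bnd: "opnorm n (mscl c (x n)) \<le> cmod c * Bx" for n
    using order_trans[OF opnorm_scl mult_left_mono[OF Bx[rule_format, of n] norm_ge_zero]] .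
  have inc: "incar n (mscl c (x n))" for n using x by (simp add: incar_scl bseq_incar)
  show ?thesis by (rule bseqI[OF inc bnd])
qed
lemma bseq_star: "x \<in> bseq \<Longrightarrow> (\<lambda>n. mstar (x n)) \<in> bseq"
proof -
  assume x: "x \<in> bseq"
  obtain Bx where Bx: "\<forall>n. opnorm n (x n) \<le> Bx" using bseq_bound[OF x] by blast
  have bnd: "opnorm n (mstar (x n)) \<le> Bx" for n using order_trans[OF opnorm_star Bx[rule_format, of n]] .
  have inc: "incar n (mstar (x n))" for n using x by (simp add: incar_star bseq_incar)
  show ?thesis by (rule bseqI[OF inc bnd])
qed

lemma msub_scl_same: "msub (mscl c x) (mscl c y) = mscl c (msub x y)"
  unfolding msub_def mscl_def by (auto simp: algebra_simps)

lemma tm_los: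
  assumes Y: "\<And>j. Y j \<in> bseq"
  shows "(\<lambda>n. tm_eval (Mat n) (\<lambda>j. Y j n) t) \<in> bseq \<and>
         tm_eval (Qalg U) (\<lambda>j. ucls U (Y j)) t = ucls U (\<lambda>n. tm_eval (Mat n) (\<lambda>j. Y j n) t)"
proof (induction t)
  case (Var i) thus ?case using Y by simp
next
  case One thus ?case by (simp add: Qalg_simps bseq_one)
next
  case (Add a b)
  define xa where "xa = (\<lambda>n. tm_eval (Mat n) (\<lambda>j. Y j n) a)"
  define xb where "xb = (\<lambda>n. tm_eval (Mat n) (\<lambda>j. Y j n) b)"
  have xa: "xa \<in> bseq" and xb: "xb \<in> bseq" using Add.IH unfolding xa_def xb_def by auto
  define ra where "ra = rep (ucls U xa)"
  define rb where "rb = rep (ucls U xb)"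
  note Ra = rep_close[OF xa, of U, folded ra_def]
  note Rb = rep_close[OF xb, of U, folded rb_def]
  have "ucls U (\<lambda>n. madd (ra n) (rb n)) = ucls U (\<lambda>n. madd (xa n) (xb n))"
  proof (rule ucls_eqI[OF bseq_add[OF Ra(1) Rb(1)] bseq_add[OF xa xb]])
    show "((\<lambda>n. nf2 n (msub (madd (ra n) (rb n)) (madd (xa n) (xb n)))) \<longlongrightarrow> 0) U"
      by (rule tends0_sum[OF Ra(2) Rb(2)]) (simp_all add: msub_add nf2_add)
  qed
  thus ?case using Add.IH bseq_add[OF xa xb] unfolding xa_def xb_def ra_def rb_def
    by (simp add: Qalg_simps)
next
  case (Mul a b)
  define xa where "xa = (\<lambda>n. tm_eval (Mat n) (\<lambda>j. Y j n) a)"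
  define xb where "xb = (\<lambda>n. tm_eval (Mat n) (\<lambda>j. Y j n) b)"
  have xa: "xa \<in> bseq" and xb: "xb \<in> bseq" using Mul.IH unfolding xa_def xb_def by auto
  define ra where "ra = rep (ucls U xa)"
  define rb where "rb = rep (ucls U xb)"
  note Ra = rep_close[OF xa, of U, folded ra_def]
  note Rb = rep_close[OF xb, of U, folded rb_def]
  obtain B1 where B1: "B1 \<ge> 0" "\<forall>n. opnorm n (ra n) \<le> B1" using bseq_bound[OF Ra(1)] by blast
  obtain B2 where B2: "B2 \<ge> 0" "\<forall>n. opnorm n (xb n) \<le> B2" using bseq_bound[OF xb] by blast
  have "ucls U (\<lambda>n. mmul n (ra n) (rb n)) = ucls U (\<lambda>n. mmul n (xa n) (xb n))"
  proof (rule ucls_eqI[OF bseq_mul[OF Ra(1) Rb(1)] bseq_mul[OF xa xb]])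
    have t1: "((\<lambda>n. B1 * nf2 n (msub (rb n) (xb n))) \<longlongrightarrow> 0) U"
      using tendsto_mult_right_zero[OF Rb(2)] by simp
    have t2: "((\<lambda>n. B2 * nf2 n (msub (ra n) (xa n))) \<longlongrightarrow> 0) U"
      using tendsto_mult_right_zero[OF Ra(2)] by simp
    show "((\<lambda>n. nf2 n (msub (mmul n (ra n) (rb n)) (mmul n (xa n) (xb n)))) \<longlongrightarrow> 0) U"
    proof (rule tends0_sum[OF t1 t2])
      fix n
      have "nf2 n (msub (mmul n (ra n) (rb n)) (mmul n (xa n) (xb n)))
          \<le> nf2 n (mmul n (ra n) (msub (rb n) (xb n))) + nf2 n (mmul n (msub (ra n) (xa n)) (xb n))"
        unfolding msub_mul by (rule nf2_add)
      also have "\<dots> \<le> opnorm n (ra n) * nf2 n (msub (rb n) (xb n)) + nf2 n (msub (ra n) (xa n)) * opnorm n (xb n)"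
        by (intro add_mono nf2_mul_left nf2_mul_right)
      also have "\<dots> \<le> B1 * nf2 n (msub (rb n) (xb n)) + B2 * nf2 n (msub (ra n) (xa n))"
        using B1 B2 by (simp add: mult.commute add_mono mult_right_mono)
      finally show "nf2 n (msub (mmul n (ra n) (rb n)) (mmul n (xa n) (xb n)))
          \<le> B1 * nf2 n (msub (rb n) (xb n)) + B2 * nf2 n (msub (ra n) (xa n))" .
    qed simp
  qed
  thus ?case using Mul.IH bseq_mul[OF xa xb] unfolding xa_def xb_def ra_def rb_def
    by (simp add: Qalg_simps)
next
  case (Scal c a)
  define xa where "xa = (\<lambda>n. tm_eval (Mat n) (\<lambda>j. Y j n) a)"
  have xa: "xa \<in> bseq" using Scal.IH unfolding xa_def by auto
  define ra where "ra = rep (ucls U xa)"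
  note Ra = rep_close[OF xa, of U, folded ra_def]
  have "ucls U (\<lambda>n. mscl c (ra n)) = ucls U (\<lambda>n. mscl c (xa n))"
  proof (rule ucls_eqI[OF bseq_scl[OF Ra(1)] bseq_scl[OF xa]])
    show "((\<lambda>n. nf2 n (msub (mscl c (ra n)) (mscl c (xa n)))) \<longlongrightarrow> 0) U"
      by (rule tends0_cmul[OF Ra(2), of _ "cmod c"]) (simp_all add: msub_scl_same nf2_scl)
  qed
  thus ?case using Scal.IH bseq_scl[OF xa] unfolding xa_def ra_def
    by (simp add: Qalg_simps)
next
  case (Star a)
  define xa where "xa = (\<lambda>n. tm_eval (Mat n) (\<lambda>j. Y j n) a)"
  have xa: "xa \<in> bseq" using Star.IH unfolding xa_def by auto
  define ra where "ra = rep (ucls U xa)"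
  note Ra = rep_close[OF xa, of U, folded ra_def]
  have "ucls U (\<lambda>n. mstar (ra n)) = ucls U (\<lambda>n. mstar (xa n))"
  proof (rule ucls_eqI[OF bseq_star[OF Ra(1)] bseq_star[OF xa]])
    show "((\<lambda>n. nf2 n (msub (mstar (ra n)) (mstar (xa n)))) \<longlongrightarrow> 0) U"
      using Ra(2) by (simp add: msub_star nf2_star)
  qed
  thus ?case using Star.IH bseq_star[OF xa] unfolding xa_def ra_def
    by (simp add: Qalg_simps)
qed

context
  fixes U :: "nat filter"
  assumes fu: "free_ultrafilter U"
begin

lemma tr_los:
  assumes x: "x \<in> bseq"
  shows "\<exists>l. ((\<lambda>n. mtr n (x n)) \<longlongrightarrow> l) U \<and> t_tr (Qalg U) (ucls U x) = l"
proof -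
  obtain B where B: "\<forall>n. opnorm n (x n) \<le> B" using bseq_bound[OF x] by blast
  have ev: "eventually (\<lambda>n. cmod (mtr n (x n)) \<le> B) U"
    using B mtr_le_opnorm order_trans by (intro always_eventually) blast
  obtain l where l: "((\<lambda>n. mtr n (x n)) \<longlongrightarrow> l) U" using fu_lim_complex[OF fu ev] by blast
  define r where "r = rep (ucls U x)"
  note R = rep_close[OF x, of U, folded r_def]
  have "((\<lambda>n. mtr n (r n) - mtr n (x n)) \<longlongrightarrow> 0) U"
  proof (rule Lim_null_comparison[OF _ R(2)])
    show "eventually (\<lambda>n. norm (mtr n (r n) - mtr n (x n)) \<le> nf2 n (msub (r n) (x n))) U"
      by (intro always_eventually allI) (metis mtr_sub mtr_le_nf2)
  qed
  hence "((\<lambda>n. mtr n (r n)) \<longlongrightarrow> l) U" using tendsto_add[OF l] by fastforce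
  hence "t_tr (Qalg U) (ucls U x) = l" unfolding Qalg_simps r_def[symmetric] by (rule fu_Lim[OF fu])
  thus ?thesis using l by blast
qed

lemma opnorm_lim:
  assumes "x \<in> bseq"
  shows "\<exists>l\<ge>0. ((\<lambda>n. opnorm n (x n)) \<longlongrightarrow> l) U"
proof -
  obtain B where B: "\<forall>n. opnorm n (x n) \<le> B" using bseq_bound[OF assms] by blast
  have ev: "eventually (\<lambda>n. \<bar>opnorm n (x n)\<bar> \<le> B) U" using B by (simp add: opnorm_nonneg)
  obtain l where l: "((\<lambda>n. opnorm n (x n)) \<longlongrightarrow> l) U" using fu_lim_real[OF fu ev] by blast
  moreover have "0 \<le> l" using fu_le[OF fu tendsto_const l] by (simp add: opnorm_nonneg)
  ultimately show ?thesis by blast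
qed

lemma Lim_opnorm_nonneg: "x \<in> bseq \<Longrightarrow> 0 \<le> Lim U (\<lambda>n. opnorm n (x n))"
  using opnorm_lim fu_Lim[OF fu] by metis

lemma bdd_below_norms: "bdd_below ((\<lambda>x. Lim U (\<lambda>n. opnorm n (x n))) ` ucls U c)"
  by (rule bdd_belowI2[of _ 0]) (auto simp: ucls_iff intro: Lim_opnorm_nonneg)

lemma t_norm_le:
  assumes c: "c \<in> bseq" and l: "((\<lambda>n. opnorm n (c n)) \<longlongrightarrow> l) U"
  shows "t_norm (Qalg U) (ucls U c) \<le> l"
proof -
  have "t_norm (Qalg U) (ucls U c) \<le> Lim U (\<lambda>n. opnorm n (c n))"
    unfolding Qalg_simps by (rule cINF_lower[OF bdd_below_norms ucls_self[OF c]])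
  thus ?thesis using fu_Lim[OF fu l] by simp
qed

lemma ballQ_I:
  assumes c: "c \<in> bseq" and "\<And>n. opnorm n (c n) \<le> r"
  shows "ucls U c \<in> ball_r (Qalg U) r"
proof -
  obtain l where l: "((\<lambda>n. opnorm n (c n)) \<longlongrightarrow> l) U" using opnorm_lim[OF c] by blast
  have "l \<le> r" using fu_le[OF fu l tendsto_const] assms(2) by simp
  thus ?thesis using t_norm_le[OF c l] c by (simp add: ball_r_def Qalg_simps)
qed

lemma good_rep:
  assumes C: "C \<in> ball_r (Qalg U) r" and eta: "\<eta> > 0"
  shows "\<exists>c\<in>bseq. ucls U c = C \<and> (\<forall>n. opnorm n (c n) \<le> r + \<eta>)"
proof -
  obtain x where x: "x \<in> bseq" "C = ucls U x" using C by (auto simp: ball_r_def Qalg_simps)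
  have "(INF y\<in>C. Lim U (\<lambda>n. opnorm n (y n))) < r + \<eta>"
    using C eta by (simp add: ball_r_def Qalg_simps)
  then obtain y where y: "y \<in> C" "Lim U (\<lambda>n. opnorm n (y n)) < r + \<eta>"
    using cINF_less_iff[of C, OF _ bdd_below_norms[of x, folded x(2)]] ucls_self[OF x(1)] x(2) by blast
  have yb: "y \<in> bseq" using y(1) x(2) by (simp add: ucls_iff)
  obtain l where l: "l \<ge> 0" "((\<lambda>n. opnorm n (y n)) \<longlongrightarrow> l) U" using opnorm_lim[OF yb] by blast
  have "l < r + \<eta>" using y(2) fu_Lim[OF fu l(2)] by simp
  hence ev: "eventually (\<lambda>n. opnorm n (y n) < r + \<eta>) U" using order_tendstoD(2)[OF l(2)] by blast
  define c where "c = (\<lambda>n. if opnorm n (y n) \<le> r + \<eta> then y n else (\<lambda>a b. 0))"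
  have rpos: "0 \<le> r + \<eta>" using \<open>l < r + \<eta>\<close> l(1) by linarith
  have cb: "c \<in> bseq"
    by (rule bseqI[where B="r + \<eta>"]) (use bseq_incar[OF yb] incar_zero opnorm_zero rpos in \<open>auto simp: c_def\<close>)
  have "((\<lambda>n. nf2 n (msub (y n) (c n))) \<longlongrightarrow> 0) U"
  proof (rule tendsto_eventually)
    show "eventually (\<lambda>n. nf2 n (msub (y n) (c n)) = 0) U"
      using ev by eventually_elim (simp add: c_def msub_self)
  qed
  hence "ucls U c = ucls U y" using ucls_eqI[OF yb cb] by simp
  also have "\<dots> = C" using ucls_eq[OF x(1)] y(1) x(2) by simp
  finally show ?thesis using cb rpos by (intro bexI[of _ c]) (auto simp: c_def opnorm_zero)
qed

lemma zero_ballQ: "0 \<le> r \<Longrightarrow> ucls U (\<lambda>n. (\<lambda>a b. 0)) \<in> ball_r (Qalg U) r"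
  by (rule ballQ_I[OF bseq_zero]) (simp add: opnorm_zero)

end

context
  fixes U :: "nat filter"
  assumes fu: "free_ultrafilter U"
begin

lemma inv_suc_U: "((\<lambda>n. inverse (real (Suc n))) \<longlongrightarrow> 0) U"
  using tendsto_mono[OF fu_le_seq[OF fu] LIMSEQ_inverse_real_of_nat] .

lemma quant_lim:
  fixes F :: "nat \<Rightarrow> 'z \<Rightarrow> real" and FQ :: "'c \<Rightarrow> real"
  assumes A: "\<And>n. A n \<noteq> {}" and AQ: "AQ \<noteq> {}"
    and M1: "\<And>n z. z \<in> A n \<Longrightarrow> \<bar>F n z\<bar> \<le> M" and M2: "\<And>C. C \<in> AQ \<Longrightarrow> \<bar>FQ C\<bar> \<le> M"
    and H2: "\<And>z. (\<And>n. z n \<in> A n) \<Longrightarrow> \<exists>C\<in>AQ. ((\<lambda>n. F n (z n)) \<longlongrightarrow> FQ C) U"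
    and H3: "\<And>C e. C \<in> AQ \<Longrightarrow> e > 0 \<Longrightarrow>
       \<exists>z v. (\<forall>n. z n \<in> A n) \<and> (v \<longlongrightarrow> FQ C) U \<and> (\<forall>n. v n \<le> F n (z n) + e)"
  shows "((\<lambda>n. SUP z\<in>A n. F n z) \<longlongrightarrow> (SUP C\<in>AQ. FQ C)) U"
proof -
  define S where "S = (\<lambda>n. SUP z\<in>A n. F n z)"
  have bddA: "bdd_above (F n ` A n)" for n using M1 by (intro bdd_aboveI2[of _ _ M]) (auto simp: abs_le_iff)
  have bddQ: "bdd_above (FQ ` AQ)" using M2 by (intro bdd_aboveI2[of _ _ M]) (auto simp: abs_le_iff)
  have "\<bar>S n\<bar> \<le> M" for n unfolding S_def by (rule sup_bound[OF A M1])
  hence "eventually (\<lambda>n. \<bar>S n\<bar> \<le> M) U" by simp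
  then obtain l where l: "(S \<longlongrightarrow> l) U" using fu_lim_real[OF fu] by blast
  have Sup: "F n z \<le> S n" if "z \<in> A n" for n z unfolding S_def using bddA that by (rule cSUP_upper2) simp
  have "l \<le> (SUP C\<in>AQ. FQ C)"
  proof -
    have "\<forall>n. \<exists>w. w \<in> A n \<and> S n - inverse (real (Suc n)) < F n w"
    proof
      fix n
      have "S n - inverse (real (Suc n)) < S n" by simp
      thus "\<exists>w. w \<in> A n \<and> S n - inverse (real (Suc n)) < F n w"
        unfolding S_def using less_cSUP_iff[OF A bddA] by blast
    qed
    then obtain z where z: "\<forall>n. z n \<in> A n \<and> S n - inverse (real (Suc n)) < F n (z n)"
      by metis
    obtain C where C: "C \<in> AQ" "((\<lambda>n. F n (z n)) \<longlongrightarrow> FQ C) U" using H2 z by blast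
    have "((\<lambda>n. S n - inverse (real (Suc n))) \<longlongrightarrow> l - 0) U" by (intro tendsto_diff l inv_suc_U)
    hence "l \<le> FQ C" using fu_le[OF fu _ C(2)] z by (simp add: less_imp_le)
    also have "FQ C \<le> (SUP C\<in>AQ. FQ C)" using bddQ C(1) by (rule cSUP_upper2) simp
    finally show ?thesis .
  qed
  moreover have "(SUP C\<in>AQ. FQ C) \<le> l"
  proof (rule cSUP_least[OF AQ])
    fix C assume C: "C \<in> AQ"
    show "FQ C \<le> l"
    proof (rule field_le_epsilon)
      fix e :: real assume e: "e > 0"
      obtain z v where zv: "\<forall>n. z n \<in> A n" "(v \<longlongrightarrow> FQ C) U" "\<forall>n. v n \<le> F n (z n) + e"
        using H3[OF C e] by blast
      have "\<forall>n. v n \<le> S n + e" using zv Sup by (meson add_right_mono order_trans)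
      moreover have "((\<lambda>n. S n + e) \<longlongrightarrow> l + e) U" by (intro tendsto_add l tendsto_const)
      ultimately show "FQ C \<le> l + e" using fu_le[OF fu zv(2)] by simp
    qed
  qed
  ultimately have "l = (SUP C\<in>AQ. FQ C)" by linarith
  thus ?thesis using l unfolding S_def by simp
qed

lemma quant_lim_inf:
  fixes F :: "nat \<Rightarrow> 'z \<Rightarrow> real" and FQ :: "'c \<Rightarrow> real"
  assumes A: "\<And>n. A n \<noteq> {}" and AQ: "AQ \<noteq> {}"
    and M1: "\<And>n z. z \<in> A n \<Longrightarrow> \<bar>F n z\<bar> \<le> M" and M2: "\<And>C. C \<in> AQ \<Longrightarrow> \<bar>FQ C\<bar> \<le> M"
    and H2: "\<And>z. (\<And>n. z n \<in> A n) \<Longrightarrow> \<exists>C\<in>AQ. ((\<lambda>n. F n (z n)) \<longlongrightarrow> FQ C) U"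
    and H3: "\<And>C e. C \<in> AQ \<Longrightarrow> e > 0 \<Longrightarrow>
       \<exists>z v. (\<forall>n. z n \<in> A n) \<and> (v \<longlongrightarrow> FQ C) U \<and> (\<forall>n. F n (z n) - e \<le> v n)"
  shows "((\<lambda>n. INF z\<in>A n. F n z) \<longlongrightarrow> (INF C\<in>AQ. FQ C)) U"
proof -
  have "((\<lambda>n. SUP z\<in>A n. - F n z) \<longlongrightarrow> (SUP C\<in>AQ. - FQ C)) U"
  proof (rule quant_lim[OF A AQ, where M=M])
    show "\<bar>- F n z\<bar> \<le> M" if "z \<in> A n" for n z using M1[OF that] by simp
    show "\<bar>- FQ C\<bar> \<le> M" if "C \<in> AQ" for C using M2[OF that] by simp
    show "\<exists>C\<in>AQ. ((\<lambda>n. - F n (z n)) \<longlongrightarrow> - FQ C) U" if "\<And>n. z n \<in> A n" for z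
      using H2[OF that] tendsto_minus by blast
    show "\<exists>z v. (\<forall>n. z n \<in> A n) \<and> (v \<longlongrightarrow> - FQ C) U \<and> (\<forall>n. v n \<le> - F n (z n) + e)"
      if a: "C \<in> AQ" "e > 0" for C e
    proof -
      obtain z v where zv: "\<forall>n. z n \<in> A n" "(v \<longlongrightarrow> FQ C) U" "\<forall>n. F n (z n) - e \<le> v n"
        using H3[OF a] by blast
      have "\<forall>n. - v n \<le> - F n (z n) + e" using zv(3) by (metis add.commute diff_le_eq minus_diff_eq neg_le_iff_le uminus_add_conv_diff)
      thus ?thesis using zv tendsto_minus[OF zv(2)] by (intro exI[of _ z] exI[of _ "\<lambda>n. - v n"]) auto
    qed
  qed
  hence "((\<lambda>n. - (SUP z\<in>A n. - F n z)) \<longlongrightarrow> - (SUP C\<in>AQ. - FQ C)) U" by (rule tendsto_minus)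
  thus ?thesis unfolding inf_as_sup .
qed

lemma upd_Q: "(\<lambda>j. ucls U (Y j))(k := ucls U c) = (\<lambda>j. ucls U ((Y(k := c)) j))"
  by (auto simp: fun_eq_iff)

lemma upd_M: "(\<lambda>j. Y j n)(k := c n) = (\<lambda>j. (Y(k := c)) j n)"
  by auto

lemma Y_upd_bseq: "(\<And>j. Y j \<in> bseq) \<Longrightarrow> c \<in> bseq \<Longrightarrow> (Y(k := c)) j \<in> bseq"
  by simp

lemma Y_upd_bound: "\<forall>j n. opnorm n (Y j n) \<le> B \<Longrightarrow> \<forall>n. opnorm n (c n) \<le> Bc \<Longrightarrow>
    \<forall>j n. opnorm n ((Y(k := c)) j n) \<le> max B Bc"
  by (simp add: le_max_iff_disj)

lemma Y_inball: "(\<And>j. Y j \<in> bseq) \<Longrightarrow> \<forall>j n. opnorm n (Y j n) \<le> B \<Longrightarrow> B \<le> R \<Longrightarrow> inball n R (\<lambda>j. Y j n)"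
  unfolding inball_def ball_r_Mat using bseq_incar order_trans by blast

lemma quant_hyps:
  assumes wfp: "wf p" and r: "r > 0"
    and IH: "\<forall>Y. (\<forall>j. Y j \<in> bseq) \<longrightarrow> (\<exists>B. \<forall>j n. opnorm n (Y j n) \<le> B) \<longrightarrow>
        ((\<lambda>n. fm_eval (Mat n) (\<lambda>j. Y j n) p) \<longlongrightarrow> fm_eval (Qalg U) (\<lambda>j. ucls U (Y j)) p) U"
    and Y: "\<And>j. Y j \<in> bseq" and B: "\<forall>j n. opnorm n (Y j n) \<le> B"
  shows "\<exists>M. (\<forall>n z. z \<in> ball_r (Mat n) r \<longrightarrow> \<bar>fm_eval (Mat n) ((\<lambda>j. Y j n)(k := z)) p\<bar> \<le> M) \<and>
             (\<forall>C\<in>ball_r (Qalg U) r. \<bar>fm_eval (Qalg U) ((\<lambda>j. ucls U (Y j))(k := C)) p\<bar> \<le> M)"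
    and "\<And>z. (\<And>n. z n \<in> ball_r (Mat n) r) \<Longrightarrow> \<exists>C\<in>ball_r (Qalg U) r.
           ((\<lambda>n. fm_eval (Mat n) ((\<lambda>j. Y j n)(k := z n)) p) \<longlongrightarrow> fm_eval (Qalg U) ((\<lambda>j. ucls U (Y j))(k := C)) p) U"
    and "\<And>C e. C \<in> ball_r (Qalg U) r \<Longrightarrow> e > 0 \<Longrightarrow> \<exists>z v. (\<forall>n. z n \<in> ball_r (Mat n) r) \<and>
           (v \<longlongrightarrow> fm_eval (Qalg U) ((\<lambda>j. ucls U (Y j))(k := C)) p) U \<and>
           (\<forall>n. \<bar>v n - fm_eval (Mat n) ((\<lambda>j. Y j n)(k := z n)) p\<bar> \<le> e)"
proof -
  define R0 where "R0 = max B r + 1"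
  have BR: "B \<le> R0" "r + 1 \<le> R0" "r \<le> R0" unfolding R0_def by auto
  obtain Bp where Bp: "\<And>n \<rho>. inball n R0 \<rho> \<Longrightarrow> \<bar>fm_eval (Mat n) \<rho> p\<bar> \<le> Bp"
    using fm_bound[OF wfp] by blast
  have inb: "inball n R0 ((\<lambda>j. Y j n)(k := z))" if "z \<in> ball_r (Mat n) s" "s \<le> R0" for n z s
    using inball_upd[OF Y_inball[OF Y B BR(1)] that(1) order_refl that(2)] .
  have IHc: "((\<lambda>n. fm_eval (Mat n) ((\<lambda>j. Y j n)(k := c n)) p) \<longlongrightarrow>
              fm_eval (Qalg U) ((\<lambda>j. ucls U (Y j))(k := ucls U c)) p) U" if c: "c \<in> bseq" for c
  proof -
    obtain Bc where Bc: "\<forall>n. opnorm n (c n) \<le> Bc" using bseq_bound[OF c] by blast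
    have h1: "\<forall>j. (Y(k := c)) j \<in> bseq" using Y c by simp
    have h2: "\<exists>B'. \<forall>j n. opnorm n ((Y(k := c)) j n) \<le> B'" using Y_upd_bound[OF B Bc] by blast
    show ?thesis unfolding upd_Q upd_M using IH h1 h2 by blast
  qed
  show "\<exists>M. (\<forall>n z. z \<in> ball_r (Mat n) r \<longrightarrow> \<bar>fm_eval (Mat n) ((\<lambda>j. Y j n)(k := z)) p\<bar> \<le> M) \<and>
             (\<forall>C\<in>ball_r (Qalg U) r. \<bar>fm_eval (Qalg U) ((\<lambda>j. ucls U (Y j))(k := C)) p\<bar> \<le> M)"
  proof (intro exI[of _ Bp] conjI allI impI ballI)
    fix n z assume "z \<in> ball_r (Mat n) r"
    thus "\<bar>fm_eval (Mat n) ((\<lambda>j. Y j n)(k := z)) p\<bar> \<le> Bp" using Bp[OF inb[OF _ BR(3)]] by blast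
  next
    fix C assume C: "C \<in> ball_r (Qalg U) r"
    obtain c where c: "c \<in> bseq" "ucls U c = C" "\<forall>n. opnorm n (c n) \<le> r + 1"
      using good_rep[OF fu C zero_less_one] by blast
    have cb: "c n \<in> ball_r (Mat n) (r + 1)" for n using c bseq_incar by (simp add: ball_r_Mat)
    have "\<forall>n. \<bar>fm_eval (Mat n) ((\<lambda>j. Y j n)(k := c n)) p\<bar> \<le> Bp" using Bp[OF inb[OF cb BR(2)]] by blast
    thus "\<bar>fm_eval (Qalg U) ((\<lambda>j. ucls U (Y j))(k := C)) p\<bar> \<le> Bp"
      using fu_le[OF fu tendsto_rabs[OF IHc[OF c(1)]] tendsto_const] c(2) by simp
  qed
  show "\<exists>C\<in>ball_r (Qalg U) r.
           ((\<lambda>n. fm_eval (Mat n) ((\<lambda>j. Y j n)(k := z n)) p) \<longlongrightarrow> fm_eval (Qalg U) ((\<lambda>j. ucls U (Y j))(k := C)) p) U"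
    if z: "\<And>n. z n \<in> ball_r (Mat n) r" for z
  proof -
    have zb: "z \<in> bseq" using z by (intro bseqI[where B=r]) (auto simp: ball_r_Mat)
    have "ucls U z \<in> ball_r (Qalg U) r" using z by (intro ballQ_I[OF fu zb]) (auto simp: ball_r_Mat)
    thus ?thesis using IHc[OF zb] by blast
  qed
  show "\<exists>z v. (\<forall>n. z n \<in> ball_r (Mat n) r) \<and>
           (v \<longlongrightarrow> fm_eval (Qalg U) ((\<lambda>j. ucls U (Y j))(k := C)) p) U \<and>
           (\<forall>n. \<bar>v n - fm_eval (Mat n) ((\<lambda>j. Y j n)(k := z n)) p\<bar> \<le> e)"
    if C: "C \<in> ball_r (Qalg U) r" and e: "e > 0" for C e
  proof -
    obtain d where d: "d > 0" "\<forall>n \<rho> \<rho>'. inball n R0 \<rho> \<longrightarrow> inball n R0 \<rho>' \<longrightarrow> closeR n d \<rho> \<rho>' \<longrightarrow>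
           \<bar>fm_eval (Mat n) \<rho> p - fm_eval (Mat n) \<rho>' p\<bar> \<le> e"
      using fm_ucont[OF wfp e] by blast
    define th where "th = min d 1"
    have th: "th > 0" "th \<le> d" "th \<le> 1" unfolding th_def using d by auto
    obtain c where c: "c \<in> bseq" "ucls U c = C" "\<forall>n. opnorm n (c n) \<le> r + th"
      using good_rep[OF fu C th(1)] by blast
    have cb: "c n \<in> ball_r (Mat n) (r + th)" for n using c bseq_incar by (simp add: ball_r_Mat)
    define z where "z = (\<lambda>n. mscl (of_real (min 1 (r / (r + th)))) (c n))"
    have zb: "z n \<in> ball_r (Mat n) r" "opnorm n (msub (c n) (z n)) \<le> \<bar>(r + th) - r\<bar>" for n
      using scale_ball[OF cb _ r, of n] th r unfolding z_def by auto
    have "\<bar>fm_eval (Mat n) ((\<lambda>j. Y j n)(k := c n)) p - fm_eval (Mat n) ((\<lambda>j. Y j n)(k := z n)) p\<bar> \<le> e" for n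
    proof -
      have "closeR n d ((\<lambda>j. Y j n)(k := c n)) ((\<lambda>j. Y j n)(k := z n))"
        by (rule closeR_upd[OF closeR_refl]) (use zb(2)[of n] th d(1) in auto)
      moreover have "inball n R0 ((\<lambda>j. Y j n)(k := c n))" using inb[OF cb] th BR by auto
      moreover have "inball n R0 ((\<lambda>j. Y j n)(k := z n))" using inb[OF zb(1)] BR by auto
      ultimately show ?thesis using d(2)[rule_format] by blast
    qed
    thus ?thesis using zb(1) IHc[OF c(1)] c(2)
      by (intro exI[of _ z] exI[of _ "\<lambda>n. fm_eval (Mat n) ((\<lambda>j. Y j n)(k := c n)) p"]) auto
  qed
qed

end

context
  fixes U :: "nat filter"
  assumes fu: "free_ultrafilter U"
begin

lemma fm_los:
  "wf \<phi> \<Longrightarrow> \<forall>Y. (\<forall>j. Y j \<in> bseq) \<longrightarrow> (\<exists>B. \<forall>j n. opnorm n (Y j n) \<le> B) \<longrightarrow>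
     ((\<lambda>n. fm_eval (Mat n) (\<lambda>j. Y j n) \<phi>) \<longlongrightarrow> fm_eval (Qalg U) (\<lambda>j. ucls U (Y j)) \<phi>) U"
proof (induction \<phi>)
  case (ReTr t)
  show ?case
  proof (intro allI impI)
    fix Y :: "nat \<Rightarrow> nat \<Rightarrow> mat" assume Y: "\<forall>j. Y j \<in> bseq"
    define x where "x = (\<lambda>n. tm_eval (Mat n) (\<lambda>j. Y j n) t)"
    have x: "x \<in> bseq" "tm_eval (Qalg U) (\<lambda>j. ucls U (Y j)) t = ucls U x"
      using tm_los[where Y=Y and U=U and t=t] Y unfolding x_def by auto
    obtain l where l: "((\<lambda>n. mtr n (x n)) \<longlongrightarrow> l) U" "t_tr (Qalg U) (ucls U x) = l"
      using tr_los[OF fu x(1)] by blast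
    show "((\<lambda>n. fm_eval (Mat n) (\<lambda>j. Y j n) (ReTr t)) \<longlongrightarrow> fm_eval (Qalg U) (\<lambda>j. ucls U (Y j)) (ReTr t)) U"
      using tendsto_Re[OF l(1)] x(2) l(2) unfolding x_def by simp
  qed
next
  case (ImTr t)
  show ?case
  proof (intro allI impI)
    fix Y :: "nat \<Rightarrow> nat \<Rightarrow> mat" assume Y: "\<forall>j. Y j \<in> bseq"
    define x where "x = (\<lambda>n. tm_eval (Mat n) (\<lambda>j. Y j n) t)"
    have x: "x \<in> bseq" "tm_eval (Qalg U) (\<lambda>j. ucls U (Y j)) t = ucls U x"
      using tm_los[where Y=Y and U=U and t=t] Y unfolding x_def by auto
    obtain l where l: "((\<lambda>n. mtr n (x n)) \<longlongrightarrow> l) U" "t_tr (Qalg U) (ucls U x) = l"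
      using tr_los[OF fu x(1)] by blast
    show "((\<lambda>n. fm_eval (Mat n) (\<lambda>j. Y j n) (ImTr t)) \<longlongrightarrow> fm_eval (Qalg U) (\<lambda>j. ucls U (Y j)) (ImTr t)) U"
      using tendsto_Im[OF l(1)] x(2) l(2) unfolding x_def by simp
  qed
next
  case (Conn f ps)
  have cont: "continuous_on UNIV f" and wfs: "\<And>p. p \<in> set ps \<Longrightarrow> wf p"
    using Conn.prems by (auto simp: list_all_iff)
  show ?case
  proof (intro allI impI)
    fix Y :: "nat \<Rightarrow> nat \<Rightarrow> mat" assume Y: "\<forall>j. Y j \<in> bseq" and B: "\<exists>B. \<forall>j n. opnorm n (Y j n) \<le> B"
    define vQ where "vQ = (\<lambda>i. if i < length ps then map (fm_eval (Qalg U) (\<lambda>j. ucls U (Y j))) ps ! i else 0)"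
    define v where "v = (\<lambda>n i. if i < length ps then map (fm_eval (Mat n) (\<lambda>j. Y j n)) ps ! i else 0)"
    have c2: "(v \<longlongrightarrow> vQ) U"
    proof (rule tendsto_fun_coord)
      fix i
      show "((\<lambda>n. v n i) \<longlongrightarrow> vQ i) U"
      proof (cases "i < length ps")
        case True
        hence p: "ps ! i \<in> set ps" by simp
        have "((\<lambda>n. fm_eval (Mat n) (\<lambda>j. Y j n) (ps ! i)) \<longlongrightarrow> fm_eval (Qalg U) (\<lambda>j. ucls U (Y j)) (ps ! i)) U"
          using Conn.IH[OF p wfs[OF p], rule_format, OF Y[rule_format] B] .
        thus ?thesis using True unfolding v_def vQ_def by simp
      next
        case False thus ?thesis unfolding v_def vQ_def by simp
      qed
    qed
    have c1: "isCont f vQ" using cont continuous_on_eq_continuous_at[OF open_UNIV] by blast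
    have "((\<lambda>n. f (v n)) \<longlongrightarrow> f vQ) U" by (rule isCont_tendsto_compose[OF c1 c2])
    thus "((\<lambda>n. fm_eval (Mat n) (\<lambda>j. Y j n) (Conn f ps)) \<longlongrightarrow> fm_eval (Qalg U) (\<lambda>j. ucls U (Y j)) (Conn f ps)) U"
      unfolding v_def vQ_def by simp
  qed
next
  case (SupF r k p)
  have r: "r > 0" and wfp: "wf p" using SupF.prems by auto
  show ?case
  proof (intro allI impI)
    fix Y :: "nat \<Rightarrow> nat \<Rightarrow> mat" assume Y: "\<forall>j. Y j \<in> bseq" and "\<exists>B. \<forall>j n. opnorm n (Y j n) \<le> B"
    then obtain B where B: "\<forall>j n. opnorm n (Y j n) \<le> B" by blast
    note IH = SupF.IH[OF wfp]
    note QH = quant_hyps[OF fu wfp r IH, where Y=Y and B=B and k=k]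
    obtain M where M: "\<forall>n z. z \<in> ball_r (Mat n) r \<longrightarrow> \<bar>fm_eval (Mat n) ((\<lambda>j. Y j n)(k := z)) p\<bar> \<le> M"
      "\<forall>C\<in>ball_r (Qalg U) r. \<bar>fm_eval (Qalg U) ((\<lambda>j. ucls U (Y j))(k := C)) p\<bar> \<le> M"
      using QH(1)[OF Y[rule_format] B] by blast
    have "((\<lambda>n. SUP z\<in>ball_r (Mat n) r. fm_eval (Mat n) ((\<lambda>j. Y j n)(k := z)) p) \<longlongrightarrow>
           (SUP C\<in>ball_r (Qalg U) r. fm_eval (Qalg U) ((\<lambda>j. ucls U (Y j))(k := C)) p)) U"
    proof (rule quant_lim[OF fu, where M=M])
      show "ball_r (Mat n) r \<noteq> {}" for n using zero_ball[of r n] r by auto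
      show "ball_r (Qalg U) r \<noteq> {}" using zero_ballQ[OF fu, of r] r by auto
      show "\<bar>fm_eval (Mat n) ((\<lambda>j. Y j n)(k := z)) p\<bar> \<le> M" if "z \<in> ball_r (Mat n) r" for n z
        using M(1) that by blast
      show "\<bar>fm_eval (Qalg U) ((\<lambda>j. ucls U (Y j))(k := C)) p\<bar> \<le> M" if "C \<in> ball_r (Qalg U) r" for C
        using M(2) that by blast
      show "\<exists>C\<in>ball_r (Qalg U) r. ((\<lambda>n. fm_eval (Mat n) ((\<lambda>j. Y j n)(k := z n)) p) \<longlongrightarrow>
              fm_eval (Qalg U) ((\<lambda>j. ucls U (Y j))(k := C)) p) U" if "\<And>n. z n \<in> ball_r (Mat n) r" for z
        using QH(2)[OF Y[rule_format] B that] by blast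
      show "\<exists>z v. (\<forall>n. z n \<in> ball_r (Mat n) r) \<and> (v \<longlongrightarrow> fm_eval (Qalg U) ((\<lambda>j. ucls U (Y j))(k := C)) p) U \<and>
              (\<forall>n. v n \<le> fm_eval (Mat n) ((\<lambda>j. Y j n)(k := z n)) p + e)"
        if a: "C \<in> ball_r (Qalg U) r" "e > 0" for C e
      proof -
        obtain z v where zv: "\<forall>n. z n \<in> ball_r (Mat n) r" "(v \<longlongrightarrow> fm_eval (Qalg U) ((\<lambda>j. ucls U (Y j))(k := C)) p) U"
          "\<forall>n. \<bar>v n - fm_eval (Mat n) ((\<lambda>j. Y j n)(k := z n)) p\<bar> \<le> e"
          using QH(3)[OF Y[rule_format] B a] by blast
        have "\<forall>n. v n \<le> fm_eval (Mat n) ((\<lambda>j. Y j n)(k := z n)) p + e"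
        proof
          fix n show "v n \<le> fm_eval (Mat n) ((\<lambda>j. Y j n)(k := z n)) p + e" using zv(3)[rule_format, of n] by linarith
        qed
        thus ?thesis using zv by blast
      qed
    qed
    thus "((\<lambda>n. fm_eval (Mat n) (\<lambda>j. Y j n) (SupF r k p)) \<longlongrightarrow> fm_eval (Qalg U) (\<lambda>j. ucls U (Y j)) (SupF r k p)) U"
      by simp
  qed
next
  case (InfF r k p)
  have r: "r > 0" and wfp: "wf p" using InfF.prems by auto
  show ?case
  proof (intro allI impI)
    fix Y :: "nat \<Rightarrow> nat \<Rightarrow> mat" assume Y: "\<forall>j. Y j \<in> bseq" and "\<exists>B. \<forall>j n. opnorm n (Y j n) \<le> B"
    then obtain B where B: "\<forall>j n. opnorm n (Y j n) \<le> B" by blast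
    note IH = InfF.IH[OF wfp]
    note QH = quant_hyps[OF fu wfp r IH, where Y=Y and B=B and k=k]
    obtain M where M: "\<forall>n z. z \<in> ball_r (Mat n) r \<longrightarrow> \<bar>fm_eval (Mat n) ((\<lambda>j. Y j n)(k := z)) p\<bar> \<le> M"
      "\<forall>C\<in>ball_r (Qalg U) r. \<bar>fm_eval (Qalg U) ((\<lambda>j. ucls U (Y j))(k := C)) p\<bar> \<le> M"
      using QH(1)[OF Y[rule_format] B] by blast
    have "((\<lambda>n. INF z\<in>ball_r (Mat n) r. fm_eval (Mat n) ((\<lambda>j. Y j n)(k := z)) p) \<longlongrightarrow>
           (INF C\<in>ball_r (Qalg U) r. fm_eval (Qalg U) ((\<lambda>j. ucls U (Y j))(k := C)) p)) U"
    proof (rule quant_lim_inf[OF fu, where M=M])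
      show "ball_r (Mat n) r \<noteq> {}" for n using zero_ball[of r n] r by auto
      show "ball_r (Qalg U) r \<noteq> {}" using zero_ballQ[OF fu, of r] r by auto
      show "\<bar>fm_eval (Mat n) ((\<lambda>j. Y j n)(k := z)) p\<bar> \<le> M" if "z \<in> ball_r (Mat n) r" for n z
        using M(1) that by blast
      show "\<bar>fm_eval (Qalg U) ((\<lambda>j. ucls U (Y j))(k := C)) p\<bar> \<le> M" if "C \<in> ball_r (Qalg U) r" for C
        using M(2) that by blast
      show "\<exists>C\<in>ball_r (Qalg U) r. ((\<lambda>n. fm_eval (Mat n) ((\<lambda>j. Y j n)(k := z n)) p) \<longlongrightarrow>
              fm_eval (Qalg U) ((\<lambda>j. ucls U (Y j))(k := C)) p) U" if "\<And>n. z n \<in> ball_r (Mat n) r" for z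
        using QH(2)[OF Y[rule_format] B that] by blast
      show "\<exists>z v. (\<forall>n. z n \<in> ball_r (Mat n) r) \<and> (v \<longlongrightarrow> fm_eval (Qalg U) ((\<lambda>j. ucls U (Y j))(k := C)) p) U \<and>
              (\<forall>n. fm_eval (Mat n) ((\<lambda>j. Y j n)(k := z n)) p - e \<le> v n)"
        if a: "C \<in> ball_r (Qalg U) r" "e > 0" for C e
      proof -
        obtain z v where zv: "\<forall>n. z n \<in> ball_r (Mat n) r" "(v \<longlongrightarrow> fm_eval (Qalg U) ((\<lambda>j. ucls U (Y j))(k := C)) p) U"
          "\<forall>n. \<bar>v n - fm_eval (Mat n) ((\<lambda>j. Y j n)(k := z n)) p\<bar> \<le> e"
          using QH(3)[OF Y[rule_format] B a] by blast
        have "\<forall>n. fm_eval (Mat n) ((\<lambda>j. Y j n)(k := z n)) p - e \<le> v n"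
        proof
          fix n show "fm_eval (Mat n) ((\<lambda>j. Y j n)(k := z n)) p - e \<le> v n" using zv(3)[rule_format, of n] by linarith
        qed
        thus ?thesis using zv by blast
      qed
    qed
    thus "((\<lambda>n. fm_eval (Mat n) (\<lambda>j. Y j n) (InfF r k p)) \<longlongrightarrow> fm_eval (Qalg U) (\<lambda>j. ucls U (Y j)) (InfF r k p)) U"
      by simp
  qed
qed

end

lemma Gamma_inball: "Y \<in> Gamma d n r V \<Longrightarrow> 0 \<le> r \<Longrightarrow> inball n r Y"
  unfolding Gamma_def inball_def using zero_ball by (metis (mono_tags, lifting) mem_Collect_eq not_le)

lemma Gamma_tp: "Y \<in> Gamma d n r V \<Longrightarrow> tp (Mat n) d Y \<in> V"
  unfolding Gamma_def by blast

lemma tp_eval: "wf \<phi> \<Longrightarrow> fv \<phi> \<subseteq> {..<d} \<Longrightarrow> tp A d Y \<phi> = fm_eval A Y \<phi>"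
  by (simp add: tp_def)

lemma Gamma_zero: "0 \<le> r \<Longrightarrow> (\<lambda>j. (\<lambda>a b. 0)) \<in> Gamma d n r UNIV"
  unfolding Gamma_def using zero_ball by auto

theorem lemma3:
  fixes U :: "nat filter" and d :: nat and M :: "'a tralg" and X :: "nat \<Rightarrow> 'a"
  assumes "free_ultrafilter U"
    and "tracial_W M"
    and "\<forall>j<d. X j \<in> t_car M"
    and "chi_full U d {tp M d X} > -\<infinity>"
  shows "\<exists>Y. (\<forall>j<d. Y j \<in> t_car (Qalg U)) \<and> tp (Qalg U) d Y = tp M d X"
proof -
  define \<mu> where "\<mu> = tp M d X"
  have fu: "free_ultrafilter U" by (rule assms(1))
  have "-\<infinity> < (SUP r\<in>{0<..}. chi_full_r U d r {\<mu>})" using assms(4) unfolding chi_full_def \<mu>_def .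
  then obtain r where r: "r > 0" "-\<infinity> < chi_full_r U d r {\<mu>}" by (auto simp: less_SUP_iff)
  have nonempty: "eventually (\<lambda>n. Gamma d n r V \<noteq> {}) U" if V: "open V" "\<mu> \<in> V" for V
  proof (rule ccontr)
    assume "\<not> eventually (\<lambda>n. Gamma d n r V \<noteq> {}) U"
    hence "eventually (\<lambda>n. \<not> Gamma d n r V \<noteq> {}) U" using fu_ultra[OF fu] by blast
    hence "eventually (\<lambda>n. logvol d n (Gamma d n r V) = -\<infinity>) U"
      by eventually_elim (simp add: logvol_def vol_def)
    hence "Lim U (\<lambda>n. logvol d n (Gamma d n r V)) = -\<infinity>"
      by (intro fu_Lim[OF fu] tendsto_eventually)
    moreover have "chi_full_r U d r {\<mu>} \<le> Lim U (\<lambda>n. logvol d n (Gamma d n r V))"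
      unfolding chi_full_r_def by (rule INF_lower) (use V in auto)
    ultimately show False using r(2) by simp
  qed
  define D where "D = {\<psi> :: rfm. wf (ifm \<psi>) \<and> fv (ifm \<psi>) \<subseteq> {..<d}}"
  have D0: "RReTr ROne \<in> D" by (simp add: D_def)
  hence Dne: "D \<noteq> {}" by blast
  define e where "e = from_nat_into D"
  have eD: "e i \<in> D" for i unfolding e_def using from_nat_into[OF Dne] .
  have De: "\<exists>i. e i = \<psi>" if "\<psi> \<in> D" for \<psi> unfolding e_def using from_nat_into_surj[OF _ that] by simp
  define V where "V = (\<lambda>k. {\<tau> :: fm \<Rightarrow> real. \<forall>i\<in>{..<k}. \<tau> (ifm (e i)) \<in> ball (\<mu> (ifm (e i))) (1 / (real k + 1))})"
  have Vopen: "open (V k)" for k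
    unfolding V_def by (rule product_topology_basis') auto
  have Vmu: "\<mu> \<in> V k" for k by (simp add: V_def)
  have Vmono: "V k' \<subseteq> V k" if "k \<le> k'" for k k'
  proof
    fix \<tau> assume a: "\<tau> \<in> V k'"
    have le: "1 / (real k' + 1) \<le> 1 / (real k + 1)" using that by (simp add: frac_le)
    show "\<tau> \<in> V k" unfolding V_def
    proof (intro CollectI ballI)
      fix i assume "i \<in> {..<k}"
      hence "i \<in> {..<k'}" using that by auto
      hence "\<tau> (ifm (e i)) \<in> ball (\<mu> (ifm (e i))) (1 / (real k' + 1))" using a unfolding V_def by blast
      thus "\<tau> (ifm (e i)) \<in> ball (\<mu> (ifm (e i))) (1 / (real k + 1))" using le by (auto simp: mem_ball)
    qed
  qed
  have V0: "V 0 = UNIV" by (simp add: V_def)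
  define Kset where "Kset = (\<lambda>n. {k. k \<le> n \<and> Gamma d n r (V k) \<noteq> {}})"
  have K0: "0 \<in> Kset n" for n unfolding Kset_def using Gamma_zero[of r d n] r V0 by auto
  have Kfin: "finite (Kset n)" for n unfolding Kset_def by (rule finite_subset[of _ "{..n}"]) auto
  define K where "K = (\<lambda>n. Max (Kset n))"
  have KK: "K n \<in> Kset n" for n unfolding K_def using Max_in[OF Kfin] K0 by blast
  define Z where "Z = (\<lambda>n. SOME Y. Y \<in> Gamma d n r (V (K n)))"
  have Z: "Z n \<in> Gamma d n r (V (K n))" for n
  proof -
    have "\<exists>Y. Y \<in> Gamma d n r (V (K n))" using KK[of n] unfolding Kset_def by blast
    thus ?thesis unfolding Z_def by (rule someI_ex)
  qed
  have Zin: "inball n r (Z n)" for n using Gamma_inball[OF Z] r by simp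
  have evK: "eventually (\<lambda>n. k \<le> K n) U" for k
  proof -
    have "eventually (\<lambda>n. k \<le> n \<and> Gamma d n r (V k) \<noteq> {}) U"
      using fu_ge[OF fu, of k] nonempty[OF Vopen Vmu] by (rule eventually_conj)
    thus ?thesis
    proof eventually_elim
      case (elim n)
      hence "k \<in> Kset n" unfolding Kset_def by simp
      thus ?case unfolding K_def using Kfin by (rule Max_ge[rotated])
    qed
  qed
  have conv: "((\<lambda>n. fm_eval (Mat n) (Z n) (ifm (e i))) \<longlongrightarrow> \<mu> (ifm (e i))) U" for i
  proof (rule tendstoI)
    fix \<epsilon> :: real assume eps: "\<epsilon> > 0"
    obtain k :: nat where m: "0 < k" "inverse (real k) < \<epsilon>" using ex_inverse_of_nat_less[OF eps] by auto
    have "inverse (real (Suc k)) \<le> inverse (real k)" using m(1) by (intro le_imp_inverse_le) auto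
    hence k: "inverse (real (Suc k)) < \<epsilon>" using m(2) by linarith
    define k' where "k' = max k (Suc i)"
    have ik: "i < k'" unfolding k'_def by simp
    have kk: "1 / (real k' + 1) < \<epsilon>"
    proof -
      have "1 / (real k' + 1) \<le> inverse (real (Suc k))" unfolding k'_def
        by (simp add: inverse_eq_divide frac_le)
      thus ?thesis using k by linarith
    qed
    show "eventually (\<lambda>n. dist (fm_eval (Mat n) (Z n) (ifm (e i))) (\<mu> (ifm (e i))) < \<epsilon>) U"
      using evK[of k']
    proof eventually_elim
      case (elim n)
      hence "tp (Mat n) d (Z n) \<in> V k'" using Vmono Gamma_tp[OF Z] by blast
      hence "dist (\<mu> (ifm (e i))) (tp (Mat n) d (Z n) (ifm (e i))) < 1 / (real k' + 1)"
        using ik unfolding V_def by (auto simp: mem_ball)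
      moreover have "tp (Mat n) d (Z n) (ifm (e i)) = fm_eval (Mat n) (Z n) (ifm (e i))"
        using eD[of i] unfolding D_def by (simp add: tp_eval)
      ultimately show ?case using kk by (simp add: dist_commute)
    qed
  qed
  define Yseq where "Yseq = (\<lambda>j n. Z n j)"
  have Ybseq: "Yseq j \<in> bseq" for j
    by (rule bseqI[where B=r]) (use Zin in \<open>auto simp: Yseq_def inball_def ball_r_Mat\<close>)
  have YB: "\<exists>B. \<forall>j n. opnorm n (Yseq j n) \<le> B"
    using Zin by (auto simp: Yseq_def inball_def ball_r_Mat)
  define Yq where "Yq = (\<lambda>j. ucls U (Yseq j))"
  have los: "((\<lambda>n. fm_eval (Mat n) (Z n) \<phi>) \<longlongrightarrow> fm_eval (Qalg U) Yq \<phi>) U" if "wf \<phi>" for \<phi>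
  proof -
    have "((\<lambda>n. fm_eval (Mat n) (\<lambda>j. Yseq j n) \<phi>) \<longlongrightarrow> fm_eval (Qalg U) (\<lambda>j. ucls U (Yseq j)) \<phi>) U"
      using fm_los[OF fu that] Ybseq YB by blast
    moreover have "(\<lambda>j. Yseq j n) = Z n" for n by (simp add: Yseq_def)
    ultimately show ?thesis unfolding Yq_def by simp
  qed
  have eq: "tp (Qalg U) d Yq = \<mu>"
  proof (rule ext)
    fix \<phi>
    show "tp (Qalg U) d Yq \<phi> = \<mu> \<phi>"
    proof (cases "wf \<phi> \<and> fv \<phi> \<subseteq> {..<d}")
      case False thus ?thesis unfolding tp_def \<mu>_def by (simp only: if_False)
    next
      case True
      hence wfp: "wf \<phi>" and fvp: "fv \<phi> \<subseteq> {..<d}" by auto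
      define L where "L = fm_eval (Qalg U) Yq \<phi>"
      have L: "((\<lambda>n. fm_eval (Mat n) (Z n) \<phi>) \<longlongrightarrow> L) U" unfolding L_def by (rule los[OF wfp])
      have bnd: "\<bar>L - \<mu> \<phi>\<bar> \<le> 4 * \<epsilon>" if eps: "\<epsilon> > 0" for \<epsilon>
      proof -
        obtain \<psi> \<delta> where A: "apx \<phi> r \<epsilon> \<psi> \<delta>" using fm_approx[OF wfp] eps by blast
        have A1: "\<delta> > 0" "wf (ifm \<psi>)" "fv (ifm \<psi>) \<subseteq> fv \<phi>" using A by (auto simp: apx_def)
        have close: "\<bar>fm_eval (Mat n) \<rho> \<phi> - fm_eval (Mat n) \<rho> (ifm \<psi>)\<bar> \<le> \<epsilon>" if "inball n r \<rho>" for n \<rho>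
          using apxD[OF A that that closeR_refl] A1(1) by simp
        have psiD: "\<psi> \<in> D" unfolding D_def using A1 fvp by auto
        then obtain i where i: "e i = \<psi>" using De by blast
        have "((\<lambda>n. \<bar>fm_eval (Mat n) (Z n) \<phi> - fm_eval (Mat n) (Z n) (ifm \<psi>)\<bar>) \<longlongrightarrow> \<bar>L - \<mu> (ifm \<psi>)\<bar>) U"
          using tendsto_rabs[OF tendsto_diff[OF L conv[of i, unfolded i]]] .
        hence a: "\<bar>L - \<mu> (ifm \<psi>)\<bar> \<le> \<epsilon>"
          using fu_le[OF fu _ tendsto_const] close[OF Zin] by simp
        define W where "W = {\<tau> :: fm \<Rightarrow> real. \<forall>x\<in>{\<phi>, ifm \<psi>}. \<tau> (id x) \<in> ball (\<mu> x) \<epsilon>}"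
        have Wopen: "open W" unfolding W_def by (rule product_topology_basis') auto
        have Wmu: "\<mu> \<in> W" unfolding W_def using eps by auto
        obtain n where "Gamma d n r W \<noteq> {}"
          using eventually_happens[OF nonempty[OF Wopen Wmu]] fu_nbot[OF fu] by auto
        then obtain Yw where Yw: "Yw \<in> Gamma d n r W" by blast
        have "tp (Mat n) d Yw \<in> W" by (rule Gamma_tp[OF Yw])
        moreover have "tp (Mat n) d Yw \<phi> = fm_eval (Mat n) Yw \<phi>" using wfp fvp by (simp add: tp_eval)
        moreover have "tp (Mat n) d Yw (ifm \<psi>) = fm_eval (Mat n) Yw (ifm \<psi>)"
          using A1 fvp by (intro tp_eval) auto
        ultimately have w1: "\<bar>\<mu> \<phi> - fm_eval (Mat n) Yw \<phi>\<bar> < \<epsilon>" and w2: "\<bar>\<mu> (ifm \<psi>) - fm_eval (Mat n) Yw (ifm \<psi>)\<bar> < \<epsilon>"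
          unfolding W_def by (auto simp: mem_ball dist_real_def)
        have w3: "\<bar>fm_eval (Mat n) Yw \<phi> - fm_eval (Mat n) Yw (ifm \<psi>)\<bar> \<le> \<epsilon>"
          using close Gamma_inball[OF Yw] r by simp
        show ?thesis using a w1 w2 w3 by linarith
      qed
      have "\<bar>L - \<mu> \<phi>\<bar> \<le> 0"
      proof (rule field_le_epsilon)
        fix \<epsilon> :: real assume "\<epsilon> > 0"
        thus "\<bar>L - \<mu> \<phi>\<bar> \<le> 0 + \<epsilon>" using bnd[of "\<epsilon> / 4"] by simp
      qed
      hence "L = \<mu> \<phi>" by simp
      thus ?thesis using True unfolding L_def by (simp add: tp_def)
    qed
  qed
  have "\<forall>j<d. Yq j \<in> t_car (Qalg U)" unfolding Yq_def Qalg_simps using Ybseq by blast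
  thus ?thesis using eq unfolding \<mu>_def by blast
qed

end
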